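(* Let $\mathcal{N}_{A'B'\to AB}$ be a bipartite quantum channel, $n\in\mathbb{N}$, and consider a protocol producing the state $$\omega_{M_AM_B}=\mathcal{P}^{(n+1)}\circ\mathcal{N}\circ\mathcal{P}^{(n)}\circ\cdots\circ\mathcal{P}^{(2)}\circ\mathcal{N}\circ\mathcal{P}^{(1)},$$ where $\mathcal{P}^{(1)}$ prepares a PPT state $\rho^{(1)}_{L_{A_1}A_1'B_1'L_{B_1}}$, each $\mathcal{P}^{(i)}_{L_{A_{i-1}}A_{i-1}B_{i-1}L_{B_{i-1}}\to L_{A_i}A_i'B_i'L_{B_i}}$ ($2\le i\le n$) and the final $\mathcal{P}^{(n+1)}_{L_{A_n}A_nB_nL_{B_n}\to M_AM_B}$ are completely PPT-preserving channels, and the $i$-th use of $\mathcal{N}$ acts as $\mathcal{N}_{A_i'B_i'\to A_iB_i}$ on the indicated systems. Then $$R_{\max}(M_A;M_B)_\omega\le n\,R_{\max}(\mathcal{N}).$$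
   Context: Alice holds all systems labelled $A$, $L_A$, $M_A$; Bob those labelled $B$, $L_B$, $M_B$. $T_X$ is partial transpose. A bipartite channel is completely PPT-preserving if conjugating it with partial transposes on Bob's input and output systems gives a completely positive map; a state is PPT if its partial transpose on Bob's systems is positive semidefinite. $D_{\max}(\rho\|\sigma)=\inf\{\lambda:\rho\le2^\lambda\sigma\}$. Max-Rains relative entropy of a state: $R_{\max}(C;D)_\sigma=\inf\{D_{\max}(\sigma_{CD}\|\tau_{CD}):\tau_{CD}\ge0,\ \|T_D(\tau_{CD})\|_1\le1\}$. For a bipartite map $\mathcal{M}_{A'B'\to AB}$, $E_N(\mathcal{M})=\log\|T_B\circ\mathcal{M}\circ T_{B'}\|_\diamond$ (diamond norm $\sup_\psi\|(\mathrm{id}\otimes\mathcal{P})(\psi)\|_1$ over pure states); for CP maps $D_{\max}(\mathcal{E}\|\mathcal{F})=\sup_{\psi}D_{\max}(\mathcal{E}(\psi)\|\mathcal{F}(\psi))$ over pure states with reference isomorphic to the input; the max-Rains information of a bipartite channel is $R_{\max}(\mathcal{N})=\inf_{\mathcal{M}\text{ CP}:E_N(\mathcal{M})\le0}D_{\max}(\mathcal{N}\|\mathcal{M})$. *)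

theory Defs
  imports "Jordan_Normal_Form.Matrix" "HOL-Library.Extended_Real"
begin

text \<open>A composite system
  with tensor factors of dimensions d1, d2 has dimension d1*d2, index (i,j) being i*d2+j
  (Kronecker convention).  A bipartite operator with Alice dimension a and Bob dimension b
  is a matrix of dimension a*b.\<close>

definition mtrace :: "complex mat \<Rightarrow> complex" where
  "mtrace M = (\<Sum>i<dim_row M. M $$ (i,i))"

definition psd :: "nat \<Rightarrow> complex mat \<Rightarrow> bool" where
  "psd d M \<longleftrightarrow> M \<in> carrier_mat d d \<and>
     (\<forall>v \<in> carrier_vec d. Im ((\<Sum>i<d. cnj (v $ i) * (M *\<^sub>v v) $ i)) = 0
                          \<and> Re ((\<Sum>i<d. cnj (v $ i) * (M *\<^sub>v v) $ i)) \<ge> 0)"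

definition adj :: "complex mat \<Rightarrow> complex mat" where
  "adj M = mat (dim_col M) (dim_row M) (\<lambda>(i,j). cnj (M $$ (j,i)))"

definition unitary_mat :: "nat \<Rightarrow> complex mat \<Rightarrow> bool" where
  "unitary_mat d U \<longleftrightarrow> U \<in> carrier_mat d d \<and> U * adj U = 1\<^sub>m d \<and> adj U * U = 1\<^sub>m d"

text \<open>Trace norm via its variational characterisation  max over unitaries |tr(U M)|.\<close>
definition trace_norm :: "nat \<Rightarrow> complex mat \<Rightarrow> real" where
  "trace_norm d M = Sup {cmod (mtrace (U * M)) | U. unitary_mat d U}"

definition pure_state :: "nat \<Rightarrow> complex mat \<Rightarrow> bool" where
  "pure_state d \<psi> \<longleftrightarrow> (\<exists>v \<in> carrier_vec d. (\<Sum>i<d. (cmod (v $ i))\<^sup>2) = 1 \<and>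
      \<psi> = mat d d (\<lambda>(i,j). v $ i * cnj (v $ j)))"

text \<open>Partial transpose on the second (Bob's) factor, Alice dimension a, Bob dimension b.\<close>
definition ptB :: "nat \<Rightarrow> nat \<Rightarrow> complex mat \<Rightarrow> complex mat" where
  "ptB a b M = mat (a*b) (a*b)
     (\<lambda>(p,q). M $$ ((p div b) * b + q mod b, (q div b) * b + p mod b))"

text \<open>id_k \<otimes> \<Phi> (reference system of dimension k on the left), \<Phi> : d1 \<rightarrow> d2.\<close>
definition lift_left :: "nat \<Rightarrow> nat \<Rightarrow> nat \<Rightarrow> (complex mat \<Rightarrow> complex mat) \<Rightarrow> complex mat \<Rightarrow> complex mat" where
  "lift_left k d1 d2 \<Phi> X = mat (k*d2) (k*d2)
     (\<lambda>(p,q). \<Phi> (mat d1 d1 (\<lambda>(i,j). X $$ ((p div d2) * d1 + i, (q div d2) * d1 + j)))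
                $$ (p mod d2, q mod d2))"

text \<open>\<Phi> \<otimes> id_k (identity on a k-dimensional system on the right), \<Phi> : d1 \<rightarrow> d2.\<close>
definition lift_right :: "nat \<Rightarrow> nat \<Rightarrow> nat \<Rightarrow> (complex mat \<Rightarrow> complex mat) \<Rightarrow> complex mat \<Rightarrow> complex mat" where
  "lift_right d1 d2 k \<Phi> X = mat (d2*k) (d2*k)
     (\<lambda>(p,q). \<Phi> (mat d1 d1 (\<lambda>(i,j). X $$ (i * k + p mod k, j * k + q mod k)))
                $$ (p div k, q div k))"

definition linear_map :: "nat \<Rightarrow> nat \<Rightarrow> (complex mat \<Rightarrow> complex mat) \<Rightarrow> bool" where
  "linear_map d1 d2 \<Phi> \<longleftrightarrow>
     (\<forall>X \<in> carrier_mat d1 d1. \<Phi> X \<in> carrier_mat d2 d2) \<and>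
     (\<forall>X \<in> carrier_mat d1 d1. \<forall>Y \<in> carrier_mat d1 d1. \<Phi> (X + Y) = \<Phi> X + \<Phi> Y) \<and>
     (\<forall>X \<in> carrier_mat d1 d1. \<forall>c. \<Phi> (c \<cdot>\<^sub>m X) = c \<cdot>\<^sub>m \<Phi> X)"

definition completely_positive :: "nat \<Rightarrow> nat \<Rightarrow> (complex mat \<Rightarrow> complex mat) \<Rightarrow> bool" where
  "completely_positive d1 d2 \<Phi> \<longleftrightarrow>
     (\<forall>k X. psd (k*d1) X \<longrightarrow> psd (k*d2) (lift_left k d1 d2 \<Phi> X))"

definition CP_map :: "nat \<Rightarrow> nat \<Rightarrow> (complex mat \<Rightarrow> complex mat) \<Rightarrow> bool" where
  "CP_map d1 d2 \<Phi> \<longleftrightarrow> linear_map d1 d2 \<Phi> \<and> completely_positive d1 d2 \<Phi>"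

definition quantum_channel :: "nat \<Rightarrow> nat \<Rightarrow> (complex mat \<Rightarrow> complex mat) \<Rightarrow> bool" where
  "quantum_channel d1 d2 \<Phi> \<longleftrightarrow> CP_map d1 d2 \<Phi> \<and>
     (\<forall>X \<in> carrier_mat d1 d1. mtrace (\<Phi> X) = mtrace X)"

definition density :: "nat \<Rightarrow> complex mat \<Rightarrow> bool" where
  "density d \<rho> \<longleftrightarrow> psd d \<rho> \<and> mtrace \<rho> = 1"

definition PPT_state :: "nat \<Rightarrow> nat \<Rightarrow> complex mat \<Rightarrow> bool" where
  "PPT_state a b \<rho> \<longleftrightarrow> density (a*b) \<rho> \<and> psd (a*b) (ptB a b \<rho>)"

definition pt_conj :: "nat \<Rightarrow> nat \<Rightarrow> nat \<Rightarrow> nat \<Rightarrow> (complex mat \<Rightarrow> complex mat) \<Rightarrow> complex mat \<Rightarrow> complex mat" where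
  "pt_conj a1 b1 a2 b2 \<Phi> X = ptB a2 b2 (\<Phi> (ptB a1 b1 X))"

definition completely_PPT_preserving :: "nat \<Rightarrow> nat \<Rightarrow> nat \<Rightarrow> nat \<Rightarrow> (complex mat \<Rightarrow> complex mat) \<Rightarrow> bool" where
  "completely_PPT_preserving a1 b1 a2 b2 \<Phi> \<longleftrightarrow>
     completely_positive (a1*b1) (a2*b2) (pt_conj a1 b1 a2 b2 \<Phi>)"

definition PPT_channel :: "nat \<Rightarrow> nat \<Rightarrow> nat \<Rightarrow> nat \<Rightarrow> (complex mat \<Rightarrow> complex mat) \<Rightarrow> bool" where
  "PPT_channel a1 b1 a2 b2 \<Phi> \<longleftrightarrow>
     quantum_channel (a1*b1) (a2*b2) \<Phi> \<and> completely_PPT_preserving a1 b1 a2 b2 \<Phi>"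

text \<open>Loewner order and max-relative entropy (extended reals; inf of empty set = +\<infinity>).\<close>
definition loewner_le :: "nat \<Rightarrow> complex mat \<Rightarrow> complex mat \<Rightarrow> bool" where
  "loewner_le d X Y \<longleftrightarrow> psd d (Y - X)"

definition Dmax :: "nat \<Rightarrow> complex mat \<Rightarrow> complex mat \<Rightarrow> ereal" where
  "Dmax d \<rho> \<sigma> = Inf {ereal l | l. loewner_le d \<rho> (complex_of_real (2 powr l) \<cdot>\<^sub>m \<sigma>)}"

definition Rmax_state :: "nat \<Rightarrow> nat \<Rightarrow> complex mat \<Rightarrow> ereal" where
  "Rmax_state c e \<sigma> = Inf {Dmax (c*e) \<sigma> \<tau> | \<tau>. psd (c*e) \<tau> \<and> trace_norm (c*e) (ptB c e \<tau>) \<le> 1}"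

definition diamond_norm :: "nat \<Rightarrow> nat \<Rightarrow> (complex mat \<Rightarrow> complex mat) \<Rightarrow> ereal" where
  "diamond_norm d1 d2 \<Phi> = Sup {ereal (trace_norm (d1*d2) (lift_left d1 d1 d2 \<Phi> \<psi>)) | \<psi>. pure_state (d1*d1) \<psi>}"

text \<open>log-negativity E_N of a bipartite map, with log 0 = -\<infinity>.\<close>
definition log_neg :: "nat \<Rightarrow> nat \<Rightarrow> nat \<Rightarrow> nat \<Rightarrow> (complex mat \<Rightarrow> complex mat) \<Rightarrow> ereal" where
  "log_neg a1 b1 a2 b2 \<Phi> =
     (let t = diamond_norm (a1*b1) (a2*b2) (pt_conj a1 b1 a2 b2 \<Phi>) in
      if t = 0 then -\<infinity> else if t = \<infinity> then \<infinity> else ereal (log 2 (real_of_ereal t)))"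

definition Dmax_map :: "nat \<Rightarrow> nat \<Rightarrow> (complex mat \<Rightarrow> complex mat) \<Rightarrow> (complex mat \<Rightarrow> complex mat) \<Rightarrow> ereal" where
  "Dmax_map d1 d2 E F = Sup {Dmax (d1*d2) (lift_left d1 d1 d2 E \<psi>) (lift_left d1 d1 d2 F \<psi>) | \<psi>. pure_state (d1*d1) \<psi>}"

definition Rmax_channel :: "nat \<Rightarrow> nat \<Rightarrow> nat \<Rightarrow> nat \<Rightarrow> (complex mat \<Rightarrow> complex mat) \<Rightarrow> ereal" where
  "Rmax_channel a1 b1 a2 b2 \<N> = Inf {Dmax_map (a1*b1) (a2*b2) \<N> \<M> | \<M>.
      CP_map (a1*b1) (a2*b2) \<M> \<and> log_neg a1 b1 a2 b2 \<M> \<le> 0}"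

text \<open>The i-th use of N_{A'B' \<rightarrow> AB} acting on L_A A' B' L_B (ordered this way), with L_A of
  dimension la and L_B of dimension lb: id_{L_A} \<otimes> N \<otimes> id_{L_B}.\<close>
definition embed_channel :: "nat \<Rightarrow> nat \<Rightarrow> nat \<Rightarrow> nat \<Rightarrow> nat \<Rightarrow> nat \<Rightarrow> (complex mat \<Rightarrow> complex mat) \<Rightarrow> complex mat \<Rightarrow> complex mat" where
  "embed_channel la lb a1 b1 a2 b2 \<N> =
     lift_left la (a1*b1*lb) (a2*b2*lb) (lift_right (a1*b1) (a2*b2) lb \<N>)"

end

theory Submission
  imports Defs "Jordan_Normal_Form.Char_Poly"
begin
lemma idx_mult: "i < dim_row A \<Longrightarrow> j < dim_col B \<Longrightarrow> dim_col A = dim_row B \<Longrightarrow>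
  (A * B) $$ (i,j) = (\<Sum>k<dim_col A. A $$ (i,k) * B $$ (k,j))"
  unfolding index_mult_mat(1) scalar_prod_def by (simp add: atLeast0LessThan)

lemma idx_mult_vec: "i < dim_row A \<Longrightarrow> dim_col A = dim_vec v \<Longrightarrow>
  (A *\<^sub>v v) $ i = (\<Sum>k<dim_col A. A $$ (i,k) * v $ k)"
  unfolding index_mult_mat_vec scalar_prod_def by (simp add: atLeast0LessThan)

declare index_mult_mat(1)[simp del] index_mult_mat_vec[simp del]
declare idx_mult[simp] idx_mult_vec[simp]

lemma adj_dims[simp]: "dim_row (adj A) = dim_col A" "dim_col (adj A) = dim_row A"
  by (auto simp: adj_def)

lemma adj_idx[simp]: "i < dim_col A \<Longrightarrow> j < dim_row A \<Longrightarrow> adj A $$ (i,j) = cnj (A $$ (j,i))"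
  unfolding adj_def by simp

lemma adj_carrier[simp]: "A \<in> carrier_mat n m \<Longrightarrow> adj A \<in> carrier_mat m n"
  unfolding carrier_mat_def by simp

lemma adj_adj[simp]: "adj (adj A) = A"
  by (rule eq_matI) simp_all

lemma adj_mult: assumes A: "A \<in> carrier_mat n m" and B: "B \<in> carrier_mat m l"
  shows "adj (A * B) = adj B * adj A"
proof (rule eq_matI)
  fix i j assume i: "i < dim_row (adj B * adj A)" and j: "j < dim_col (adj B * adj A)"
  then have i': "i < l" and j': "j < n" using A B by simp_all
  show "adj (A * B) $$ (i, j) = (adj B * adj A) $$ (i, j)"
    using A B i' j' by (simp add: idx_mult sum_conjugate mult.commute)
qed (use A B in simp_all)

lemma adj_one[simp]: "adj (1\<^sub>m n) = 1\<^sub>m n"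
  by (rule eq_matI) simp_all

definition diagm :: "nat \<Rightarrow> (nat \<Rightarrow> real) \<Rightarrow> complex mat" where
  "diagm n \<mu> = mat n n (\<lambda>(i,j). if i = j then complex_of_real (\<mu> i) else 0)"

lemma diagm_carrier[simp]: "diagm n \<mu> \<in> carrier_mat n n"
  unfolding diagm_def by simp

lemma diagm_dims[simp]: "dim_row (diagm n \<mu>) = n" "dim_col (diagm n \<mu>) = n"
  unfolding diagm_def by simp_all

lemma diagm_idx[simp]: "i < n \<Longrightarrow> j < n \<Longrightarrow> diagm n \<mu> $$ (i,j) = (if i = j then complex_of_real (\<mu> i) else 0)"
  unfolding diagm_def by simp

lemma adj_diagm[simp]: "adj (diagm n \<mu>) = diagm n \<mu>"
  by (rule eq_matI) simp_all

lemma UD_idx: assumes U: "U \<in> carrier_mat n n" and i: "i < n" and k: "k < n"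
  shows "(U * diagm n \<mu>) $$ (i,k) = U $$ (i,k) * \<mu> k"
proof -
  have "(U * diagm n \<mu>) $$ (i,k) = (\<Sum>l<n. U $$ (i,l) * (if l = k then complex_of_real (\<mu> l) else 0))"
    using U i k by (simp add: idx_mult)
  also have "\<dots> = (\<Sum>l<n. (if l = k then U $$ (i,l) * complex_of_real (\<mu> l) else 0))"
    by (rule sum.cong) simp_all
  also have "\<dots> = U $$ (i,k) * \<mu> k" using k by (simp add: sum.delta)
  finally show ?thesis .
qed

lemma UDU_idx: assumes U: "U \<in> carrier_mat n n" and i: "i < n" and j: "j < n"
  shows "(U * diagm n \<mu> * adj U) $$ (i,j) = (\<Sum>k<n. \<mu> k * U $$ (i,k) * cnj (U $$ (j,k)))"
proof -
  have "(U * diagm n \<mu> * adj U) $$ (i,j) = (\<Sum>k<n. (U * diagm n \<mu>) $$ (i,k) * cnj (U $$ (j,k)))"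
    using U i j by (simp add: idx_mult)
  also have "\<dots> = (\<Sum>k<n. \<mu> k * U $$ (i,k) * cnj (U $$ (j,k)))"
    by (rule sum.cong, simp, simp add: UD_idx[OF U i])
  finally show ?thesis .
qed

lemma householder:
  fixes f :: "nat \<Rightarrow> complex"
  assumes n: "0 < n" and nf: "(\<Sum>i<n. (cmod (f i))\<^sup>2) = 1" and f0: "Im (f 0) = 0"
  shows "\<exists>W. W \<in> carrier_mat n n \<and> adj W = W \<and> W * W = 1\<^sub>m n \<and> (\<forall>i<n. W $$ (i,0) = f i)"
proof -
  define u where "u = (\<lambda>i. f i - (if i = 0 then 1 else 0))"
  define nu where "nu = (\<Sum>i<n. (cmod (u i))\<^sup>2)"
  define c where "c = complex_of_real (2 / nu)"
  define W where "W = mat n n (\<lambda>(i,j). (if i = j then 1 else 0) - c * u i * cnj (u j))"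
  have Wc: "W \<in> carrier_mat n n" unfolding W_def by simp
  have cr: "cnj c = c" unfolding c_def by simp
  have Wi: "\<And>i j. i < n \<Longrightarrow> j < n \<Longrightarrow> W $$ (i,j) = (if i = j then 1 else 0) - c * u i * cnj (u j)"
    unfolding W_def by simp
  have adjW: "adj W = W"
    by (rule eq_matI, insert Wc, auto simp: Wi cr)
  have uu: "\<And>k. u k * cnj (u k) = complex_of_real ((cmod (u k))\<^sup>2)"
    by (metis complex_norm_square)
  have sumuu: "(\<Sum>k<n. u k * cnj (u k)) = complex_of_real nu"
    unfolding nu_def uu by simp
  have cc: "c * c * complex_of_real nu = 2 * c"
  proof (cases "nu = 0")
    case True then show ?thesis unfolding c_def by simp
  next
    case False then show ?thesis unfolding c_def
      by (simp add: field_simps power2_eq_square flip: of_real_mult)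
  qed
  have WW: "W * W = 1\<^sub>m n"
  proof (rule eq_matI)
    fix i j assume i: "i < dim_row (1\<^sub>m n)" and j: "j < dim_col (1\<^sub>m n)"
    then have i: "i < n" and j: "j < n" by simp_all
    have "(W * W) $$ (i,j) = (\<Sum>k<n. ((if i = k then 1 else 0) - c * u i * cnj (u k)) *
                                   ((if k = j then 1 else 0) - c * u k * cnj (u j)))"
      using Wc i j by (simp add: Wi)
    also have "\<dots> = (\<Sum>k<n. (if k = i then (if i = j then 1 else 0) else 0))
        - (\<Sum>k<n. (if i = k then c * u k * cnj (u j) else 0))
        - (\<Sum>k<n. (if k = j then c * u i * cnj (u k) else 0))
        + (\<Sum>k<n. (c * c * u i * cnj (u j)) * (u k * cnj (u k)))"
    proof -
      have "\<And>k. ((if i = k then 1 else 0) - c * u i * cnj (u k)) *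
                                   ((if k = j then 1 else 0) - c * u k * cnj (u j)) =
         (if k = i then (if i = j then 1 else 0) else 0)
        - (if i = k then c * u k * cnj (u j) else 0)
        - (if k = j then c * u i * cnj (u k) else 0)
        + (c * c * u i * cnj (u j)) * (u k * cnj (u k))"
        by (simp add: algebra_simps)
      then show ?thesis by (simp add: sum.distrib sum_subtractf)
    qed
    also have "\<dots> = (if i = j then 1 else 0) - c * u i * cnj (u j) - c * u i * cnj (u j)
        + (c * c * complex_of_real nu) * u i * cnj (u j)"
      using i j by (simp add: sum.delta sum.delta' flip: sum_distrib_left sumuu)
    also have "\<dots> = (if i = j then 1 else 0)" unfolding cc by (simp add: algebra_simps)
    finally show "(W * W) $$ (i,j) = 1\<^sub>m n $$ (i,j)" using i j by simp
  qed (use Wc in simp_all)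
  have col0: "W $$ (i,0) = f i" if i: "i < n" for i
  proof (cases "nu = 0")
    case True
    have "\<forall>k\<in>{..<n}. (cmod (u k))\<^sup>2 = 0"
      using True unfolding nu_def by (subst sum_nonneg_eq_0_iff[symmetric]) auto
    then have "u i = 0" using i by simp
    then show ?thesis using i n unfolding Wi[OF i n] by (simp add: u_def split: if_splits)
  next
    case False
    have s1: "(\<Sum>k<n. (cmod (f k))\<^sup>2) = (cmod (f 0))\<^sup>2 + (\<Sum>k\<in>{..<n}-{0}. (cmod (f k))\<^sup>2)"
      using n by (subst sum.remove[of _ 0]) auto
    have s2: "nu = (cmod (u 0))\<^sup>2 + (\<Sum>k\<in>{..<n}-{0}. (cmod (f k))\<^sup>2)"
      unfolding nu_def using n by (subst sum.remove[of _ 0]) (auto simp: u_def)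
    define r where "r = Re (f 0)"
    have fr: "f 0 = complex_of_real r" using f0 unfolding r_def by (simp add: complex_eq_iff)
    have u0: "u 0 = complex_of_real (r - 1)" unfolding u_def fr by simp
    have nr: "nu = 2 - 2 * r"
    proof -
      have "(cmod (u 0))\<^sup>2 = (r - 1)\<^sup>2" using u0 by (simp only: norm_of_real power2_abs)
      moreover have "(cmod (f 0))\<^sup>2 = r\<^sup>2" unfolding fr by simp
      ultimately show ?thesis using s1 s2 nf by (simp add: power2_eq_square algebra_simps)
    qed
    have "c * cnj (u 0) = complex_of_real (2 / nu * (r - 1))" unfolding c_def u0 by simp
    also have "2 / nu * (r - 1) = -1" using nr False by (simp add: field_simps)
    finally have "c * cnj (u 0) = -1" by simp
    then have cu: "c * cnj (u 0) = -1" .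
    have "W $$ (i,0) = (if i = 0 then 1 else 0) - u i * (c * cnj (u 0))"
      unfolding Wi[OF i n] by (simp add: algebra_simps)
    also have "\<dots> = f i" unfolding cu by (simp add: u_def)
    finally show ?thesis .
  qed
  show ?thesis using Wc adjW WW col0 by blast
qed

lemma eigen_exists:
  fixes A :: "complex mat"
  assumes A: "A \<in> carrier_mat n n" and n: "0 < n"
  shows "\<exists>e v. v \<in> carrier_vec n \<and> v \<noteq> 0\<^sub>v n \<and> A *\<^sub>v v = e \<cdot>\<^sub>v v"
proof -
  obtain as where cp: "char_poly A = (\<Prod>a\<leftarrow>as. [:- a, 1:])" and l: "length as = n"
    using char_poly_factorized[OF A] by blast
  then obtain e rest where as: "as = e # rest" using n by (cases as) auto
  have "eigenvalue A e" unfolding eigenvalue_root_char_poly[OF A] cp as by simp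
  then obtain v where "eigenvector A v e" unfolding eigenvalue_def by blast
  then show ?thesis unfolding eigenvector_def using A by auto
qed

lemma unit_eigen_exists:
  fixes A :: "complex mat"
  assumes A: "A \<in> carrier_mat n n" and n: "0 < n"
  shows "\<exists>e f. (\<Sum>i<n. (cmod (f i))\<^sup>2) = 1 \<and> Im (f 0) = 0 \<and>
     (\<forall>i<n. (\<Sum>k<n. A $$ (i,k) * f k) = e * f i)"
proof -
  obtain e v where v: "v \<in> carrier_vec n" "v \<noteq> 0\<^sub>v n" and Av: "A *\<^sub>v v = e \<cdot>\<^sub>v v"
    using eigen_exists[OF A n] by blast
  have Avi: "(\<Sum>k<n. A $$ (i,k) * v $ k) = e * v $ i" if i: "i < n" for i
  proof -
    have "(A *\<^sub>v v) $ i = e * v $ i" using Av i v by simp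
    then show ?thesis using A v i by simp
  qed
  define s where "s = (\<Sum>i<n. (cmod (v $ i))\<^sup>2)"
  obtain j where j: "j < n" "v $ j \<noteq> 0" using v by (metis carrier_vecD eq_vecI index_zero_vec)
  have spos: "s > 0"
  proof -
    have "(cmod (v $ j))\<^sup>2 \<le> s" unfolding s_def
      by (rule member_le_sum) (use j in auto)
    moreover have "(cmod (v $ j))\<^sup>2 > 0" using j by simp
    ultimately show ?thesis by linarith
  qed
  define ph where "ph = (if v $ 0 = 0 then 1 else cnj (v $ 0) / complex_of_real (cmod (v $ 0)))"
  have ph1: "cmod ph = 1" unfolding ph_def by (simp add: norm_divide)
  define f where "f = (\<lambda>i. ph / complex_of_real (sqrt s) * v $ i)"
  have "(\<Sum>i<n. (cmod (f i))\<^sup>2) = (\<Sum>i<n. (cmod (v $ i))\<^sup>2 / s)"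
    unfolding f_def using spos by (simp add: norm_mult norm_divide ph1 power_divide)
  also have "\<dots> = 1" using spos unfolding s_def by (simp add: sum_divide_distrib[symmetric])
  finally have nf: "(\<Sum>i<n. (cmod (f i))\<^sup>2) = 1" .
  have f0: "Im (f 0) = 0"
  proof (cases "v $ 0 = 0")
    case True then show ?thesis unfolding f_def by simp
  next
    case False
    have "f 0 = (cnj (v $ 0) * v $ 0) / complex_of_real (cmod (v $ 0) * sqrt s)"
      unfolding f_def ph_def using False by simp
    also have "cnj (v $ 0) * v $ 0 = complex_of_real ((cmod (v $ 0))\<^sup>2)"
      by (metis complex_norm_square mult.commute)
    finally have "f 0 = complex_of_real ((cmod (v $ 0))\<^sup>2 / (cmod (v $ 0) * sqrt s))" by simp
    then show ?thesis by simp
  qed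
  have Af: "(\<Sum>k<n. A $$ (i,k) * f k) = e * f i" if i: "i < n" for i
  proof -
    have "(\<Sum>k<n. A $$ (i,k) * f k) = ph / complex_of_real (sqrt s) * (\<Sum>k<n. A $$ (i,k) * v $ k)"
      unfolding f_def by (simp add: sum_distrib_left algebra_simps)
    also have "\<dots> = e * f i" unfolding Avi[OF i] f_def by simp
    finally show ?thesis .
  qed
  show ?thesis using nf f0 Af by blast
qed

lemma spectral:
  fixes A :: "complex mat"
  assumes "A \<in> carrier_mat n n" and "adj A = A"
  shows "\<exists>U \<mu>. unitary_mat n U \<and> A = U * diagm n \<mu> * adj U"
  using assms
proof (induction n arbitrary: A)
  case 0
  have "A = 1\<^sub>m 0 * diagm 0 (\<lambda>_. 0) * adj (1\<^sub>m 0)"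
    by (rule eq_matI, insert 0, auto)
  moreover have "unitary_mat 0 (1\<^sub>m 0)" unfolding unitary_mat_def by simp
  ultimately show ?case by blast
next
  case (Suc m)
  define n where "n = Suc m"
  have A: "A \<in> carrier_mat n n" and hA: "adj A = A" using Suc.prems unfolding n_def by auto
  have n: "0 < n" unfolding n_def by simp
  obtain e f where nf: "(\<Sum>i<n. (cmod (f i))\<^sup>2) = 1" and f0: "Im (f 0) = 0"
     and Af: "\<And>i. i < n \<Longrightarrow> (\<Sum>k<n. A $$ (i,k) * f k) = e * f i"
    using unit_eigen_exists[OF A n] by blast
  obtain W where W: "W \<in> carrier_mat n n" and hW: "adj W = W" and WW: "W * W = 1\<^sub>m n"
    and Wf: "\<And>i. i < n \<Longrightarrow> W $$ (i,0) = f i"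
    using householder[OF n nf f0] by blast
  define B where "B = W * A * W"
  have B: "B \<in> carrier_mat n n" unfolding B_def using W A by simp
  have hB: "adj B = B"
  proof -
    have WAc: "W * A \<in> carrier_mat n n" using W A by simp
    have "adj B = adj W * adj (W * A)" unfolding B_def by (rule adj_mult[OF WAc W])
    also have "adj (W * A) = adj A * adj W" by (rule adj_mult[OF W A])
    finally have "adj B = W * (A * W)" unfolding hW hA .
    then show ?thesis unfolding B_def using W A by simp
  qed
  have Bcol: "B $$ (i,0) = (if i = 0 then e else 0)" if i: "i < n" for i
  proof -
    have "B $$ (i,0) = (\<Sum>l<n. W $$ (i,l) * (\<Sum>k<n. A $$ (l,k) * W $$ (k,0)))"
      unfolding B_def using W A i n by simp
    also have "\<dots> = (\<Sum>l<n. W $$ (i,l) * (\<Sum>k<n. A $$ (l,k) * f k))"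
      using Wf by simp
    also have "\<dots> = e * (\<Sum>l<n. W $$ (i,l) * W $$ (l,0))"
      using Af Wf by (simp add: sum_distrib_left algebra_simps)
    also have "(\<Sum>l<n. W $$ (i,l) * W $$ (l,0)) = (W * W) $$ (i,0)"
      using W i n by simp
    finally show ?thesis unfolding WW using i n by simp
  qed
  have B00: "B $$ (0,0) = e" using Bcol n by simp
  have er: "cnj e = e"
  proof -
    have "adj B $$ (0,0) = cnj (B $$ (0,0))" using B n by simp
    then show ?thesis unfolding hB B00 by simp
  qed
  have Brow: "B $$ (0,j) = (if j = 0 then e else 0)" if j: "j < n" for j
  proof -
    have "B $$ (0,j) = adj B $$ (0,j)" unfolding hB ..
    also have "\<dots> = cnj (B $$ (j,0))" using B n j by simp
    finally show ?thesis unfolding Bcol[OF j] using er by simp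
  qed
  define A3 where "A3 = mat m m (\<lambda>(i,j). B $$ (Suc i, Suc j))"
  have A3: "A3 \<in> carrier_mat m m" unfolding A3_def by simp
  have hA3: "adj A3 = A3"
  proof (rule eq_matI)
    fix i j assume "i < dim_row A3" "j < dim_col A3"
    then have i: "i < m" and j: "j < m" using A3 by auto
    have "adj A3 $$ (i,j) = cnj (B $$ (Suc j, Suc i))" unfolding A3_def using i j by simp
    also have "\<dots> = adj B $$ (Suc i, Suc j)" using B i j unfolding n_def by simp
    finally show "adj A3 $$ (i,j) = A3 $$ (i,j)" unfolding hB A3_def using i j by simp
  qed (use A3 in auto)
  obtain U3 \<mu>3 where uU3: "unitary_mat m U3" and A3d: "A3 = U3 * diagm m \<mu>3 * adj U3"
    using Suc.IH[OF A3 hA3] by blast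
  have U3: "U3 \<in> carrier_mat m m" and U3a: "U3 * adj U3 = 1\<^sub>m m" and U3b: "adj U3 * U3 = 1\<^sub>m m"
    using uU3 unfolding unitary_mat_def by auto
  define U' where "U' = mat n n (\<lambda>(i,j). if i = 0 \<and> j = 0 then 1 else if i = 0 \<or> j = 0 then 0
       else U3 $$ (i - 1, j - 1))"
  define \<mu> where "\<mu> = (\<lambda>k. if k = 0 then Re e else \<mu>3 (k - 1))"
  have U': "U' \<in> carrier_mat n n" unfolding U'_def by simp
  have U'i: "\<And>i j. i < n \<Longrightarrow> j < n \<Longrightarrow> U' $$ (i,j) = (if i = 0 \<and> j = 0 then 1 else if i = 0 \<or> j = 0 then 0
       else U3 $$ (i - 1, j - 1))" unfolding U'_def by simp
  have eRe: "complex_of_real (Re e) = e" using er by (metis Reals_cnj_iff complex_is_Real_iff of_real_Re)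
  have Bd: "B = U' * diagm n \<mu> * adj U'"
  proof (rule eq_matI)
    fix i j assume "i < dim_row (U' * diagm n \<mu> * adj U')" "j < dim_col (U' * diagm n \<mu> * adj U')"
    then have i: "i < n" and j: "j < n" using U' by auto
    have "(U' * diagm n \<mu> * adj U') $$ (i,j) = (\<Sum>k<n. \<mu> k * U' $$ (i,k) * cnj (U' $$ (j,k)))"
      by (rule UDU_idx[OF U' i j])
    also have "\<dots> = \<mu> 0 * U' $$ (i,0) * cnj (U' $$ (j,0)) +
        (\<Sum>k<m. \<mu> (Suc k) * U' $$ (i,Suc k) * cnj (U' $$ (j,Suc k)))"
      unfolding n_def by (rule sum.lessThan_Suc_shift)
    also have "\<dots> = B $$ (i,j)"
    proof (cases i)
      case 0
      then show ?thesis using j Brow U'i n eRe unfolding \<mu>_def n_def by (auto simp: eRe)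
    next
      case (Suc i')
      note ii = Suc
      show ?thesis
      proof (cases j)
        case 0
        then show ?thesis using ii i Bcol U'i unfolding \<mu>_def n_def by auto
      next
        case (Suc j')
        have i': "i' < m" and j': "j' < m" using i j ii Suc unfolding n_def by auto
        have "(\<Sum>k<m. \<mu> (Suc k) * U' $$ (i,Suc k) * cnj (U' $$ (j,Suc k))) =
              (\<Sum>k<m. \<mu>3 k * U3 $$ (i',k) * cnj (U3 $$ (j',k)))"
          by (rule sum.cong, simp, simp add: U'i i' j' ii Suc \<mu>_def n_def)
        also have "\<dots> = A3 $$ (i',j')" unfolding A3d by (rule UDU_idx[OF U3 i' j', symmetric])
        also have "\<dots> = B $$ (i,j)" unfolding A3_def using i' j' ii Suc by simp
        finally show ?thesis using U'i i j ii Suc by simp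
      qed
    qed
    finally show "B $$ (i,j) = (U' * diagm n \<mu> * adj U') $$ (i,j)" ..
  qed (use B U' in auto)
  have U'a: "U' * adj U' = 1\<^sub>m n"
  proof (rule eq_matI)
    fix i j assume "i < dim_row (1\<^sub>m n)" "j < dim_col (1\<^sub>m n)"
    then have i: "i < n" and j: "j < n" by auto
    have "(U' * adj U') $$ (i,j) = (\<Sum>k<n. U' $$ (i,k) * cnj (U' $$ (j,k)))" using U' i j by simp
    also have "\<dots> = U' $$ (i,0) * cnj (U' $$ (j,0)) + (\<Sum>k<m. U' $$ (i,Suc k) * cnj (U' $$ (j,Suc k)))"
      unfolding n_def by (rule sum.lessThan_Suc_shift)
    also have "\<dots> = 1\<^sub>m n $$ (i,j)"
    proof (cases i)
      case 0 then show ?thesis using j U'i n unfolding n_def by auto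
    next
      case (Suc i')
      note ii = Suc
      show ?thesis
      proof (cases j)
        case 0 then show ?thesis using ii i U'i unfolding n_def by auto
      next
        case (Suc j')
        have i': "i' < m" and j': "j' < m" using i j ii Suc unfolding n_def by auto
        have "(\<Sum>k<m. U' $$ (i,Suc k) * cnj (U' $$ (j,Suc k))) = (\<Sum>k<m. U3 $$ (i',k) * cnj (U3 $$ (j',k)))"
          by (rule sum.cong, simp, simp add: U'i i' j' ii Suc n_def)
        also have "\<dots> = (U3 * adj U3) $$ (i',j')" using U3 i' j' by simp
        finally show ?thesis unfolding U3a using U'i i j ii Suc i' j' by simp
      qed
    qed
    finally show "(U' * adj U') $$ (i,j) = 1\<^sub>m n $$ (i,j)" .
  qed (use U' in auto)
  have U'b: "adj U' * U' = 1\<^sub>m n"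
  proof (rule eq_matI)
    fix i j assume "i < dim_row (1\<^sub>m n)" "j < dim_col (1\<^sub>m n)"
    then have i: "i < n" and j: "j < n" by auto
    have "(adj U' * U') $$ (i,j) = (\<Sum>k<n. cnj (U' $$ (k,i)) * U' $$ (k,j))" using U' i j by simp
    also have "\<dots> = cnj (U' $$ (0,i)) * U' $$ (0,j) + (\<Sum>k<m. cnj (U' $$ (Suc k,i)) * U' $$ (Suc k,j))"
      unfolding n_def by (rule sum.lessThan_Suc_shift)
    also have "\<dots> = 1\<^sub>m n $$ (i,j)"
    proof (cases i)
      case 0 then show ?thesis using j U'i n unfolding n_def by auto
    next
      case (Suc i')
      note ii = Suc
      show ?thesis
      proof (cases j)
        case 0 then show ?thesis using ii i U'i unfolding n_def by auto
      next
        case (Suc j')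
        have i': "i' < m" and j': "j' < m" using i j ii Suc unfolding n_def by auto
        have "(\<Sum>k<m. cnj (U' $$ (Suc k,i)) * U' $$ (Suc k,j)) = (\<Sum>k<m. cnj (U3 $$ (k,i')) * U3 $$ (k,j'))"
          by (rule sum.cong, simp, simp add: U'i i' j' ii Suc n_def)
        also have "\<dots> = (adj U3 * U3) $$ (i',j')" using U3 i' j' by simp
        finally show ?thesis unfolding U3b using U'i i j ii Suc i' j' by simp
      qed
    qed
    finally show "(adj U' * U') $$ (i,j) = 1\<^sub>m n $$ (i,j)" .
  qed (use U' in auto)
  define U where "U = W * U'"
  have Uc: "U \<in> carrier_mat n n" unfolding U_def using W U' by simp
  have adjU0: "adj (W * U') = adj U' * W" using W U' hW by (simp add: adj_mult)
  have adjU: "adj U = adj U' * W" unfolding U_def by (rule adjU0)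
  have aU': "adj U' \<in> carrier_mat n n" using U' by simp
  have aU'W: "adj U' * W \<in> carrier_mat n n" by (rule mult_carrier_mat[OF aU' W])
  have "U * adj U = (W * U') * (adj U' * W)" unfolding U_def adjU0 ..
  also have "\<dots> = W * (U' * (adj U' * W))" by (rule assoc_mult_mat[OF W U' aU'W])
  also have "U' * (adj U' * W) = (U' * adj U') * W" by (rule assoc_mult_mat[OF U' aU' W, symmetric])
  finally have Ua: "U * adj U = 1\<^sub>m n" unfolding U'a using W WW by simp
  have "adj U * U = (adj U' * W) * (W * U')" unfolding U_def adjU0 ..
  also have "\<dots> = adj U' * (W * (W * U'))" using assoc_mult_mat[OF aU' W mult_carrier_mat[OF W U']] .
  also have "W * (W * U') = (W * W) * U'" using W U' by simp
  finally have Ub: "adj U * U = 1\<^sub>m n" unfolding WW using U' U'b aU' by simp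
  have "A = (W * W) * A * (W * W)" unfolding WW using A by simp
  also have "\<dots> = W * B * W"
  proof -
    have WA: "W * A \<in> carrier_mat n n" using W A by simp
    have WW': "W * W \<in> carrier_mat n n" using W by simp
    have "(W * W) * A * (W * W) = (W * (W * A)) * (W * W)" using assoc_mult_mat[OF W W A] by simp
    also have "\<dots> = W * ((W * A) * (W * W))" using assoc_mult_mat[OF W WA WW'] .
    also have "(W * A) * (W * W) = ((W * A) * W) * W" using assoc_mult_mat[OF WA W W] by simp
    also have "W * (((W * A) * W) * W) = (W * ((W * A) * W)) * W"
      using assoc_mult_mat[OF W mult_carrier_mat[OF WA W] W] by simp
    finally show ?thesis unfolding B_def .
  qed
  also have "\<dots> = W * (U' * diagm n \<mu> * adj U') * W" unfolding Bd ..
  also have "\<dots> = (W * U') * diagm n \<mu> * (adj U' * W)"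
  proof -
    have d: "diagm n \<mu> \<in> carrier_mat n n" by simp
    have UD: "U' * diagm n \<mu> \<in> carrier_mat n n" using mult_carrier_mat[OF U' d] .
    have UDU: "U' * diagm n \<mu> * adj U' \<in> carrier_mat n n" using mult_carrier_mat[OF UD aU'] .
    have e1: "W * (U' * diagm n \<mu> * adj U') * W = W * ((U' * diagm n \<mu> * adj U') * W)"
      using assoc_mult_mat[OF W UDU W] .
    have e2: "(U' * diagm n \<mu> * adj U') * W = (U' * diagm n \<mu>) * (adj U' * W)"
      using assoc_mult_mat[OF UD aU' W] .
    have e3: "W * ((U' * diagm n \<mu>) * (adj U' * W)) = (W * (U' * diagm n \<mu>)) * (adj U' * W)"
      using assoc_mult_mat[OF W UD aU'W] by simp
    have e4: "W * (U' * diagm n \<mu>) = (W * U') * diagm n \<mu>"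
      using assoc_mult_mat[OF W U' d] by simp
    show ?thesis unfolding e1 e2 e3 e4 ..
  qed
  finally have "A = U * diagm n \<mu> * adj U" unfolding U_def adjU0 .
  then show ?case using Uc Ua Ub unfolding unitary_mat_def n_def by blast
qed

definition qf :: "nat \<Rightarrow> complex mat \<Rightarrow> (nat \<Rightarrow> complex) \<Rightarrow> complex" where
  "qf d M f = (\<Sum>i<d. \<Sum>j<d. cnj (f i) * M $$ (i,j) * f j)"

lemma psd_iff: "psd d M \<longleftrightarrow> M \<in> carrier_mat d d \<and> (\<forall>f. 0 \<le> qf d M f)"
proof
  assume p: "psd d M"
  then have M: "M \<in> carrier_mat d d" unfolding psd_def by simp
  show "M \<in> carrier_mat d d \<and> (\<forall>f. 0 \<le> qf d M f)"
  proof (intro conjI allI M)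
    fix f :: "nat \<Rightarrow> complex"
    define v where "v = vec d f"
    have "v \<in> carrier_vec d" unfolding v_def by simp
    then have h: "Im (\<Sum>i<d. cnj (v $ i) * (M *\<^sub>v v) $ i) = 0 \<and> Re (\<Sum>i<d. cnj (v $ i) * (M *\<^sub>v v) $ i) \<ge> 0"
      using p unfolding psd_def by blast
    have "(\<Sum>i<d. cnj (v $ i) * (M *\<^sub>v v) $ i) = qf d M f"
      unfolding qf_def v_def using M by (simp add: sum_distrib_left algebra_simps)
    then show "0 \<le> qf d M f" using h by (simp add: less_eq_complex_def)
  qed
next
  assume h: "M \<in> carrier_mat d d \<and> (\<forall>f. 0 \<le> qf d M f)"
  then have M: "M \<in> carrier_mat d d" by simp
  show "psd d M" unfolding psd_def
  proof (intro conjI ballI M)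
    fix v :: "complex vec" assume v: "v \<in> carrier_vec d"
    have "(\<Sum>i<d. cnj (v $ i) * (M *\<^sub>v v) $ i) = qf d M (\<lambda>i. v $ i)"
      unfolding qf_def using M v by (simp add: sum_distrib_left algebra_simps)
    moreover have "0 \<le> qf d M (\<lambda>i. v $ i)" using h by simp
    ultimately show "Im (\<Sum>i<d. cnj (v $ i) * (M *\<^sub>v v) $ i) = 0"
      "0 \<le> Re (\<Sum>i<d. cnj (v $ i) * (M *\<^sub>v v) $ i)" by (simp_all add: less_eq_complex_def)
  qed
qed

lemma spectral_entry:
  fixes A :: "complex mat"
  assumes A: "A \<in> carrier_mat n n" and h: "adj A = A"
  shows "\<exists>U \<mu>. (\<forall>i<n. \<forall>j<n. (\<Sum>k<n. U i k * cnj (U j k)) = (if i = j then 1 else 0)) \<and>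
     (\<forall>k<n. \<forall>l<n. (\<Sum>i<n. cnj (U i k) * U i l) = (if k = l then 1 else 0)) \<and>
     (\<forall>i<n. \<forall>j<n. A $$ (i,j) = (\<Sum>k<n. complex_of_real (\<mu> k) * U i k * cnj (U j k)))"
proof -
  obtain U \<mu> where u: "unitary_mat n U" and Ad: "A = U * diagm n \<mu> * adj U"
    using spectral[OF A h] by blast
  have U: "U \<in> carrier_mat n n" and Ua: "U * adj U = 1\<^sub>m n" and Ub: "adj U * U = 1\<^sub>m n"
    using u unfolding unitary_mat_def by auto
  have 1: "(\<Sum>k<n. U $$ (i,k) * cnj (U $$ (j,k))) = (if i = j then 1 else 0)" if "i < n" "j < n" for i j
  proof -
    have "(U * adj U) $$ (i,j) = (\<Sum>k<n. U $$ (i,k) * cnj (U $$ (j,k)))" using U that by simp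
    then show ?thesis unfolding Ua using that by simp
  qed
  have 2: "(\<Sum>i<n. cnj (U $$ (i,k)) * U $$ (i,l)) = (if k = l then 1 else 0)" if "k < n" "l < n" for k l
  proof -
    have "(adj U * U) $$ (k,l) = (\<Sum>i<n. cnj (U $$ (i,k)) * U $$ (i,l))" using U that by simp
    then show ?thesis unfolding Ub using that by simp
  qed
  have 3: "A $$ (i,j) = (\<Sum>k<n. complex_of_real (\<mu> k) * U $$ (i,k) * cnj (U $$ (j,k)))" if "i < n" "j < n" for i j
    unfolding Ad by (rule UDU_idx[OF U that])
  show ?thesis
    by (rule exI[of _ "\<lambda>i k. U $$ (i,k)"], rule exI[of _ \<mu>]) (use 1 2 3 in blast)
qed

lemma sum_sq_expand:
  fixes a :: "'i \<Rightarrow> 'j \<Rightarrow> complex"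
  shows "(\<Sum>i\<in>I. (\<Sum>j\<in>J. a i j) * cnj (\<Sum>l\<in>J. a i l)) = (\<Sum>j\<in>J. \<Sum>l\<in>J. \<Sum>i\<in>I. a i j * cnj (a i l))"
proof -
  have "(\<Sum>i\<in>I. (\<Sum>j\<in>J. a i j) * cnj (\<Sum>l\<in>J. a i l)) = (\<Sum>i\<in>I. \<Sum>j\<in>J. \<Sum>l\<in>J. a i j * cnj (a i l))"
    by (rule sum.cong, simp, simp add: sum_product cnj_sum)
  also have "\<dots> = (\<Sum>j\<in>J. \<Sum>i\<in>I. \<Sum>l\<in>J. a i j * cnj (a i l))" by (rule sum.swap)
  also have "\<dots> = (\<Sum>j\<in>J. \<Sum>l\<in>J. \<Sum>i\<in>I. a i j * cnj (a i l))" by (rule sum.cong, simp, rule sum.swap)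
  finally show ?thesis .
qed

lemma sum_two_delta:
  fixes g :: "nat \<Rightarrow> complex"
  assumes "i < n" "j < n" "i \<noteq> j"
  shows "(\<Sum>q<n. g q * ((if q = i then a else 0) + (if q = j then b else 0))) = g i * a + g j * b"
proof -
  have "(\<Sum>q<n. g q * ((if q = i then a else 0) + (if q = j then b else 0))) =
     (\<Sum>q<n. (if q = i then g q * a else 0)) + (\<Sum>q<n. (if q = j then g q * b else 0))"
  proof -
    have "\<And>q. g q * ((if q = i then a else 0) + (if q = j then b else 0)) =
       (if q = i then g q * a else 0) + (if q = j then g q * b else 0)" by (simp add: algebra_simps)
    then show ?thesis by (simp add: sum.distrib)
  qed
  then show ?thesis using assms by (simp add: sum.delta')
qed

lemma qf_pair:
  assumes i: "i < n" and j: "j < n" and ij: "i \<noteq> j"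
  shows "qf n A (\<lambda>p. (if p = i then a else 0) + (if p = j then b else 0)) =
    cnj a * a * A $$ (i,i) + cnj a * b * A $$ (i,j) + cnj b * a * A $$ (j,i) + cnj b * b * A $$ (j,j)"
proof -
  let ?f = "\<lambda>p. (if p = i then a else 0) + (if p = j then b else 0)"
  have inner: "(\<Sum>q<n. cnj (?f p) * A $$ (p,q) * ?f q) = cnj (?f p) * (A $$ (p,i) * a + A $$ (p,j) * b)" for p
  proof -
    have "(\<Sum>q<n. cnj (?f p) * A $$ (p,q) * ?f q) = cnj (?f p) * (\<Sum>q<n. A $$ (p,q) * ?f q)"
      by (simp add: sum_distrib_left mult.assoc)
    then show ?thesis using sum_two_delta[OF i j ij, of "\<lambda>q. A $$ (p,q)" a b] by simp
  qed
  have "qf n A ?f = (\<Sum>p<n. (A $$ (p,i) * a + A $$ (p,j) * b) * ((if p = i then cnj a else 0) + (if p = j then cnj b else 0)))"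
    unfolding qf_def inner by (rule sum.cong) (auto simp: mult.commute)
  also have "\<dots> = (A $$ (i,i) * a + A $$ (i,j) * b) * cnj a + (A $$ (j,i) * a + A $$ (j,j) * b) * cnj b"
    by (rule sum_two_delta[OF i j ij])
  finally show ?thesis by (simp add: algebra_simps)
qed

lemma qf_single:
  assumes i: "i < n"
  shows "qf n A (\<lambda>p. if p = i then 1 else 0) = A $$ (i,i)"
proof -
  have "qf n A (\<lambda>p. if p = i then 1 else 0) = (\<Sum>p<n. if p = i then A $$ (i,i) else 0)"
    unfolding qf_def by (rule sum.cong) (auto simp: if_distrib cong: if_cong)
  then show ?thesis using i by simp
qed

lemma psd_herm_entry:
  assumes q: "\<And>f. 0 \<le> qf n A f" and i: "i < n" and j: "j < n"
  shows "A $$ (i,j) = cnj (A $$ (j,i))"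
proof (cases "i = j")
  case True
  have "0 \<le> A $$ (i,i)" using q[of "\<lambda>p. if p = i then 1 else 0"] unfolding qf_single[OF i] .
  then show ?thesis using True by (simp add: less_eq_complex_def complex_eq_iff)
next
  case False
  have d: "Im (A $$ (i,i)) = 0" "Im (A $$ (j,j)) = 0"
    using q[of "\<lambda>p. if p = i then 1 else 0"] q[of "\<lambda>p. if p = j then 1 else 0"]
    unfolding qf_single[OF i] qf_single[OF j] by (auto simp: less_eq_complex_def)
  have 1: "Im (qf n A (\<lambda>p. (if p = i then 1 else 0) + (if p = j then 1 else 0))) = 0"
    using q by (simp add: less_eq_complex_def)
  have 2: "Im (qf n A (\<lambda>p. (if p = i then 1 else 0) + (if p = j then \<i> else 0))) = 0"
    using q by (simp add: less_eq_complex_def)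
  have "Im (A $$ (i,j)) + Im (A $$ (j,i)) = 0" using 1 d unfolding qf_pair[OF i j False] by simp
  moreover have "Re (A $$ (i,j)) - Re (A $$ (j,i)) = 0" using 2 d unfolding qf_pair[OF i j False] by simp
  ultimately show ?thesis by (simp add: complex_eq_iff)
qed

lemma psd_adj: assumes "psd n A" shows "adj A = A"
proof -
  have A: "A \<in> carrier_mat n n" and q: "\<And>f. 0 \<le> qf n A f" using assms unfolding psd_iff by auto
  show ?thesis
  proof (rule eq_matI)
    fix i j assume ij: "i < dim_row A" "j < dim_col A"
    then have i: "i < n" and j: "j < n" using A by auto
    show "adj A $$ (i,j) = A $$ (i,j)" using psd_herm_entry[OF q j i] A i j by simp
  qed (use A in auto)
qed

lemma triple_swap: "(\<Sum>i\<in>I. \<Sum>j\<in>J. \<Sum>l\<in>L. f i j l) = (\<Sum>l\<in>L. \<Sum>i\<in>I. \<Sum>j\<in>J. f i j l)"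
proof -
  have "(\<Sum>i\<in>I. \<Sum>j\<in>J. \<Sum>l\<in>L. f i j l) = (\<Sum>i\<in>I. \<Sum>l\<in>L. \<Sum>j\<in>J. f i j l)"
    by (rule sum.cong[OF refl], rule sum.swap)
  also have "\<dots> = (\<Sum>l\<in>L. \<Sum>i\<in>I. \<Sum>j\<in>J. f i j l)" by (rule sum.swap)
  finally show ?thesis .
qed

lemma sum_prod3:
  fixes c :: "'a::comm_semiring_1"
  shows "(\<Sum>i\<in>I. \<Sum>j\<in>J. c * a i * b j) = c * sum a I * sum b J"
proof -
  have "c * sum a I * sum b J = c * (\<Sum>i\<in>I. \<Sum>j\<in>J. a i * b j)" by (simp add: mult.assoc sum_product)
  also have "\<dots> = (\<Sum>i\<in>I. \<Sum>j\<in>J. c * (a i * b j))" by (simp add: sum_distrib_left)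
  finally show ?thesis by (simp add: mult.assoc)
qed

lemma psd_decomp:
  assumes p: "psd n A"
  shows "\<exists>vs. \<forall>i<n. \<forall>j<n. A $$ (i,j) = (\<Sum>k<n. vs k i * cnj (vs k j))"
proof -
  have A: "A \<in> carrier_mat n n" and q: "\<And>f. 0 \<le> qf n A f" using p unfolding psd_iff by auto
  obtain U \<mu> where H: "(\<forall>i<n. \<forall>j<n. (\<Sum>k<n. U i k * cnj (U j k)) = (if i = j then 1 else 0)) \<and>
     (\<forall>k<n. \<forall>l<n. (\<Sum>i<n. cnj (U i k) * U i l) = (if k = l then 1 else 0)) \<and>
     (\<forall>i<n. \<forall>j<n. A $$ (i,j) = (\<Sum>k<n. complex_of_real (\<mu> k) * U i k * cnj (U j k)))"
    using spectral_entry[OF A psd_adj[OF p]] by (elim exE)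
  have U2: "\<And>k l. k<n \<Longrightarrow> l<n \<Longrightarrow> (\<Sum>i<n. cnj (U i k) * U i l) = (if k = l then 1 else 0)"
    using H by simp
  have Ad: "\<And>i j. i<n \<Longrightarrow> j<n \<Longrightarrow> A $$ (i,j) = (\<Sum>k<n. complex_of_real (\<mu> k) * U i k * cnj (U j k))"
    using H by simp
  have mu: "\<mu> k \<ge> 0" if k: "k < n" for k
  proof -
    have "qf n A (\<lambda>i. U i k) = (\<Sum>i<n. \<Sum>j<n. \<Sum>l<n. cnj (U i k) * (complex_of_real (\<mu> l) * U i l * cnj (U j l)) * U j k)"
      unfolding qf_def by (rule sum.cong, simp, rule sum.cong, simp, simp add: Ad sum_distrib_left sum_distrib_right)
    also have "\<dots> = (\<Sum>l<n. \<Sum>i<n. \<Sum>j<n. cnj (U i k) * (complex_of_real (\<mu> l) * U i l * cnj (U j l)) * U j k)"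
      by (rule triple_swap)
    also have "\<dots> = (\<Sum>l<n. \<Sum>i<n. \<Sum>j<n. complex_of_real (\<mu> l) * (cnj (U i k) * U i l) * (cnj (U j l) * U j k))"
      by (intro sum.cong refl) (simp add: algebra_simps)
    also have "\<dots> = (\<Sum>l<n. complex_of_real (\<mu> l) * (\<Sum>i<n. cnj (U i k) * U i l) * (\<Sum>j<n. cnj (U j l) * U j k))"
      by (intro sum.cong refl) (rule sum_prod3)
    also have "\<dots> = (\<Sum>l<n. if l = k then complex_of_real (\<mu> l) else 0)"
      by (rule sum.cong, simp, simp add: U2 k)
    also have "\<dots> = complex_of_real (\<mu> k)" using k by simp
    finally show ?thesis using q[of "\<lambda>i. U i k"] by (simp add: less_eq_complex_def)
  qed
  define vs where "vs = (\<lambda>k i. complex_of_real (sqrt (\<mu> k)) * U i k)"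
  have "A $$ (i,j) = (\<Sum>k<n. vs k i * cnj (vs k j))" if "i < n" "j < n" for i j
    unfolding Ad[OF that] vs_def
  proof (rule sum.cong[OF refl])
    fix k assume "k \<in> {..<n}"
    then have "sqrt (\<mu> k) * sqrt (\<mu> k) = \<mu> k" using mu by simp
    then have "complex_of_real (\<mu> k) = complex_of_real (sqrt (\<mu> k)) * complex_of_real (sqrt (\<mu> k))"
      by (metis of_real_mult)
    then show "complex_of_real (\<mu> k) * U i k * cnj (U j k) =
      complex_of_real (sqrt (\<mu> k)) * U i k * cnj (complex_of_real (sqrt (\<mu> k)) * U j k)"
      by (simp add: algebra_simps)
  qed
  then show ?thesis by blast
qed

definition nrm :: "nat \<Rightarrow> (nat \<Rightarrow> complex) \<Rightarrow> real" where
  "nrm d v = (\<Sum>i<d. (cmod (v i))\<^sup>2)"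

lemma nrm_nonneg: "0 \<le> nrm d v" unfolding nrm_def by (simp add: sum_nonneg)

lemma cmod_sq_c: "complex_of_real ((cmod z)\<^sup>2) = z * cnj z"
  by (metis complex_norm_square)

lemma nrm_c: "complex_of_real (nrm d v) = (\<Sum>i<d. v i * cnj (v i))"
  unfolding nrm_def of_real_sum by (rule sum.cong[OF refl], rule cmod_sq_c)

lemma unitary_props:
  assumes "unitary_mat n V"
  shows "V \<in> carrier_mat n n"
    "\<And>i j. i < n \<Longrightarrow> j < n \<Longrightarrow> (\<Sum>k<n. V $$ (i,k) * cnj (V $$ (j,k))) = (if i = j then 1 else 0)"
    "\<And>k l. k < n \<Longrightarrow> l < n \<Longrightarrow> (\<Sum>i<n. cnj (V $$ (i,k)) * V $$ (i,l)) = (if k = l then 1 else 0)"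
proof -
  have V: "V \<in> carrier_mat n n" and a: "V * adj V = 1\<^sub>m n" and b: "adj V * V = 1\<^sub>m n"
    using assms unfolding unitary_mat_def by auto
  show "V \<in> carrier_mat n n" by fact
  show "\<And>i j. i < n \<Longrightarrow> j < n \<Longrightarrow> (\<Sum>k<n. V $$ (i,k) * cnj (V $$ (j,k))) = (if i = j then 1 else 0)"
  proof -
    fix i j assume ij: "i < n" "j < n"
    have "(V * adj V) $$ (i,j) = (\<Sum>k<n. V $$ (i,k) * cnj (V $$ (j,k)))" using V ij by simp
    then show "(\<Sum>k<n. V $$ (i,k) * cnj (V $$ (j,k))) = (if i = j then 1 else 0)" unfolding a using ij by simp
  qed
  show "\<And>k l. k < n \<Longrightarrow> l < n \<Longrightarrow> (\<Sum>i<n. cnj (V $$ (i,k)) * V $$ (i,l)) = (if k = l then 1 else 0)"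
  proof -
    fix k l assume kl: "k < n" "l < n"
    have "(adj V * V) $$ (k,l) = (\<Sum>i<n. cnj (V $$ (i,k)) * V $$ (i,l))" using V kl by simp
    then show "(\<Sum>i<n. cnj (V $$ (i,k)) * V $$ (i,l)) = (if k = l then 1 else 0)" unfolding b using kl by simp
  qed
qed

lemma unitary_entry_le1:
  assumes u: "unitary_mat n V" and i: "i < n" and k: "k < n"
  shows "cmod (V $$ (i,k)) \<le> 1"
proof -
  have "complex_of_real (\<Sum>l<n. (cmod (V $$ (i,l)))\<^sup>2) = (\<Sum>l<n. V $$ (i,l) * cnj (V $$ (i,l)))"
    unfolding of_real_sum by (rule sum.cong[OF refl], rule cmod_sq_c)
  then have "complex_of_real (\<Sum>l<n. (cmod (V $$ (i,l)))\<^sup>2) = 1"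
    using unitary_props(2)[OF u i i] by simp
  then have s: "(\<Sum>l<n. (cmod (V $$ (i,l)))\<^sup>2) = 1" by (metis of_real_eq_1_iff)
  have "(cmod (V $$ (i,k)))\<^sup>2 \<le> (\<Sum>l<n. (cmod (V $$ (i,l)))\<^sup>2)"
    by (rule member_le_sum) (use k in auto)
  then have "(cmod (V $$ (i,k)))\<^sup>2 \<le> 1" using s by simp
  then show ?thesis by (simp add: power_le_one_iff)
qed

lemma unitary_nrm:
  assumes u: "unitary_mat n V"
  shows "nrm n (\<lambda>i. \<Sum>j<n. V $$ (i,j) * v j) = nrm n v"
proof -
  note b = unitary_props(3)[OF u]
  have "complex_of_real (nrm n (\<lambda>i. \<Sum>j<n. V $$ (i,j) * v j)) =
     (\<Sum>i<n. (\<Sum>j<n. V $$ (i,j) * v j) * cnj (\<Sum>l<n. V $$ (i,l) * v l))"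
    unfolding nrm_c ..
  also have "\<dots> = (\<Sum>j<n. \<Sum>l<n. \<Sum>i<n. V $$ (i,j) * v j * cnj (V $$ (i,l) * v l))"
    by (rule sum_sq_expand)
  also have "\<dots> = (\<Sum>j<n. \<Sum>l<n. v j * cnj (v l) * (\<Sum>i<n. cnj (V $$ (i,l)) * V $$ (i,j)))"
    by (intro sum.cong refl) (simp add: sum_distrib_left algebra_simps)
  also have "\<dots> = (\<Sum>j<n. \<Sum>l<n. if l = j then v j * cnj (v l) else 0)"
    by (intro sum.cong refl) (simp add: b)
  also have "\<dots> = (\<Sum>j<n. v j * cnj (v j))" by simp
  also have "\<dots> = complex_of_real (nrm n v)" unfolding nrm_c ..
  finally show ?thesis by (metis of_real_eq_iff)
qed

lemma inner_bound:
  "cmod (\<Sum>i<n. cnj (v i) * w i) \<le> (nrm n v + nrm n w) / 2"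
proof -
  have "cmod (\<Sum>i<n. cnj (v i) * w i) \<le> (\<Sum>i<n. cmod (v i) * cmod (w i))"
    by (rule order_trans[OF norm_sum]) (simp add: norm_mult)
  also have "\<dots> \<le> (\<Sum>i<n. ((cmod (v i))\<^sup>2 + (cmod (w i))\<^sup>2) / 2)"
  proof (rule sum_mono)
    fix i
    have "0 \<le> (cmod (v i) - cmod (w i))\<^sup>2" by simp
    then show "cmod (v i) * cmod (w i) \<le> ((cmod (v i))\<^sup>2 + (cmod (w i))\<^sup>2) / 2"
      by (simp add: power2_eq_square algebra_simps)
  qed
  also have "\<dots> = (nrm n v + nrm n w) / 2"
    unfolding nrm_def by (simp add: sum_divide_distrib[symmetric] sum.distrib)
  finally show ?thesis .
qed

definition UDU :: "nat \<Rightarrow> complex mat \<Rightarrow> (nat \<Rightarrow> real) \<Rightarrow> complex mat" where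
  "UDU n U a = mat n n (\<lambda>(i,j). \<Sum>k<n. complex_of_real (a k) * U $$ (i,k) * cnj (U $$ (j,k)))"

lemma UDU_carrier[simp]: "UDU n U a \<in> carrier_mat n n" unfolding UDU_def by simp
lemma UDU_dims[simp]: "dim_row (UDU n U a) = n" "dim_col (UDU n U a) = n" unfolding UDU_def by simp_all
lemma UDU_idx2[simp]: "i < n \<Longrightarrow> j < n \<Longrightarrow> UDU n U a $$ (i,j) = (\<Sum>k<n. complex_of_real (a k) * U $$ (i,k) * cnj (U $$ (j,k)))"
  unfolding UDU_def by simp

lemma UDU_eq: assumes U: "U \<in> carrier_mat n n" shows "U * diagm n a * adj U = UDU n U a"
proof (rule eq_matI)
  fix i j assume "i < dim_row (UDU n U a)" "j < dim_col (UDU n U a)"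
  then have i: "i < n" and j: "j < n" by simp_all
  show "(U * diagm n a * adj U) $$ (i,j) = UDU n U a $$ (i,j)"
    unfolding UDU_idx[OF U i j] using i j by simp
qed (use U in simp_all)

lemma UDU_adj: "adj (UDU n U a) = UDU n U a"
proof (rule eq_matI)
  fix i j assume "i < dim_row (UDU n U a)" "j < dim_col (UDU n U a)"
  then have i: "i < n" and j: "j < n" by simp_all
  have "adj (UDU n U a) $$ (i,j) = cnj (\<Sum>k<n. complex_of_real (a k) * U $$ (j,k) * cnj (U $$ (i,k)))"
    using i j by simp
  also have "\<dots> = (\<Sum>k<n. cnj (complex_of_real (a k) * U $$ (j,k) * cnj (U $$ (i,k))))" by (rule cnj_sum)
  also have "\<dots> = UDU n U a $$ (i,j)" using i j by (simp, intro sum.cong refl, simp add: algebra_simps)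
  finally show "adj (UDU n U a) $$ (i,j) = UDU n U a $$ (i,j)" .
qed simp_all

lemma UDU_mult:
  assumes u: "unitary_mat n U"
  shows "UDU n U a * UDU n U b = UDU n U (\<lambda>k. a k * b k)"
proof (rule eq_matI)
  note b = unitary_props(3)[OF u]
  fix i j assume "i < dim_row (UDU n U (\<lambda>k. a k * b k))" "j < dim_col (UDU n U (\<lambda>k. a k * b k))"
  then have i: "i < n" and j: "j < n" by simp_all
  have "(UDU n U a * UDU n U b) $$ (i,j) = (\<Sum>l<n. (\<Sum>k<n. complex_of_real (a k) * U $$ (i,k) * cnj (U $$ (l,k))) *
      (\<Sum>m<n. complex_of_real (b m) * U $$ (l,m) * cnj (U $$ (j,m))))"
    using i j by simp
  also have "\<dots> = (\<Sum>l<n. \<Sum>k<n. \<Sum>m<n. (complex_of_real (a k) * U $$ (i,k) * cnj (U $$ (l,k))) *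
      (complex_of_real (b m) * U $$ (l,m) * cnj (U $$ (j,m))))"
    by (simp add: sum_product)
  also have "\<dots> = (\<Sum>k<n. \<Sum>m<n. \<Sum>l<n. (complex_of_real (a k) * U $$ (i,k) * cnj (U $$ (l,k))) *
      (complex_of_real (b m) * U $$ (l,m) * cnj (U $$ (j,m))))"
    by (rule triple_swap[symmetric])
  also have "\<dots> = (\<Sum>k<n. \<Sum>m<n. (complex_of_real (a k) * complex_of_real (b m) * U $$ (i,k) * cnj (U $$ (j,m))) *
      (\<Sum>l<n. cnj (U $$ (l,k)) * U $$ (l,m)))"
    by (intro sum.cong refl) (simp add: sum_distrib_left algebra_simps)
  also have "\<dots> = (\<Sum>k<n. \<Sum>m<n. if k = m then complex_of_real (a k) * complex_of_real (b m) * U $$ (i,k) * cnj (U $$ (j,m)) else 0)"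
    by (intro sum.cong refl) (simp add: b)
  also have "\<dots> = UDU n U (\<lambda>k. a k * b k) $$ (i,j)" using i j by simp
  finally show "(UDU n U a * UDU n U b) $$ (i, j) = UDU n U (\<lambda>k. a k * b k) $$ (i, j)" .
qed simp_all

lemma UDU_one:
  assumes u: "unitary_mat n U"
  shows "UDU n U (\<lambda>_. 1) = 1\<^sub>m n"
  by (rule eq_matI) (simp_all add: unitary_props(2)[OF u])

lemma mtrace_UDU:
  assumes u: "unitary_mat n U"
  shows "mtrace (UDU n U a) = (\<Sum>k<n. complex_of_real (a k))"
proof -
  note b = unitary_props(3)[OF u]
  have "mtrace (UDU n U a) = (\<Sum>i<n. \<Sum>k<n. complex_of_real (a k) * U $$ (i,k) * cnj (U $$ (i,k)))"
    unfolding mtrace_def by simp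
  also have "\<dots> = (\<Sum>k<n. complex_of_real (a k) * (\<Sum>i<n. cnj (U $$ (i,k)) * U $$ (i,k)))"
  proof -
    have "(\<Sum>i<n. \<Sum>k<n. complex_of_real (a k) * U $$ (i,k) * cnj (U $$ (i,k))) =
       (\<Sum>k<n. \<Sum>i<n. complex_of_real (a k) * U $$ (i,k) * cnj (U $$ (i,k)))" by (rule sum.swap)
    also have "\<dots> = (\<Sum>k<n. complex_of_real (a k) * (\<Sum>i<n. cnj (U $$ (i,k)) * U $$ (i,k)))"
      by (intro sum.cong refl) (simp add: sum_distrib_left algebra_simps)
    finally show ?thesis .
  qed
  also have "\<dots> = (\<Sum>k<n. complex_of_real (a k))" by (simp add: b)
  finally show ?thesis .
qed

lemma col_nrm:
  assumes u: "unitary_mat n U" and k: "k < n"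
  shows "nrm n (\<lambda>i. U $$ (i,k)) = 1"
proof -
  have "complex_of_real (nrm n (\<lambda>i. U $$ (i,k))) = (\<Sum>i<n. cnj (U $$ (i,k)) * U $$ (i,k))"
    unfolding nrm_c by (simp add: mult.commute)
  also have "\<dots> = 1" using unitary_props(3)[OF u k k] by simp
  finally show ?thesis by (metis of_real_eq_1_iff)
qed

lemma trace_norm_bdd:
  assumes Z: "Z \<in> carrier_mat n n"
  shows "bdd_above {cmod (mtrace (U * Z)) | U. unitary_mat n U}"
proof (rule bdd_aboveI)
  fix x assume "x \<in> {cmod (mtrace (U * Z)) | U. unitary_mat n U}"
  then obtain U where u: "unitary_mat n U" and x: "x = cmod (mtrace (U * Z))" by blast
  have U: "U \<in> carrier_mat n n" using unitary_props(1)[OF u] .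
  have "mtrace (U * Z) = (\<Sum>i<n. \<Sum>k<n. U $$ (i,k) * Z $$ (k,i))"
    unfolding mtrace_def using U Z by simp
  then have "x \<le> (\<Sum>i<n. \<Sum>k<n. cmod (U $$ (i,k) * Z $$ (k,i)))"
  proof -
    have "cmod (\<Sum>i<n. \<Sum>k<n. U $$ (i,k) * Z $$ (k,i)) \<le> (\<Sum>i<n. cmod (\<Sum>k<n. U $$ (i,k) * Z $$ (k,i)))"
      by (rule norm_sum)
    also have "\<dots> \<le> (\<Sum>i<n. \<Sum>k<n. cmod (U $$ (i,k) * Z $$ (k,i)))"
      by (intro sum_mono norm_sum)
    finally show ?thesis unfolding x using \<open>mtrace (U * Z) = _\<close> by simp
  qed
  also have "\<dots> \<le> (\<Sum>i<n. \<Sum>k<n. cmod (Z $$ (k,i)))"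
  proof (intro sum_mono)
    fix i k assume "i \<in> {..<n}" "k \<in> {..<n}"
    then have "cmod (U $$ (i,k)) \<le> 1" using unitary_entry_le1[OF u] by simp
    then show "cmod (U $$ (i,k) * Z $$ (k,i)) \<le> cmod (Z $$ (k,i))"
      by (simp add: norm_mult mult_left_le_one_le)
  qed
  finally show "x \<le> (\<Sum>i<n. \<Sum>k<n. cmod (Z $$ (k,i)))" .
qed

definition dsum :: "(real \<times> (nat \<Rightarrow> complex)) list \<Rightarrow> nat \<Rightarrow> nat \<Rightarrow> complex" where
  "dsum L i j = (\<Sum>p\<leftarrow>L. complex_of_real (fst p) * snd p i * cnj (snd p j))"

definition dwt :: "nat \<Rightarrow> (real \<times> (nat \<Rightarrow> complex)) list \<Rightarrow> real" where
  "dwt d L = (\<Sum>p\<leftarrow>L. \<bar>fst p\<bar> * nrm d (snd p))"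

definition decomp :: "nat \<Rightarrow> complex mat \<Rightarrow> real \<Rightarrow> bool" where
  "decomp d Y s \<longleftrightarrow> Y \<in> carrier_mat d d \<and> (\<exists>L. (\<forall>i<d. \<forall>j<d. Y $$ (i,j) = dsum L i j) \<and> dwt d L \<le> s)"

lemma sum_sum_list_swap: "(\<Sum>i\<in>I. \<Sum>p\<leftarrow>L. f i p) = (\<Sum>p\<leftarrow>L. \<Sum>i\<in>I. f i p)"
  by (induction L) (simp_all add: sum.distrib)

lemma norm_sum_list_le: "cmod (\<Sum>p\<leftarrow>L. f p) \<le> (\<Sum>p\<leftarrow>L. cmod (f p))"
  by (induction L) (simp_all add: order_trans[OF norm_triangle_ineq])

lemma sum_list_upt_lessThan: "(\<Sum>k\<leftarrow>[0..<n]. f k) = (\<Sum>k<n. f k)"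
  by (simp add: sum_set_upt_conv_sum_list_nat[symmetric] atLeast0LessThan)

lemma trace_norm_decomp:
  assumes d: "decomp n Y s"
  shows "trace_norm n Y \<le> s"
proof -
  obtain L where Y: "Y \<in> carrier_mat n n" and YL: "\<And>i j. i < n \<Longrightarrow> j < n \<Longrightarrow> Y $$ (i,j) = dsum L i j"
    and w: "dwt n L \<le> s" using d unfolding decomp_def by blast
  have b: "cmod (mtrace (V * Y)) \<le> s" if u: "unitary_mat n V" for V
  proof -
    have V: "V \<in> carrier_mat n n" using unitary_props(1)[OF u] .
    have "mtrace (V * Y) = (\<Sum>i<n. \<Sum>j<n. V $$ (i,j) * Y $$ (j,i))"
      unfolding mtrace_def using V Y by simp
    also have "\<dots> = (\<Sum>i<n. \<Sum>j<n. \<Sum>p\<leftarrow>L. V $$ (i,j) * (complex_of_real (fst p) * snd p j * cnj (snd p i)))"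
      by (intro sum.cong refl) (simp add: YL dsum_def sum_list_const_mult)
    also have "\<dots> = (\<Sum>p\<leftarrow>L. \<Sum>i<n. \<Sum>j<n. V $$ (i,j) * (complex_of_real (fst p) * snd p j * cnj (snd p i)))"
      by (simp add: sum_sum_list_swap)
    also have "\<dots> = (\<Sum>p\<leftarrow>L. complex_of_real (fst p) * (\<Sum>i<n. cnj (snd p i) * (\<Sum>j<n. V $$ (i,j) * snd p j)))"
      by (rule arg_cong[where f = sum_list], rule map_cong[OF refl])
         (simp add: sum_distrib_left algebra_simps)
    finally have tr: "mtrace (V * Y) = \<dots>" .
    have "cmod (mtrace (V * Y)) \<le> (\<Sum>p\<leftarrow>L. cmod (complex_of_real (fst p) * (\<Sum>i<n. cnj (snd p i) * (\<Sum>j<n. V $$ (i,j) * snd p j))))"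
      unfolding tr by (rule norm_sum_list_le)
    also have "\<dots> \<le> (\<Sum>p\<leftarrow>L. \<bar>fst p\<bar> * nrm n (snd p))"
    proof (rule sum_list_mono)
      fix p :: "real \<times> (nat \<Rightarrow> complex)"
      have "cmod (\<Sum>i<n. cnj (snd p i) * (\<Sum>j<n. V $$ (i,j) * snd p j)) \<le>
          (nrm n (snd p) + nrm n (\<lambda>i. \<Sum>j<n. V $$ (i,j) * snd p j)) / 2"
        by (rule inner_bound)
      also have "\<dots> = nrm n (snd p)" unfolding unitary_nrm[OF u] by simp
      finally show "cmod (complex_of_real (fst p) * (\<Sum>i<n. cnj (snd p i) * (\<Sum>j<n. V $$ (i,j) * snd p j))) \<le> \<bar>fst p\<bar> * nrm n (snd p)"
        by (simp add: norm_mult mult_left_mono)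
    qed
    also have "\<dots> \<le> s" using w unfolding dwt_def .
    finally show ?thesis .
  qed
  have ne: "{cmod (mtrace (U * Y)) | U. unitary_mat n U} \<noteq> {}"
    using unitary_mat_def[of n "1\<^sub>m n"] by auto
  show ?thesis unfolding trace_norm_def
    by (rule cSup_least[OF ne]) (use b in blast)
qed

lemma herm_decomp:
  assumes Z: "Z \<in> carrier_mat n n" and h: "adj Z = Z"
  shows "decomp n Z (trace_norm n Z)"
proof -
  obtain U \<mu> where u: "unitary_mat n U" and Zd: "Z = U * diagm n \<mu> * adj U"
    using spectral[OF Z h] by blast
  have U: "U \<in> carrier_mat n n" using unitary_props(1)[OF u] .
  have Zu: "Z = UDU n U \<mu>" unfolding Zd UDU_eq[OF U] ..
  define L where "L = map (\<lambda>k. (\<mu> k, \<lambda>i. U $$ (i,k))) [0..<n]"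
  have ZL: "Z $$ (i,j) = dsum L i j" if "i < n" "j < n" for i j
    unfolding Zu dsum_def L_def using that by (simp add: sum_list_upt_lessThan o_def)
  have wL: "dwt n L = (\<Sum>k<n. \<bar>\<mu> k\<bar>)"
    unfolding dwt_def L_def by (simp add: o_def sum_list_upt_lessThan col_nrm[OF u])
  define sg where "sg = (\<lambda>k. if \<mu> k \<ge> 0 then 1 else (-1::real))"
  define S where "S = UDU n U sg"
  have sgsg: "(\<lambda>k. sg k * sg k) = (\<lambda>_. 1)" unfolding sg_def by auto
  have uS: "unitary_mat n S" unfolding unitary_mat_def S_def UDU_adj
    by (simp add: UDU_mult[OF u] sgsg UDU_one[OF u])
  have "mtrace (S * Z) = (\<Sum>k<n. complex_of_real (sg k * \<mu> k))"
    unfolding S_def Zu UDU_mult[OF u] mtrace_UDU[OF u] ..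
  also have "\<dots> = complex_of_real (\<Sum>k<n. \<bar>\<mu> k\<bar>)"
    unfolding of_real_sum sg_def by (intro sum.cong refl) auto
  finally have "cmod (mtrace (S * Z)) = \<bar>\<Sum>k<n. \<bar>\<mu> k\<bar>\<bar>" by (simp only: norm_of_real)
  then have "cmod (mtrace (S * Z)) = (\<Sum>k<n. \<bar>\<mu> k\<bar>)" by (simp add: sum_nonneg)
  then have "(\<Sum>k<n. \<bar>\<mu> k\<bar>) \<le> trace_norm n Z" unfolding trace_norm_def
    by (metis (mono_tags, lifting) cSup_upper mem_Collect_eq trace_norm_bdd[OF Z] uS)
  then show ?thesis unfolding decomp_def using Z ZL wL by auto
qed

definition Eu :: "nat \<Rightarrow> nat \<Rightarrow> nat \<Rightarrow> complex mat" where
  "Eu d i j = mat d d (\<lambda>(p,q). if p = i \<and> q = j then 1 else 0)"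

definition outer :: "nat \<Rightarrow> (nat \<Rightarrow> complex) \<Rightarrow> complex mat" where
  "outer d v = mat d d (\<lambda>(i,j). v i * cnj (v j))"

lemma outer_carrier[simp]: "outer d v \<in> carrier_mat d d" unfolding outer_def by simp
lemma outer_idx[simp]: "i < d \<Longrightarrow> j < d \<Longrightarrow> outer d v $$ (i,j) = v i * cnj (v j)" unfolding outer_def by simp
lemma Eu_carrier[simp]: "Eu d i j \<in> carrier_mat d d" unfolding Eu_def by simp

lemma lin_props:
  assumes "linear_map d1 d2 \<Phi>"
  shows "\<And>X. X \<in> carrier_mat d1 d1 \<Longrightarrow> \<Phi> X \<in> carrier_mat d2 d2"
    "\<And>X Y. X \<in> carrier_mat d1 d1 \<Longrightarrow> Y \<in> carrier_mat d1 d1 \<Longrightarrow> \<Phi> (X + Y) = \<Phi> X + \<Phi> Y"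
    "\<And>X c. X \<in> carrier_mat d1 d1 \<Longrightarrow> \<Phi> (c \<cdot>\<^sub>m X) = c \<cdot>\<^sub>m \<Phi> X"
  using assms unfolding linear_map_def by auto

lemma lin_sum:
  assumes lin: "linear_map d1 d2 \<Phi>" and fin: "finite I" and F: "\<And>k. k \<in> I \<Longrightarrow> F k \<in> carrier_mat d1 d1"
  shows "\<Phi> (mat d1 d1 (\<lambda>pq. \<Sum>k\<in>I. c k * F k $$ pq)) = mat d2 d2 (\<lambda>st. \<Sum>k\<in>I. c k * \<Phi> (F k) $$ st)"
  using fin F
proof (induction I rule: finite_induct)
  case empty
  have z: "mat d1 d1 (\<lambda>pq. \<Sum>k\<in>{}. c k * F k $$ pq) = 0 \<cdot>\<^sub>m (0\<^sub>m d1 d1)"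
    by (rule eq_matI) auto
  have "\<Phi> (0 \<cdot>\<^sub>m (0\<^sub>m d1 d1)) = 0 \<cdot>\<^sub>m \<Phi> (0\<^sub>m d1 d1)" by (rule lin_props(3)[OF lin]) simp
  also have "\<dots> = mat d2 d2 (\<lambda>st. \<Sum>k\<in>{}. c k * \<Phi> (F k) $$ st)"
    using lin_props(1)[OF lin, of "0\<^sub>m d1 d1"] by (intro eq_matI) auto
  finally show ?case unfolding z .
next
  case (insert k I)
  have Fk: "F k \<in> carrier_mat d1 d1" using insert by simp
  have s: "mat d1 d1 (\<lambda>pq. \<Sum>k\<in>insert k I. c k * F k $$ pq) =
     c k \<cdot>\<^sub>m F k + mat d1 d1 (\<lambda>pq. \<Sum>k\<in>I. c k * F k $$ pq)"
  proof (rule eq_matI)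
    fix i j assume "i < dim_row (c k \<cdot>\<^sub>m F k + mat d1 d1 (\<lambda>pq. \<Sum>k\<in>I. c k * F k $$ pq))"
      "j < dim_col (c k \<cdot>\<^sub>m F k + mat d1 d1 (\<lambda>pq. \<Sum>k\<in>I. c k * F k $$ pq))"
    then have i: "i < d1" and j: "j < d1" by auto
    have dF: "dim_row (F k) = d1" "dim_col (F k) = d1" using Fk by auto
    show "mat d1 d1 (\<lambda>pq. \<Sum>k\<in>insert k I. c k * F k $$ pq) $$ (i,j) =
      (c k \<cdot>\<^sub>m F k + mat d1 d1 (\<lambda>pq. \<Sum>k\<in>I. c k * F k $$ pq)) $$ (i,j)"
      using i j dF insert by simp
  qed auto
  have "\<Phi> (c k \<cdot>\<^sub>m F k + mat d1 d1 (\<lambda>pq. \<Sum>k\<in>I. c k * F k $$ pq)) =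
     c k \<cdot>\<^sub>m \<Phi> (F k) + mat d2 d2 (\<lambda>st. \<Sum>k\<in>I. c k * \<Phi> (F k) $$ st)"
    using lin_props(2,3)[OF lin] insert Fk by simp
  also have "\<dots> = mat d2 d2 (\<lambda>st. \<Sum>k\<in>insert k I. c k * \<Phi> (F k) $$ st)"
    by (rule eq_matI) (use insert lin_props(1)[OF lin Fk] in auto)
  finally show ?case unfolding s .
qed

lemma sum_pairs_delta:
  fixes X :: "complex mat"
  assumes "p < d" "q < d"
  shows "(\<Sum>k\<in>{..<d} \<times> {..<d}. X $$ k * (if p = fst k \<and> q = snd k then 1 else 0)) = X $$ (p,q)"
proof -
  have "(\<Sum>k\<in>{..<d} \<times> {..<d}. X $$ k * (if p = fst k \<and> q = snd k then 1 else 0)) =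
        (\<Sum>k\<in>{..<d} \<times> {..<d}. if k = (p,q) then X $$ (p,q) else 0)"
    by (rule sum.cong) auto
  then show ?thesis using assms by simp
qed

lemma sum_prod_set: "(\<Sum>k\<in>A \<times> B. f k) = (\<Sum>a\<in>A. \<Sum>b\<in>B. f (a,b))"
  by (simp add: sum.cartesian_product)

lemma lin_expand:
  assumes lin: "linear_map d1 d2 \<Phi>" and X: "X \<in> carrier_mat d1 d1"
  shows "\<Phi> X = mat d2 d2 (\<lambda>(s,t). \<Sum>i<d1. \<Sum>j<d1. X $$ (i,j) * \<Phi> (Eu d1 i j) $$ (s,t))"
proof -
  have Xe: "X = mat d1 d1 (\<lambda>pq. \<Sum>k\<in>{..<d1} \<times> {..<d1}. X $$ (fst k, snd k) * Eu d1 (fst k) (snd k) $$ pq)"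
    by (rule eq_matI) (use X in \<open>auto simp: Eu_def sum_pairs_delta\<close>)
  have "\<Phi> X = mat d2 d2 (\<lambda>st. \<Sum>k\<in>{..<d1} \<times> {..<d1}. X $$ (fst k, snd k) * \<Phi> (Eu d1 (fst k) (snd k)) $$ st)"
    by (subst Xe, rule lin_sum[OF lin]) auto
  also have "\<dots> = mat d2 d2 (\<lambda>(s,t). \<Sum>i<d1. \<Sum>j<d1. X $$ (i,j) * \<Phi> (Eu d1 i j) $$ (s,t))"
    by (rule eq_matI) (auto simp: sum_prod_set)
  finally show ?thesis .
qed

lemma lin_expand_idx:
  assumes lin: "linear_map d1 d2 \<Phi>" and X: "X \<in> carrier_mat d1 d1" and s: "s < d2" and t: "t < d2"
  shows "\<Phi> X $$ (s,t) = (\<Sum>i<d1. \<Sum>j<d1. X $$ (i,j) * \<Phi> (Eu d1 i j) $$ (s,t))"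
  using lin_expand[OF lin X] s t by (metis (no_types, lifting) case_prod_conv index_mat(1))

lemma sum_list_concat_map: "(\<Sum>x\<leftarrow>concat (map g L). f x) = (\<Sum>p\<leftarrow>L. \<Sum>x\<leftarrow>g p. f x)"
  by (induction L) simp_all

lemma sum_list_mult_left: "(\<Sum>x\<leftarrow>L. (c::'a::comm_ring_1) * f x) = c * (\<Sum>x\<leftarrow>L. f x)"
  by (induction L) (simp_all add: algebra_simps)

lemma sum_list_mono2:
  fixes f g :: "'b \<Rightarrow> real"
  shows "(\<And>x. x \<in> set L \<Longrightarrow> f x \<le> g x) \<Longrightarrow> (\<Sum>x\<leftarrow>L. f x) \<le> (\<Sum>x\<leftarrow>L. g x)"
  by (induction L) (simp_all add: add_mono)

lemma psd_decomp_tr: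
  assumes p: "psd n A"
  shows "decomp n A (Re (mtrace A))"
proof -
  have A: "A \<in> carrier_mat n n" using p unfolding psd_iff by simp
  obtain vs where vs: "\<And>i j. i < n \<Longrightarrow> j < n \<Longrightarrow> A $$ (i,j) = (\<Sum>k<n. vs k i * cnj (vs k j))"
    using psd_decomp[OF p] by blast
  define L where "L = map (\<lambda>k. (1::real, vs k)) [0..<n]"
  have AL: "A $$ (i,j) = dsum L i j" if "i < n" "j < n" for i j
    unfolding vs[OF that] dsum_def L_def by (simp add: o_def sum_list_upt_lessThan)
  have "complex_of_real (dwt n L) = (\<Sum>k<n. \<Sum>i<n. vs k i * cnj (vs k i))"
    unfolding dwt_def L_def by (simp add: o_def sum_list_upt_lessThan nrm_c)
  also have "\<dots> = (\<Sum>i<n. \<Sum>k<n. vs k i * cnj (vs k i))" by (rule sum.swap)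
  also have "\<dots> = mtrace A" unfolding mtrace_def using A vs by simp
  finally have "dwt n L = Re (mtrace A)" by (metis Re_complex_of_real)
  then show ?thesis unfolding decomp_def using A AL by auto
qed

lemma decomp_image:
  assumes lin: "linear_map d1 d2 \<Phi>" and dY: "decomp d1 Y s"
    and img: "\<And>v. decomp d2 (\<Phi> (outer d1 v)) (nrm d1 v)"
  shows "decomp d2 (\<Phi> Y) s"
proof -
  obtain L where Y: "Y \<in> carrier_mat d1 d1" and YL: "\<And>i j. i < d1 \<Longrightarrow> j < d1 \<Longrightarrow> Y $$ (i,j) = dsum L i j"
    and w: "dwt d1 L \<le> s" using dY unfolding decomp_def by blast
  have "\<forall>v. \<exists>L'. (\<forall>i<d2. \<forall>j<d2. \<Phi> (outer d1 v) $$ (i,j) = dsum L' i j) \<and> dwt d2 L' \<le> nrm d1 v"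
    using img unfolding decomp_def by blast
  then obtain G where G1: "\<And>v i j. i < d2 \<Longrightarrow> j < d2 \<Longrightarrow> \<Phi> (outer d1 v) $$ (i,j) = dsum (G v) i j"
    and G2: "\<And>v. dwt d2 (G v) \<le> nrm d1 v" by metis
  define L' where "L' = concat (map (\<lambda>p. map (\<lambda>q. (fst p * fst q, snd q)) (G (snd p))) L)"
  have PY: "\<Phi> Y $$ (s',t) = dsum L' s' t" if st: "s' < d2" "t < d2" for s' t
  proof -
    have "\<Phi> Y $$ (s',t) = (\<Sum>i<d1. \<Sum>j<d1. Y $$ (i,j) * \<Phi> (Eu d1 i j) $$ (s',t))"
      by (rule lin_expand_idx[OF lin Y st])
    also have "\<dots> = (\<Sum>i<d1. \<Sum>j<d1. \<Sum>p\<leftarrow>L. complex_of_real (fst p) * (snd p i * cnj (snd p j) * \<Phi> (Eu d1 i j) $$ (s',t)))"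
      by (intro sum.cong refl) (simp add: YL dsum_def sum_list_mult_left[symmetric] algebra_simps
          flip: sum_list_const_mult)
    also have "\<dots> = (\<Sum>p\<leftarrow>L. complex_of_real (fst p) * (\<Sum>i<d1. \<Sum>j<d1. snd p i * cnj (snd p j) * \<Phi> (Eu d1 i j) $$ (s',t)))"
      by (simp add: sum_sum_list_swap sum_distrib_left)
    also have "\<dots> = (\<Sum>p\<leftarrow>L. complex_of_real (fst p) * \<Phi> (outer d1 (snd p)) $$ (s',t))"
      by (rule arg_cong[where f = sum_list], rule map_cong[OF refl])
         (simp add: lin_expand_idx[OF lin outer_carrier st])
    also have "\<dots> = (\<Sum>p\<leftarrow>L. complex_of_real (fst p) * dsum (G (snd p)) s' t)"
      by (simp add: G1 st)
    also have "\<dots> = dsum L' s' t"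
      unfolding L'_def dsum_def sum_list_concat_map
      by (rule arg_cong[where f = sum_list], rule map_cong[OF refl])
         (simp add: o_def sum_list_mult_left[symmetric] algebra_simps)
    finally show ?thesis .
  qed
  have "dwt d2 L' = (\<Sum>p\<leftarrow>L. \<bar>fst p\<bar> * dwt d2 (G (snd p)))"
    unfolding L'_def dwt_def sum_list_concat_map
    by (rule arg_cong[where f = sum_list], rule map_cong[OF refl])
       (simp add: o_def sum_list_mult_left[symmetric] abs_mult algebra_simps)
  also have "\<dots> \<le> (\<Sum>p\<leftarrow>L. \<bar>fst p\<bar> * nrm d1 (snd p))"
    by (rule sum_list_mono2) (simp add: G2 mult_left_mono)
  also have "\<dots> \<le> s" using w unfolding dwt_def .
  finally have "dwt d2 L' \<le> s" .
  moreover have "\<Phi> Y \<in> carrier_mat d2 d2" using lin_props(1)[OF lin Y] .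
  ultimately show ?thesis unfolding decomp_def using PY by blast
qed

lemma sum_split: fixes a b :: nat shows "(\<Sum>p<a*b. h p) = (\<Sum>i<a. \<Sum>j<b. h (i*b + j))"
proof (induction a)
  case 0 then show ?case by simp
next
  case (Suc a)
  have "(\<Sum>p<Suc a * b. h p) = (\<Sum>p<a*b. h p) + (\<Sum>p\<in>{a*b..<a*b+b}. h p)"
    by (simp add: sum.atLeastLessThan_concat[symmetric] lessThan_atLeast0 add.commute)
  also have "(\<Sum>p\<in>{a*b..<a*b+b}. h p) = (\<Sum>j<b. h (a*b + j))"
    by (simp add: sum.shift_bounds_nat_ivl[where k = "a*b" and m = 0, simplified] lessThan_atLeast0 add.commute)
  finally show ?case using Suc by simp
qed

lemma lt_mult_add: "i < a \<Longrightarrow> j < (b::nat) \<Longrightarrow> i * b + j < a * b"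
proof -
  assume "i < a" "j < b"
  then have "i * b + j < i * b + b" by simp
  also have "\<dots> = Suc i * b" by simp
  also have "\<dots> \<le> a * b" using \<open>i < a\<close> by (metis Suc_leI mult_le_mono1)
  finally show ?thesis .
qed

lemma div_mult_add[simp]: "j < (b::nat) \<Longrightarrow> (i * b + j) div b = i"
  by simp

lemma mod_mult_add[simp]: "j < (b::nat) \<Longrightarrow> (i * b + j) mod b = j"
  by simp

definition emb :: "nat \<Rightarrow> nat \<Rightarrow> nat \<Rightarrow> nat \<Rightarrow> (complex mat \<Rightarrow> complex mat) \<Rightarrow> complex mat \<Rightarrow> complex mat" where
  "emb la lb d1 d2 \<Phi> = lift_left la (d1*lb) (d2*lb) (lift_right d1 d2 lb \<Phi>)"

lemma embed_emb: "embed_channel la lb a1 b1 a2 b2 N = emb la lb (a1*b1) (a2*b2) N"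
  unfolding embed_channel_def emb_def ..

definition rr :: "nat \<Rightarrow> nat \<Rightarrow> nat \<Rightarrow> nat" where "rr d2 lb p = p div (d2*lb)"
definition ss :: "nat \<Rightarrow> nat \<Rightarrow> nat \<Rightarrow> nat" where "ss d2 lb p = (p mod (d2*lb)) div lb"
definition tt :: "nat \<Rightarrow> nat \<Rightarrow> nat" where "tt lb p = p mod lb"
definition ix :: "nat \<Rightarrow> nat \<Rightarrow> nat \<Rightarrow> nat \<Rightarrow> nat \<Rightarrow> nat" where "ix d1 lb r i t = r*(d1*lb) + (i*lb + t)"

lemma emb_carrier[simp]: "emb la lb d1 d2 \<Phi> X \<in> carrier_mat (la*(d2*lb)) (la*(d2*lb))"
  unfolding emb_def lift_left_def by simp

lemma emb_dims[simp]: "dim_row (emb la lb d1 d2 \<Phi> X) = la*(d2*lb)" "dim_col (emb la lb d1 d2 \<Phi> X) = la*(d2*lb)"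
  unfolding emb_def lift_left_def by simp_all

definition blk :: "nat \<Rightarrow> nat \<Rightarrow> nat \<Rightarrow> complex mat \<Rightarrow> nat \<Rightarrow> nat \<Rightarrow> complex mat" where
  "blk d1 d2 lb X p q = mat d1 d1 (\<lambda>(i,j). X $$ (ix d1 lb (rr d2 lb p) i (tt lb p), ix d1 lb (rr d2 lb q) j (tt lb q)))"

lemma blk_carrier[simp]: "blk d1 d2 lb X p q \<in> carrier_mat d1 d1" unfolding blk_def by simp

lemma emb_idx:
  assumes p: "p < la*(d2*lb)" and q: "q < la*(d2*lb)"
  shows "emb la lb d1 d2 \<Phi> X $$ (p,q) = \<Phi> (blk d1 d2 lb X p q) $$ (ss d2 lb p, ss d2 lb q)"
proof -
  have pos: "0 < d2*lb" using p by (cases "d2*lb = 0") auto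
  then have lbpos: "0 < lb" by simp
  have pm: "p mod (d2*lb) < d2*lb" "q mod (d2*lb) < d2*lb" using pos by simp_all
  have mm: "(p mod (d2*lb)) mod lb = p mod lb" "(q mod (d2*lb)) mod lb = q mod lb"
    by (simp_all add: mod_mod_cancel)
  have inner: "mat d1 d1 (\<lambda>(i,j). mat (d1*lb) (d1*lb) (\<lambda>(i',j'). X $$ (p div (d2*lb) * (d1*lb) + i', q div (d2*lb) * (d1*lb) + j'))
        $$ (i * lb + p mod (d2*lb) mod lb, j * lb + q mod (d2*lb) mod lb)) = blk d1 d2 lb X p q"
  proof (rule eq_matI)
    fix i j assume "i < dim_row (blk d1 d2 lb X p q)" "j < dim_col (blk d1 d2 lb X p q)"
    then have i: "i < d1" and j: "j < d1" unfolding blk_def by simp_all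
    have b: "i * lb + p mod lb < d1*lb" "j * lb + q mod lb < d1*lb"
      using lt_mult_add[OF i, of "p mod lb" lb] lt_mult_add[OF j, of "q mod lb" lb] lbpos by simp_all
    show "mat d1 d1 (\<lambda>(i,j). mat (d1*lb) (d1*lb) (\<lambda>(i',j'). X $$ (p div (d2*lb) * (d1*lb) + i', q div (d2*lb) * (d1*lb) + j'))
        $$ (i * lb + p mod (d2*lb) mod lb, j * lb + q mod (d2*lb) mod lb)) $$ (i,j) = blk d1 d2 lb X p q $$ (i,j)"
      unfolding mm using i j b by (simp add: blk_def ix_def rr_def tt_def)
  qed (simp_all add: blk_def)
  show ?thesis
    unfolding emb_def lift_left_def using p q pm
    by (simp add: lift_right_def inner ss_def)
qed

lemma emb_lin_idx:
  assumes lin: "linear_map d1 d2 \<Phi>" and p: "p < la*(d2*lb)" and q: "q < la*(d2*lb)"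
  shows "emb la lb d1 d2 \<Phi> X $$ (p,q) = (\<Sum>i<d1. \<Sum>j<d1.
     X $$ (ix d1 lb (rr d2 lb p) i (tt lb p), ix d1 lb (rr d2 lb q) j (tt lb q)) * \<Phi> (Eu d1 i j) $$ (ss d2 lb p, ss d2 lb q))"
proof -
  have pos: "0 < d2*lb" using p by (cases "d2*lb = 0") auto
  have s: "ss d2 lb p < d2" "ss d2 lb q < d2" unfolding ss_def using pos
    by (simp_all add: less_mult_imp_div_less)
  show ?thesis unfolding emb_idx[OF p q] lin_expand_idx[OF lin blk_carrier s]
    by (intro sum.cong refl) (simp add: blk_def)
qed

lemma psd_msum:
  assumes fin: "finite I" and M: "\<And>k. k \<in> I \<Longrightarrow> psd d (M k)"
  shows "psd d (mat d d (\<lambda>st. \<Sum>k\<in>I. M k $$ st))"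
  unfolding psd_iff
proof (intro conjI allI)
  show "mat d d (\<lambda>st. \<Sum>k\<in>I. M k $$ st) \<in> carrier_mat d d" by simp
  fix f :: "nat \<Rightarrow> complex"
  have "qf d (mat d d (\<lambda>st. \<Sum>k\<in>I. M k $$ st)) f = (\<Sum>i<d. \<Sum>j<d. \<Sum>k\<in>I. cnj (f i) * M k $$ (i,j) * f j)"
    unfolding qf_def by (intro sum.cong refl) (simp add: sum_distrib_left sum_distrib_right)
  also have "\<dots> = (\<Sum>k\<in>I. qf d (M k) f)" unfolding qf_def by (rule triple_swap)
  finally show "0 \<le> qf d (mat d d (\<lambda>st. \<Sum>k\<in>I. M k $$ st)) f"
    using M unfolding psd_iff by (simp add: sum_nonneg)
qed

lemma lin_psd_from_outer:
  assumes lin: "linear_map d1 d2 \<Psi>" and po: "\<And>x. psd d2 (\<Psi> (outer d1 x))" and X: "psd d1 X"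
  shows "psd d2 (\<Psi> X)"
proof -
  obtain vs where vs: "\<And>i j. i < d1 \<Longrightarrow> j < d1 \<Longrightarrow> X $$ (i,j) = (\<Sum>k<d1. vs k i * cnj (vs k j))"
    using psd_decomp[OF X] by blast
  have Xc: "X \<in> carrier_mat d1 d1" using X unfolding psd_iff by simp
  have Xe: "X = mat d1 d1 (\<lambda>pq. \<Sum>k<d1. 1 * outer d1 (vs k) $$ pq)"
    by (rule eq_matI) (use Xc vs in auto)
  have "\<Psi> X = mat d2 d2 (\<lambda>st. \<Sum>k<d1. 1 * \<Psi> (outer d1 (vs k)) $$ st)"
    by (subst Xe, rule lin_sum[OF lin]) auto
  also have "psd d2 \<dots>" using psd_msum[of "{..<d1}" d2 "\<lambda>k. \<Psi> (outer d1 (vs k))"] po by simp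
  finally show ?thesis .
qed

definition bf :: "nat \<Rightarrow> complex mat \<Rightarrow> (nat \<Rightarrow> complex) \<Rightarrow> (nat \<Rightarrow> complex) \<Rightarrow> complex" where
  "bf d C u v = (\<Sum>a<d. \<Sum>b<d. cnj (u a) * C $$ (a,b) * v b)"

lemma quad_swap: "(\<Sum>a\<in>A. \<Sum>b\<in>B. \<Sum>p\<in>P. \<Sum>q\<in>Q. f a b p q) = (\<Sum>p\<in>P. \<Sum>q\<in>Q. \<Sum>a\<in>A. \<Sum>b\<in>B. f a b p q)"
proof -
  have "(\<Sum>a\<in>A. \<Sum>b\<in>B. \<Sum>p\<in>P. \<Sum>q\<in>Q. f a b p q) = (\<Sum>a\<in>A. \<Sum>p\<in>P. \<Sum>b\<in>B. \<Sum>q\<in>Q. f a b p q)"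
    by (intro sum.cong refl) (rule sum.swap)
  also have "\<dots> = (\<Sum>p\<in>P. \<Sum>a\<in>A. \<Sum>b\<in>B. \<Sum>q\<in>Q. f a b p q)" by (rule sum.swap)
  also have "\<dots> = (\<Sum>p\<in>P. \<Sum>a\<in>A. \<Sum>q\<in>Q. \<Sum>b\<in>B. f a b p q)"
    by (intro sum.cong refl) (rule sum.swap)
  also have "\<dots> = (\<Sum>p\<in>P. \<Sum>q\<in>Q. \<Sum>a\<in>A. \<Sum>b\<in>B. f a b p q)"
    by (intro sum.cong refl) (rule sum.swap)
  finally show ?thesis .
qed

lemma qf_sum_vec:
  "qf d C (\<lambda>a. \<Sum>q\<in>Q. y q a) = (\<Sum>p\<in>Q. \<Sum>q\<in>Q. bf d C (y p) (y q))"
proof -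
  have "qf d C (\<lambda>a. \<Sum>q\<in>Q. y q a) = (\<Sum>a<d. \<Sum>b<d. \<Sum>p\<in>Q. \<Sum>q\<in>Q. cnj (y p a) * C $$ (a,b) * y q b)"
  proof -
    have pw: "cnj (\<Sum>p\<in>Q. y p a) * C $$ (a,b) * (\<Sum>q\<in>Q. y q b) = (\<Sum>p\<in>Q. \<Sum>q\<in>Q. cnj (y p a) * C $$ (a,b) * y q b)" for a b
    proof -
      have "cnj (\<Sum>p\<in>Q. y p a) * C $$ (a,b) = (\<Sum>p\<in>Q. cnj (y p a) * C $$ (a,b))"
        by (simp add: cnj_sum sum_distrib_right)
      then show ?thesis by (simp add: sum_product)
    qed
    show ?thesis unfolding qf_def pw ..
  qed
  also have "\<dots> = (\<Sum>p\<in>Q. \<Sum>q\<in>Q. bf d C (y p) (y q))" unfolding bf_def by (rule quad_swap)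
  finally show ?thesis .
qed

lemma sum_collapse:
  fixes d1 d2 :: nat
  assumes a: "a < d2"
  shows "(\<Sum>\<alpha><d1*d2. (if \<alpha> mod d2 = a then F (\<alpha> div d2) \<alpha> else 0)) = (\<Sum>i<d1. F i (i*d2 + a))"
proof -
  have "(\<Sum>\<alpha><d1*d2. (if \<alpha> mod d2 = a then F (\<alpha> div d2) \<alpha> else 0)) =
     (\<Sum>i<d1. \<Sum>a'<d2. (if (i*d2+a') mod d2 = a then F ((i*d2+a') div d2) (i*d2+a') else 0))"
    by (rule sum_split)
  also have "\<dots> = (\<Sum>i<d1. \<Sum>a'<d2. (if a' = a then F i (i*d2+a') else 0))"
    by (intro sum.cong refl) simp
  also have "\<dots> = (\<Sum>i<d1. F i (i*d2 + a))" using a by simp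
  finally show ?thesis .
qed

lemma bf_collapse:
  fixes d1 d2 :: nat
  assumes a: "a < d2" and b: "b < d2"
  shows "bf (d1*d2) C (\<lambda>\<alpha>. if \<alpha> mod d2 = a then f (\<alpha> div d2) else 0) (\<lambda>\<beta>. if \<beta> mod d2 = b then h (\<beta> div d2) else 0)
    = (\<Sum>i<d1. \<Sum>j<d1. cnj (f i) * C $$ (i*d2+a, j*d2+b) * h j)"
proof -
  have inner: "(\<Sum>\<beta><d1*d2. cnj (if \<alpha> mod d2 = a then f (\<alpha> div d2) else 0) * C $$ (\<alpha>,\<beta>) *
       (if \<beta> mod d2 = b then h (\<beta> div d2) else 0)) =
     (if \<alpha> mod d2 = a then (\<Sum>j<d1. cnj (f (\<alpha> div d2)) * C $$ (\<alpha>, j*d2+b) * h j) else 0)" for \<alpha>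
  proof -
    have "(\<Sum>\<beta><d1*d2. cnj (if \<alpha> mod d2 = a then f (\<alpha> div d2) else 0) * C $$ (\<alpha>,\<beta>) *
       (if \<beta> mod d2 = b then h (\<beta> div d2) else 0)) =
       (\<Sum>\<beta><d1*d2. (if \<beta> mod d2 = b then (\<lambda>j \<beta>. cnj (if \<alpha> mod d2 = a then f (\<alpha> div d2) else 0) * C $$ (\<alpha>,\<beta>) * h j) (\<beta> div d2) \<beta> else 0))"
      by (intro sum.cong refl) simp
    also have "\<dots> = (\<Sum>j<d1. cnj (if \<alpha> mod d2 = a then f (\<alpha> div d2) else 0) * C $$ (\<alpha>, j*d2+b) * h j)"
      by (rule sum_collapse[OF b])
    finally show ?thesis by simp
  qed
  have "bf (d1*d2) C (\<lambda>\<alpha>. if \<alpha> mod d2 = a then f (\<alpha> div d2) else 0) (\<lambda>\<beta>. if \<beta> mod d2 = b then h (\<beta> div d2) else 0)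
    = (\<Sum>\<alpha><d1*d2. (if \<alpha> mod d2 = a then (\<lambda>i \<alpha>. \<Sum>j<d1. cnj (f i) * C $$ (\<alpha>, j*d2+b) * h j) (\<alpha> div d2) \<alpha> else 0))"
    unfolding bf_def inner by simp
  also have "\<dots> = (\<Sum>i<d1. \<Sum>j<d1. cnj (f i) * C $$ (i*d2+a, j*d2+b) * h j)"
    by (rule sum_collapse[OF a])
  finally show ?thesis .
qed

definition choi :: "nat \<Rightarrow> nat \<Rightarrow> (complex mat \<Rightarrow> complex mat) \<Rightarrow> complex mat" where
  "choi d1 d2 \<Phi> = mat (d1*d2) (d1*d2) (\<lambda>(\<alpha>,\<beta>). \<Phi> (Eu d1 (\<alpha> div d2) (\<beta> div d2)) $$ (\<alpha> mod d2, \<beta> mod d2))"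

lemma choi_idx:
  assumes "i < d1" "j < d1" "a < d2" "b < d2"
  shows "choi d1 d2 \<Phi> $$ (i*d2+a, j*d2+b) = \<Phi> (Eu d1 i j) $$ (a,b)"
  unfolding choi_def using assms lt_mult_add[of i d1 a d2] lt_mult_add[of j d1 b d2] by simp

lemma pos_of_lt: "p < la*(d2*lb) \<Longrightarrow> 0 < la \<and> 0 < d2 \<and> 0 < (lb::nat)"
  by (cases "la = 0"; cases "d2 = 0"; cases "lb = 0") auto

lemma rr_lt: "p < la*(d2*lb) \<Longrightarrow> rr d2 lb p < la"
  unfolding rr_def by (simp add: less_mult_imp_div_less mult.commute)

lemma ss_lt: "p < la*(d2*lb) \<Longrightarrow> ss d2 lb p < d2"
  unfolding ss_def using pos_of_lt[of p la d2 lb]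
  by (simp add: less_mult_imp_div_less)

lemma tt_lt: "p < la*(d2*lb) \<Longrightarrow> tt lb p < lb"
  unfolding tt_def using pos_of_lt[of p la d2 lb] by simp

lemma ix_lt: "r < la \<Longrightarrow> i < d1 \<Longrightarrow> t < lb \<Longrightarrow> ix d1 lb r i t < la*(d1*lb)"
  unfolding ix_def using lt_mult_add[of r la "i*lb+t" "d1*lb"] lt_mult_add[of i d1 t lb] by simp

lemma emb_linear:
  assumes lin: "linear_map d1 d2 \<Phi>"
  shows "linear_map (la*(d1*lb)) (la*(d2*lb)) (emb la lb d1 d2 \<Phi>)"
  unfolding linear_map_def
proof (intro conjI ballI allI)
  fix X Y :: "complex mat" assume X: "X \<in> carrier_mat (la*(d1*lb)) (la*(d1*lb))" and Y: "Y \<in> carrier_mat (la*(d1*lb)) (la*(d1*lb))"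
  show "emb la lb d1 d2 \<Phi> (X + Y) = emb la lb d1 d2 \<Phi> X + emb la lb d1 d2 \<Phi> Y"
  proof (rule eq_matI)
    fix p q assume "p < dim_row (emb la lb d1 d2 \<Phi> X + emb la lb d1 d2 \<Phi> Y)"
      "q < dim_col (emb la lb d1 d2 \<Phi> X + emb la lb d1 d2 \<Phi> Y)"
    then have p: "p < la*(d2*lb)" and q: "q < la*(d2*lb)" by simp_all
    have b: "ix d1 lb (rr d2 lb p) i (tt lb p) < la*(d1*lb)" "ix d1 lb (rr d2 lb q) j (tt lb q) < la*(d1*lb)"
      if "i < d1" "j < d1" for i j
      using ix_lt[OF rr_lt[OF p] that(1) tt_lt[OF p]] ix_lt[OF rr_lt[OF q] that(2) tt_lt[OF q]] by simp_all
    show "emb la lb d1 d2 \<Phi> (X + Y) $$ (p,q) = (emb la lb d1 d2 \<Phi> X + emb la lb d1 d2 \<Phi> Y) $$ (p,q)"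
      unfolding index_add_mat(1)[OF p[folded emb_dims(1)[of la lb d1 d2 \<Phi> Y]] q[folded emb_dims(2)[of la lb d1 d2 \<Phi> Y]]]
        emb_lin_idx[OF lin p q]
      using X Y b by (simp add: sum.distrib[symmetric] algebra_simps)
  qed simp_all
next
  fix X :: "complex mat" and c :: complex assume X: "X \<in> carrier_mat (la*(d1*lb)) (la*(d1*lb))"
  show "emb la lb d1 d2 \<Phi> (c \<cdot>\<^sub>m X) = c \<cdot>\<^sub>m emb la lb d1 d2 \<Phi> X"
  proof (rule eq_matI)
    fix p q assume "p < dim_row (c \<cdot>\<^sub>m emb la lb d1 d2 \<Phi> X)" "q < dim_col (c \<cdot>\<^sub>m emb la lb d1 d2 \<Phi> X)"
    then have p: "p < la*(d2*lb)" and q: "q < la*(d2*lb)" by simp_all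
    have b: "ix d1 lb (rr d2 lb p) i (tt lb p) < la*(d1*lb)" "ix d1 lb (rr d2 lb q) j (tt lb q) < la*(d1*lb)"
      if "i < d1" "j < d1" for i j
      using ix_lt[OF rr_lt[OF p] that(1) tt_lt[OF p]] ix_lt[OF rr_lt[OF q] that(2) tt_lt[OF q]] by simp_all
    show "emb la lb d1 d2 \<Phi> (c \<cdot>\<^sub>m X) $$ (p,q) = (c \<cdot>\<^sub>m emb la lb d1 d2 \<Phi> X) $$ (p,q)"
      unfolding index_smult_mat(1)[OF p[folded emb_dims(1)[of la lb d1 d2 \<Phi> X]] q[folded emb_dims(2)[of la lb d1 d2 \<Phi> X]]]
        emb_lin_idx[OF lin p q]
      using X b by (simp add: sum_distrib_left algebra_simps)
  qed simp_all
qed simp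

lemma emb_psd_outer:
  assumes lin: "linear_map d1 d2 \<Phi>" and C: "psd (d1*d2) (choi d1 d2 \<Phi>)"
  shows "psd (la*(d2*lb)) (emb la lb d1 d2 \<Phi> (outer (la*(d1*lb)) x))"
  unfolding psd_iff
proof (intro conjI allI)
  show "emb la lb d1 d2 \<Phi> (outer (la*(d1*lb)) x) \<in> carrier_mat (la*(d2*lb)) (la*(d2*lb))" by simp
  fix g :: "nat \<Rightarrow> complex"
  let ?N = "la*(d2*lb)"
  let ?A = "\<lambda>p i. ix d1 lb (rr d2 lb p) i (tt lb p)"
  define y where "y = (\<lambda>p \<alpha>. if \<alpha> mod d2 = ss d2 lb p then (\<lambda>i. cnj (x (?A p i)) * g p) (\<alpha> div d2) else 0)"
  have pw: "cnj (g p) * emb la lb d1 d2 \<Phi> (outer (la*(d1*lb)) x) $$ (p,q) * g q = bf (d1*d2) (choi d1 d2 \<Phi>) (y p) (y q)"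
    if p: "p < ?N" and q: "q < ?N" for p q
  proof -
    have b: "?A p i < la*(d1*lb)" "?A q j < la*(d1*lb)" if "i < d1" "j < d1" for i j
      using ix_lt[OF rr_lt[OF p] that(1) tt_lt[OF p]] ix_lt[OF rr_lt[OF q] that(2) tt_lt[OF q]] by simp_all
    have "bf (d1*d2) (choi d1 d2 \<Phi>) (y p) (y q) = (\<Sum>i<d1. \<Sum>j<d1. cnj (cnj (x (?A p i)) * g p) *
         choi d1 d2 \<Phi> $$ (i*d2 + ss d2 lb p, j*d2 + ss d2 lb q) * (cnj (x (?A q j)) * g q))"
      unfolding y_def by (rule bf_collapse[OF ss_lt[OF p] ss_lt[OF q]])
    also have "\<dots> = (\<Sum>i<d1. \<Sum>j<d1. cnj (g p) * (x (?A p i) * cnj (x (?A q j)) * \<Phi> (Eu d1 i j) $$ (ss d2 lb p, ss d2 lb q)) * g q)"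
      by (intro sum.cong refl) (simp add: choi_idx ss_lt[OF p] ss_lt[OF q] algebra_simps)
    also have "\<dots> = cnj (g p) * emb la lb d1 d2 \<Phi> (outer (la*(d1*lb)) x) $$ (p,q) * g q"
      unfolding emb_lin_idx[OF lin p q] using b by (simp add: sum_distrib_left sum_distrib_right)
    finally show ?thesis ..
  qed
  have "qf ?N (emb la lb d1 d2 \<Phi> (outer (la*(d1*lb)) x)) g = (\<Sum>p<?N. \<Sum>q<?N. bf (d1*d2) (choi d1 d2 \<Phi>) (y p) (y q))"
    unfolding qf_def by (intro sum.cong refl) (simp add: pw)
  also have "\<dots> = qf (d1*d2) (choi d1 d2 \<Phi>) (\<lambda>a. \<Sum>q<?N. y q a)" by (rule qf_sum_vec[symmetric])
  finally show "0 \<le> qf ?N (emb la lb d1 d2 \<Phi> (outer (la*(d1*lb)) x)) g"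
    using C unfolding psd_iff by simp
qed

lemma emb_psd:
  assumes lin: "linear_map d1 d2 \<Phi>" and C: "psd (d1*d2) (choi d1 d2 \<Phi>)" and X: "psd (la*(d1*lb)) X"
  shows "psd (la*(d2*lb)) (emb la lb d1 d2 \<Phi> X)"
  by (rule lin_psd_from_outer[OF emb_linear[OF lin] emb_psd_outer[OF lin C] X])

lemma sum_delta_lt: "i < (n::nat) \<Longrightarrow> (\<Sum>j<n. if i = j then f j else 0) = f i"
proof -
  assume i: "i < n"
  have "(\<Sum>j<n. if i = j then f j else 0) = (\<Sum>j<n. if j = i then f i else 0)"
    by (rule sum.cong) auto
  also have "\<dots> = f i" using i by simp
  finally show ?thesis .
qed

lemma orth_rows_expand:
  fixes n :: nat
  assumes U1: "\<And>i j. i < n \<Longrightarrow> j < n \<Longrightarrow> (\<Sum>m<n. U i m * cnj (U j m)) = (if i = j then 1 else 0)"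
  shows "(\<Sum>m<n. (\<Sum>i<n. y i * U i m) * cnj (\<Sum>j<n. y j * U j m)) = (\<Sum>i<n. y i * cnj (y i))"
proof -
  have "(\<Sum>m<n. (\<Sum>i<n. y i * U i m) * cnj (\<Sum>j<n. y j * U j m)) =
        (\<Sum>i<n. \<Sum>j<n. \<Sum>m<n. y i * U i m * cnj (y j * U j m))"
    by (rule sum_sq_expand)
  also have "\<dots> = (\<Sum>i<n. \<Sum>j<n. y i * cnj (y j) * (\<Sum>m<n. U i m * cnj (U j m)))"
    by (intro sum.cong refl) (simp add: sum_distrib_left algebra_simps)
  also have "\<dots> = (\<Sum>i<n. \<Sum>j<n. if j = i then y i * cnj (y i) else 0)"
    by (intro sum.cong refl) (auto simp: U1)
  also have "\<dots> = (\<Sum>i<n. y i * cnj (y i))" by (rule sum.cong[OF refl]) simp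
  finally show ?thesis .
qed

lemma schmidt:
  fixes x :: "nat \<Rightarrow> nat \<Rightarrow> complex" and R d :: nat
  shows "\<exists>V W. (\<forall>\<rho><R. \<forall>i<d. x \<rho> i = (\<Sum>m<d. V \<rho> m * W m i)) \<and>
     (\<Sum>m<d. \<Sum>i<d. W m i * cnj (W m i)) = (\<Sum>\<rho><R. \<Sum>i<d. x \<rho> i * cnj (x \<rho> i)) \<and>
     (\<forall>z. Re (\<Sum>\<rho><R. (\<Sum>m<d. V \<rho> m * z m) * cnj (\<Sum>m<d. V \<rho> m * z m)) \<le> Re (\<Sum>m<d. z m * cnj (z m)))"
proof -
  define H where "H = mat d d (\<lambda>(i,j). \<Sum>\<rho><R. cnj (x \<rho> i) * x \<rho> j)"
  have Hc: "H \<in> carrier_mat d d" unfolding H_def by simp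
  have hH: "adj H = H"
    by (rule eq_matI) (simp_all add: H_def cnj_sum mult.commute)
  obtain U \<mu> where H0: "(\<forall>i<d. \<forall>j<d. (\<Sum>k<d. U i k * cnj (U j k)) = (if i = j then 1 else 0)) \<and>
     (\<forall>k<d. \<forall>l<d. (\<Sum>i<d. cnj (U i k) * U i l) = (if k = l then 1 else 0)) \<and>
     (\<forall>i<d. \<forall>j<d. H $$ (i,j) = (\<Sum>k<d. complex_of_real (\<mu> k) * U i k * cnj (U j k)))"
    using spectral_entry[OF Hc hH] by (elim exE)
  have U1: "\<And>i j. i<d \<Longrightarrow> j<d \<Longrightarrow> (\<Sum>k<d. U i k * cnj (U j k)) = (if i = j then 1 else 0)" using H0 by simp
  have U2: "\<And>k l. k<d \<Longrightarrow> l<d \<Longrightarrow> (\<Sum>i<d. cnj (U i k) * U i l) = (if k = l then 1 else 0)" using H0 by simp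
  have Hd: "\<And>i j. i<d \<Longrightarrow> j<d \<Longrightarrow> (\<Sum>\<rho><R. cnj (x \<rho> i) * x \<rho> j) = (\<Sum>k<d. complex_of_real (\<mu> k) * U i k * cnj (U j k))"
    using H0 unfolding H_def by simp
  define G where "G = (\<lambda>\<rho> m. \<Sum>i<d. x \<rho> i * U i m)"
  have GG: "(\<Sum>\<rho><R. cnj (G \<rho> m) * G \<rho> m') = (if m = m' then complex_of_real (\<mu> m) else 0)"
    if m: "m < d" and m': "m' < d" for m m'
  proof -
    have "(\<Sum>\<rho><R. cnj (G \<rho> m) * G \<rho> m') = (\<Sum>\<rho><R. \<Sum>i<d. \<Sum>j<d. cnj (U i m) * (cnj (x \<rho> i) * x \<rho> j) * U j m')"
    proof (rule sum.cong[OF refl])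
      fix \<rho>
      have "cnj (G \<rho> m) * G \<rho> m' = (\<Sum>i<d. cnj (x \<rho> i * U i m)) * (\<Sum>j<d. x \<rho> j * U j m')"
        unfolding G_def cnj_sum ..
      also have "\<dots> = (\<Sum>i<d. \<Sum>j<d. cnj (x \<rho> i * U i m) * (x \<rho> j * U j m'))" by (rule sum_product)
      also have "\<dots> = (\<Sum>i<d. \<Sum>j<d. cnj (U i m) * (cnj (x \<rho> i) * x \<rho> j) * U j m')"
        by (intro sum.cong refl) (simp add: algebra_simps)
      finally show "cnj (G \<rho> m) * G \<rho> m' = \<dots>" .
    qed
    also have "\<dots> = (\<Sum>i<d. \<Sum>j<d. \<Sum>\<rho><R. cnj (U i m) * (cnj (x \<rho> i) * x \<rho> j) * U j m')"
      by (rule triple_swap[symmetric])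
    also have "\<dots> = (\<Sum>i<d. \<Sum>j<d. cnj (U i m) * (\<Sum>k<d. complex_of_real (\<mu> k) * U i k * cnj (U j k)) * U j m')"
      by (intro sum.cong refl) (simp add: Hd[symmetric] sum_distrib_left sum_distrib_right)
    also have "\<dots> = (\<Sum>i<d. \<Sum>j<d. \<Sum>k<d. complex_of_real (\<mu> k) * (cnj (U i m) * U i k) * (cnj (U j k) * U j m'))"
      by (intro sum.cong refl) (simp add: sum_distrib_left sum_distrib_right algebra_simps)
    also have "\<dots> = (\<Sum>k<d. \<Sum>i<d. \<Sum>j<d. complex_of_real (\<mu> k) * (cnj (U i m) * U i k) * (cnj (U j k) * U j m'))"
      by (rule triple_swap)
    also have "\<dots> = (\<Sum>k<d. complex_of_real (\<mu> k) * (\<Sum>i<d. cnj (U i m) * U i k) * (\<Sum>j<d. cnj (U j k) * U j m'))"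
      by (intro sum.cong refl) (rule sum_prod3)
    also have "\<dots> = (\<Sum>k<d. if m = m' then (if k = m then complex_of_real (\<mu> k) else 0) else 0)"
      by (intro sum.cong refl) (auto simp: U2 m m')
    also have "\<dots> = (if m = m' then complex_of_real (\<mu> m) else 0)"
      using m by (cases "m = m'") (simp_all add: sum.delta)
    finally show ?thesis .
  qed
  have mu: "\<mu> m = (\<Sum>\<rho><R. (cmod (G \<rho> m))\<^sup>2)" if m: "m < d" for m
  proof -
    have "complex_of_real (\<Sum>\<rho><R. (cmod (G \<rho> m))\<^sup>2) = (\<Sum>\<rho><R. cnj (G \<rho> m) * G \<rho> m)"
      unfolding of_real_sum by (intro sum.cong refl) (metis cmod_sq_c mult.commute)
    also have "\<dots> = complex_of_real (\<mu> m)" using GG[OF m m] by simp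
    finally show ?thesis by (metis of_real_eq_iff)
  qed
  have mu0: "\<mu> m \<ge> 0" if "m < d" for m unfolding mu[OF that] by (simp add: sum_nonneg)
  have G0: "G \<rho> m = 0" if m: "m < d" and \<rho>: "\<rho> < R" and z: "\<mu> m = 0" for \<rho> m
  proof -
    have "\<forall>\<rho>'\<in>{..<R}. (cmod (G \<rho>' m))\<^sup>2 = 0"
      using z unfolding mu[OF m] by (subst sum_nonneg_eq_0_iff[symmetric]) auto
    then show ?thesis using \<rho> by simp
  qed
  define V where "V = (\<lambda>\<rho> m. G \<rho> m / complex_of_real (sqrt (\<mu> m)))"
  define W where "W = (\<lambda>m i. complex_of_real (sqrt (\<mu> m)) * cnj (U i m))"
  have a: "x \<rho> i = (\<Sum>m<d. V \<rho> m * W m i)" if \<rho>: "\<rho> < R" and i: "i < d" for \<rho> i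
  proof -
    have "(\<Sum>m<d. V \<rho> m * W m i) = (\<Sum>m<d. G \<rho> m * cnj (U i m))"
    proof (rule sum.cong[OF refl])
      fix m assume "m \<in> {..<d}"
      then have m: "m < d" by simp
      show "V \<rho> m * W m i = G \<rho> m * cnj (U i m)"
      proof (cases "\<mu> m = 0")
        case True then show ?thesis unfolding V_def W_def using G0[OF m \<rho>] by simp
      next
        case False
        then have "sqrt (\<mu> m) \<noteq> 0" using mu0[OF m] by simp
        then show ?thesis unfolding V_def W_def by (simp add: field_simps)
      qed
    qed
    also have "\<dots> = (\<Sum>j<d. x \<rho> j * (\<Sum>m<d. U j m * cnj (U i m)))"
    proof -
      have "(\<Sum>m<d. G \<rho> m * cnj (U i m)) = (\<Sum>m<d. \<Sum>j<d. x \<rho> j * (U j m * cnj (U i m)))"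
        unfolding G_def sum_distrib_right by (intro sum.cong refl) (simp add: algebra_simps)
      also have "\<dots> = (\<Sum>j<d. \<Sum>m<d. x \<rho> j * (U j m * cnj (U i m)))" by (rule sum.swap)
      also have "\<dots> = (\<Sum>j<d. x \<rho> j * (\<Sum>m<d. U j m * cnj (U i m)))"
        by (intro sum.cong refl) (simp add: sum_distrib_left)
      finally show ?thesis .
    qed
    also have "\<dots> = (\<Sum>j<d. if j = i then x \<rho> j else 0)"
      by (intro sum.cong refl) (simp add: U1 i)
    also have "\<dots> = x \<rho> i" using i by simp
    finally show ?thesis ..
  qed
  have b: "(\<Sum>m<d. \<Sum>i<d. W m i * cnj (W m i)) = (\<Sum>\<rho><R. \<Sum>i<d. x \<rho> i * cnj (x \<rho> i))"
  proof -
    have "(\<Sum>m<d. \<Sum>i<d. W m i * cnj (W m i)) = (\<Sum>m<d. complex_of_real (\<mu> m) * (\<Sum>i<d. cnj (U i m) * U i m))"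
      unfolding W_def by (intro sum.cong refl) (simp add: sum_distrib_left algebra_simps mu0 flip: of_real_mult)
    also have "\<dots> = (\<Sum>m<d. complex_of_real (\<mu> m))" by (intro sum.cong refl) (simp add: U2)
    also have "\<dots> = (\<Sum>m<d. \<Sum>\<rho><R. cnj (G \<rho> m) * G \<rho> m)" by (intro sum.cong refl) (simp add: GG)
    also have "\<dots> = (\<Sum>\<rho><R. \<Sum>m<d. G \<rho> m * cnj (G \<rho> m))" by (subst sum.swap) (simp add: mult.commute)
    also have "\<dots> = (\<Sum>\<rho><R. \<Sum>i<d. x \<rho> i * cnj (x \<rho> i))"
      unfolding G_def by (rule sum.cong[OF refl], rule orth_rows_expand[OF U1])
    finally show ?thesis .
  qed
  have c: "Re (\<Sum>\<rho><R. (\<Sum>m<d. V \<rho> m * z m) * cnj (\<Sum>m<d. V \<rho> m * z m)) \<le> Re (\<Sum>m<d. z m * cnj (z m))" for z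
  proof -
    have VV: "(\<Sum>\<rho><R. V \<rho> m * cnj (V \<rho> m')) = (if m = m' \<and> \<mu> m \<noteq> 0 then 1 else 0)" if m: "m < d" and m': "m' < d" for m m'
    proof -
      have "(\<Sum>\<rho><R. V \<rho> m * cnj (V \<rho> m')) = cnj (\<Sum>\<rho><R. cnj (G \<rho> m) * G \<rho> m') / (complex_of_real (sqrt (\<mu> m)) * complex_of_real (sqrt (\<mu> m')))"
        unfolding V_def by (simp add: cnj_sum sum_divide_distrib algebra_simps)
      also have "\<dots> = (if m = m' \<and> \<mu> m \<noteq> 0 then 1 else 0)"
      proof -
        have GGc: "(\<Sum>\<rho><R. G \<rho> m * cnj (G \<rho> m)) = complex_of_real (\<mu> m)"
          using GG[OF m m] by (simp add: mult.commute)
        show ?thesis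
          using mu0[OF m] mu0[OF m'] GGc by (cases "m = m'") (simp_all add: GG[OF m m'] flip: of_real_mult)
      qed
      finally show ?thesis .
    qed
    have "(\<Sum>\<rho><R. (\<Sum>m<d. V \<rho> m * z m) * cnj (\<Sum>m<d. V \<rho> m * z m)) =
        (\<Sum>m<d. \<Sum>m'<d. \<Sum>\<rho><R. V \<rho> m * z m * cnj (V \<rho> m' * z m'))"
      by (rule sum_sq_expand)
    also have "\<dots> = (\<Sum>m<d. \<Sum>m'<d. z m * cnj (z m') * (\<Sum>\<rho><R. V \<rho> m * cnj (V \<rho> m')))"
      by (intro sum.cong refl) (simp add: sum_distrib_left algebra_simps)
    also have "\<dots> = (\<Sum>m<d. \<Sum>m'<d. if m' = m then (if \<mu> m \<noteq> 0 then z m * cnj (z m) else 0) else 0)"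
      by (intro sum.cong refl) (auto simp: VV)
    also have "\<dots> = (\<Sum>m<d. if \<mu> m \<noteq> 0 then z m * cnj (z m) else 0)" by simp
    finally have e: "(\<Sum>\<rho><R. (\<Sum>m<d. V \<rho> m * z m) * cnj (\<Sum>m<d. V \<rho> m * z m)) = \<dots>" .
    show ?thesis unfolding e Re_sum
      by (rule sum_mono) (simp add: complex_mult_cnj)
  qed
  show ?thesis using a b c by blast
qed

lemma decomp_mono: "decomp d Y s \<Longrightarrow> s \<le> s' \<Longrightarrow> decomp d Y s'"
  unfolding decomp_def by (meson order_trans)

lemma decomp_scale:
  assumes d: "decomp d Y s" and c: "0 \<le> c" and Y': "Y' \<in> carrier_mat d d"
    and e: "\<And>i j. i < d \<Longrightarrow> j < d \<Longrightarrow> Y' $$ (i,j) = complex_of_real c * Y $$ (i,j)"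
  shows "decomp d Y' (c * s)"
proof -
  obtain L where YL: "\<And>i j. i < d \<Longrightarrow> j < d \<Longrightarrow> Y $$ (i,j) = dsum L i j" and w: "dwt d L \<le> s"
    using d unfolding decomp_def by blast
  define L' where "L' = map (\<lambda>p. (c * fst p, snd p)) L"
  have "Y' $$ (i,j) = dsum L' i j" if "i < d" "j < d" for i j
    unfolding e[OF that] YL[OF that] dsum_def L'_def
    by (simp add: o_def sum_list_mult_left[symmetric] algebra_simps)
  moreover have "dwt d L' = c * dwt d L"
    unfolding dwt_def L'_def using c by (simp add: o_def sum_list_mult_left[symmetric] abs_mult algebra_simps)
  moreover have "c * dwt d L \<le> c * s" using w c by (simp add: mult_left_mono)
  ultimately show ?thesis unfolding decomp_def using Y' by auto
qed

lemma decomp_zero: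
  assumes Y: "Y \<in> carrier_mat d d" and z: "\<And>i j. i < d \<Longrightarrow> j < d \<Longrightarrow> Y $$ (i,j) = 0" and s: "0 \<le> s"
  shows "decomp d Y s"
  unfolding decomp_def using Y z s by (intro conjI exI[of _ "[]"]) (auto simp: dsum_def dwt_def)

definition Zw :: "nat \<Rightarrow> nat \<Rightarrow> (complex mat \<Rightarrow> complex mat) \<Rightarrow> (nat \<Rightarrow> complex) \<Rightarrow> complex mat" where
  "Zw d1 d2 \<Phi> w = lift_left d1 d1 d2 \<Phi> (outer (d1*d1) w)"

lemma Zw_carrier[simp]: "Zw d1 d2 \<Phi> w \<in> carrier_mat (d1*d2) (d1*d2)"
  unfolding Zw_def lift_left_def by simp

lemma Zw_dims[simp]: "dim_row (Zw d1 d2 \<Phi> w) = d1*d2" "dim_col (Zw d1 d2 \<Phi> w) = d1*d2"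
  unfolding Zw_def lift_left_def by simp_all

lemma Zw_idx:
  assumes lin: "linear_map d1 d2 \<Phi>" and i: "i < d1" and j: "j < d1" and a: "a < d2" and b: "b < d2"
  shows "Zw d1 d2 \<Phi> w $$ (i*d2+a, j*d2+b) =
    (\<Sum>k<d1. \<Sum>l<d1. w (i*d1+k) * cnj (w (j*d1+l)) * \<Phi> (Eu d1 k l) $$ (a,b))"
proof -
  have p: "i*d2+a < d1*d2" "j*d2+b < d1*d2" using lt_mult_add i j a b by auto
  have blk: "mat d1 d1 (\<lambda>(k,l). outer (d1*d1) w $$ (i*d1+k, j*d1+l)) = mat d1 d1 (\<lambda>(k,l). w (i*d1+k) * cnj (w (j*d1+l)))"
    by (rule eq_matI) (use lt_mult_add[OF i] lt_mult_add[OF j] in auto)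
  have "Zw d1 d2 \<Phi> w $$ (i*d2+a, j*d2+b) = \<Phi> (mat d1 d1 (\<lambda>(k,l). w (i*d1+k) * cnj (w (j*d1+l)))) $$ (a,b)"
    unfolding Zw_def lift_left_def using p a b by (simp add: blk)
  also have "\<dots> = (\<Sum>k<d1. \<Sum>l<d1. w (i*d1+k) * cnj (w (j*d1+l)) * \<Phi> (Eu d1 k l) $$ (a,b))"
    by (subst lin_expand_idx[OF lin _ a b]) simp_all
  finally show ?thesis .
qed

lemma Zw_idx2:
  assumes lin: "linear_map d1 d2 \<Phi>" and p: "p < d1*d2" and q: "q < d1*d2"
  shows "Zw d1 d2 \<Phi> w $$ (p, q) =
    (\<Sum>k<d1. \<Sum>l<d1. w (p div d2*d1+k) * cnj (w (q div d2*d1+l)) * \<Phi> (Eu d1 k l) $$ (p mod d2, q mod d2))"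
proof -
  have d2: "0 < d2" using p by (cases d2) auto
  have pd: "p div d2 < d1" "q div d2 < d1" using p q by (simp_all add: less_mult_imp_div_less)
  have "Zw d1 d2 \<Phi> w $$ (p, q) = Zw d1 d2 \<Phi> w $$ (p div d2 * d2 + p mod d2, q div d2 * d2 + q mod d2)" by simp
  also have "\<dots> = (\<Sum>k<d1. \<Sum>l<d1. w (p div d2*d1+k) * cnj (w (q div d2*d1+l)) * \<Phi> (Eu d1 k l) $$ (p mod d2, q mod d2))"
    by (rule Zw_idx[OF lin pd]) (simp_all add: d2)
  finally show ?thesis .
qed

lemma Zw_herm:
  assumes lin: "linear_map d1 d2 \<Phi>"
    and herm: "\<And>i j a b. i < d1 \<Longrightarrow> j < d1 \<Longrightarrow> a < d2 \<Longrightarrow> b < d2 \<Longrightarrow>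
        \<Phi> (Eu d1 j i) $$ (b,a) = cnj (\<Phi> (Eu d1 i j) $$ (a,b))"
  shows "adj (Zw d1 d2 \<Phi> w) = Zw d1 d2 \<Phi> w"
proof (rule eq_matI)
  fix p q assume "p < dim_row (Zw d1 d2 \<Phi> w)" "q < dim_col (Zw d1 d2 \<Phi> w)"
  then have p: "p < d1*d2" and q: "q < d1*d2" using Zw_carrier[of d1 d2 \<Phi> w] by auto
  have d2: "0 < d2" using p by (cases d2) auto
  have m: "p mod d2 < d2" "q mod d2 < d2" using d2 by simp_all
  have "adj (Zw d1 d2 \<Phi> w) $$ (p,q) = cnj (Zw d1 d2 \<Phi> w $$ (q,p))" using p q by simp
  also have "\<dots> = (\<Sum>k<d1. \<Sum>l<d1. cnj (w (q div d2*d1+k) * cnj (w (p div d2*d1+l)) * \<Phi> (Eu d1 k l) $$ (q mod d2, p mod d2)))"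
    unfolding Zw_idx2[OF lin q p] by (simp add: cnj_sum)
  also have "\<dots> = (\<Sum>k<d1. \<Sum>l<d1. w (p div d2*d1+l) * cnj (w (q div d2*d1+k)) * \<Phi> (Eu d1 l k) $$ (p mod d2, q mod d2))"
    by (intro sum.cong refl) (simp add: herm[OF _ _ m(1) m(2)] algebra_simps)
  also have "\<dots> = (\<Sum>l<d1. \<Sum>k<d1. w (p div d2*d1+l) * cnj (w (q div d2*d1+k)) * \<Phi> (Eu d1 l k) $$ (p mod d2, q mod d2))"
    by (rule sum.swap)
  also have "\<dots> = Zw d1 d2 \<Phi> w $$ (p,q)" unfolding Zw_idx2[OF lin p q] ..
  finally show "adj (Zw d1 d2 \<Phi> w) $$ (p,q) = Zw d1 d2 \<Phi> w $$ (p,q)" .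
qed simp_all

lemma Zw_decomp:
  assumes lin: "linear_map d1 d2 \<Phi>"
    and herm: "\<And>i j a b. i < d1 \<Longrightarrow> j < d1 \<Longrightarrow> a < d2 \<Longrightarrow> b < d2 \<Longrightarrow>
        \<Phi> (Eu d1 j i) $$ (b,a) = cnj (\<Phi> (Eu d1 i j) $$ (a,b))"
    and tn: "\<And>\<psi>. pure_state (d1*d1) \<psi> \<Longrightarrow> trace_norm (d1*d2) (lift_left d1 d1 d2 \<Phi> \<psi>) \<le> 1"
  shows "decomp (d1*d2) (Zw d1 d2 \<Phi> w) (nrm (d1*d1) w)"
proof (cases "nrm (d1*d1) w = 0")
  case True
  have w0: "w i = 0" if "i < d1*d1" for i
  proof -
    have "\<forall>i\<in>{..<d1*d1}. (cmod (w i))\<^sup>2 = 0"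
      using True unfolding nrm_def by (subst sum_nonneg_eq_0_iff[symmetric]) auto
    then show ?thesis using that by simp
  qed
  show ?thesis
  proof (rule decomp_zero)
    fix p q assume p: "p < d1*d2" and q: "q < d1*d2"
    have pd: "p div d2 < d1" "q div d2 < d1" using p q by (simp_all add: less_mult_imp_div_less)
    have "w (p div d2 * d1 + k) = 0" if "k < d1" for k using w0 lt_mult_add[OF pd(1) that] by simp
    then show "Zw d1 d2 \<Phi> w $$ (p,q) = 0" unfolding Zw_idx2[OF lin p q] by simp
  qed (simp_all add: nrm_nonneg)
next
  case False
  define c where "c = nrm (d1*d1) w"
  have c: "0 < c" using False nrm_nonneg[of "d1*d1" w] unfolding c_def by simp
  define u where "u = (\<lambda>i. w i / complex_of_real (sqrt c))"
  have wu: "w i = complex_of_real (sqrt c) * u i" for i unfolding u_def using c by simp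
  have pure: "pure_state (d1*d1) (outer (d1*d1) u)"
    unfolding pure_state_def
  proof (intro bexI[of _ "vec (d1*d1) u"] conjI)
    have "(\<Sum>i<d1*d1. (cmod (vec (d1*d1) u $ i))\<^sup>2) = (\<Sum>i<d1*d1. (cmod (w i))\<^sup>2 / c)"
      by (intro sum.cong refl) (simp add: u_def norm_divide power_divide c less_imp_le)
    also have "\<dots> = 1" using c unfolding c_def nrm_def by (simp add: sum_divide_distrib[symmetric])
    finally show "(\<Sum>i<d1*d1. (cmod (vec (d1*d1) u $ i))\<^sup>2) = 1" .
    show "outer (d1*d1) u = mat (d1*d1) (d1*d1) (\<lambda>(i,j). vec (d1*d1) u $ i * cnj (vec (d1*d1) u $ j))"
      unfolding outer_def by (rule eq_matI) auto
  qed simp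
  have "trace_norm (d1*d2) (Zw d1 d2 \<Phi> u) \<le> 1" unfolding Zw_def by (rule tn[OF pure])
  then have du: "decomp (d1*d2) (Zw d1 d2 \<Phi> u) 1"
    using decomp_mono[OF herm_decomp[OF Zw_carrier Zw_herm[OF lin herm]]] by blast
  have "decomp (d1*d2) (Zw d1 d2 \<Phi> w) (c * 1)"
  proof (rule decomp_scale[OF du])
    fix p q assume p: "p < d1*d2" and q: "q < d1*d2"
    have sc: "complex_of_real (sqrt c) * cnj (complex_of_real (sqrt c)) = complex_of_real c"
      using c by (simp flip: of_real_mult)
    show "Zw d1 d2 \<Phi> w $$ (p,q) = complex_of_real c * Zw d1 d2 \<Phi> u $$ (p,q)"
      unfolding Zw_idx2[OF lin p q] wu
      by (simp add: sum_distrib_left algebra_simps sc[symmetric])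
  qed (use c in simp_all)
  then show ?thesis unfolding c_def by simp
qed

lemma decode_out:
  assumes r: "r < la" and s: "s < d2" and t: "t < lb"
  shows "rr d2 lb (r*(d2*lb) + (s*lb + t)) = r" "ss d2 lb (r*(d2*lb) + (s*lb + t)) = s"
    "tt lb (r*(d2*lb) + (s*lb + t)) = t"
proof -
  have st: "s*lb + t < d2*lb" by (rule lt_mult_add[OF s t])
  show "rr d2 lb (r*(d2*lb) + (s*lb + t)) = r" unfolding rr_def using st by simp
  show "ss d2 lb (r*(d2*lb) + (s*lb + t)) = s" unfolding ss_def using st t by simp
  have e: "r*(d2*lb) + (s*lb + t) = (r*d2 + s)*lb + t" by (simp add: algebra_simps)
  show "tt lb (r*(d2*lb) + (s*lb + t)) = t" unfolding tt_def e by (rule mod_mult_add[OF t])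
qed

lemma Re_sum_sq: "Re (\<Sum>i\<in>I. f i * cnj (f i)) = (\<Sum>i\<in>I. (cmod (f i))\<^sup>2)"
  by (simp add: Re_sum complex_mult_cnj cmod_power2)

lemma nrm_split3:
  "nrm (la*(d*lb)) y = (\<Sum>r<la. \<Sum>s<d. \<Sum>t<lb. (cmod (y (r*(d*lb) + (s*lb + t))))\<^sup>2)"
  unfolding nrm_def by (simp add: sum_split)

lemma emb_decomp_outer:
  assumes lin: "linear_map d1 d2 \<Phi>"
    and herm: "\<And>i j a b. i < d1 \<Longrightarrow> j < d1 \<Longrightarrow> a < d2 \<Longrightarrow> b < d2 \<Longrightarrow>
        \<Phi> (Eu d1 j i) $$ (b,a) = cnj (\<Phi> (Eu d1 i j) $$ (a,b))"
    and tn: "\<And>\<psi>. pure_state (d1*d1) \<psi> \<Longrightarrow> trace_norm (d1*d2) (lift_left d1 d1 d2 \<Phi> \<psi>) \<le> 1"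
  shows "decomp (la*(d2*lb)) (emb la lb d1 d2 \<Phi> (outer (la*(d1*lb)) x)) (nrm (la*(d1*lb)) x)"
proof -
  define R where "R = la*lb"
  define xm where "xm = (\<lambda>\<rho> i. x (ix d1 lb (\<rho> div lb) i (\<rho> mod lb)))"
  obtain V W where Sa: "\<And>\<rho> i. \<rho> < R \<Longrightarrow> i < d1 \<Longrightarrow> xm \<rho> i = (\<Sum>m<d1. V \<rho> m * W m i)"
    and Sb: "(\<Sum>m<d1. \<Sum>i<d1. W m i * cnj (W m i)) = (\<Sum>\<rho><R. \<Sum>i<d1. xm \<rho> i * cnj (xm \<rho> i))"
    and Sc: "\<And>z. Re (\<Sum>\<rho><R. (\<Sum>m<d1. V \<rho> m * z m) * cnj (\<Sum>m<d1. V \<rho> m * z m)) \<le> Re (\<Sum>m<d1. z m * cnj (z m))"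
    using schmidt[of R d1 xm] by blast
  define w where "w = (\<lambda>p. W (p div d1) (p mod d1))"
  obtain L where ZL: "\<And>a b. a < d1*d2 \<Longrightarrow> b < d1*d2 \<Longrightarrow> Zw d1 d2 \<Phi> w $$ (a,b) = dsum L a b"
    and wL: "dwt (d1*d2) L \<le> nrm (d1*d1) w"
    using Zw_decomp[OF lin herm tn, of w] unfolding decomp_def by blast
  have nw: "nrm (d1*d1) w = nrm (la*(d1*lb)) x"
  proof -
    have "complex_of_real (nrm (d1*d1) w) = (\<Sum>m<d1. \<Sum>i<d1. W m i * cnj (W m i))"
      unfolding nrm_c sum_split w_def by simp
    also have "\<dots> = (\<Sum>r<la. \<Sum>t<lb. \<Sum>i<d1. x (ix d1 lb r i t) * cnj (x (ix d1 lb r i t)))"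
      unfolding Sb R_def sum_split xm_def by simp
    also have "\<dots> = (\<Sum>r<la. \<Sum>i<d1. \<Sum>t<lb. x (ix d1 lb r i t) * cnj (x (ix d1 lb r i t)))"
      by (rule sum.cong[OF refl], rule sum.swap)
    also have "\<dots> = complex_of_real (nrm (la*(d1*lb)) x)"
      unfolding nrm_c sum_split ix_def by simp
    finally show ?thesis by (metis of_real_eq_iff)
  qed
  define \<rho> where "\<rho> = (\<lambda>p. rr d2 lb p * lb + tt lb p)"
  define Y where "Y = (\<lambda>z p. \<Sum>m<d1. V (\<rho> p) m * z (m*d2 + ss d2 lb p))"
  define L' where "L' = map (\<lambda>e. (fst e, Y (snd e))) L"
  have entry: "emb la lb d1 d2 \<Phi> (outer (la*(d1*lb)) x) $$ (p,q) = dsum L' p q"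
    if p: "p < la*(d2*lb)" and q: "q < la*(d2*lb)" for p q
  proof -
    let ?A = "\<lambda>p i. ix d1 lb (rr d2 lb p) i (tt lb p)"
    let ?J = "\<lambda>i j. \<Phi> (Eu d1 i j) $$ (ss d2 lb p, ss d2 lb q)"
    have lbpos: "0 < lb" using pos_of_lt[OF p] by simp
    have rho: "\<rho> p < R" "\<rho> q < R" unfolding \<rho>_def R_def
      using lt_mult_add[OF rr_lt[OF p] tt_lt[OF p]] lt_mult_add[OF rr_lt[OF q] tt_lt[OF q]] by simp_all
    have xA: "x (?A p' i) = (\<Sum>m<d1. V (\<rho> p') m * W m i)" if "p' < la*(d2*lb)" "\<rho> p' < R" "i < d1" for p' i
    proof -
      have "xm (\<rho> p') i = x (?A p' i)" unfolding xm_def \<rho>_def using tt_lt[OF that(1)] by simp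
      then show ?thesis using Sa[OF that(2,3)] by simp
    qed
    have b: "?A p i < la*(d1*lb)" "?A q j < la*(d1*lb)" if "i < d1" "j < d1" for i j
      using ix_lt[OF rr_lt[OF p] that(1) tt_lt[OF p]] ix_lt[OF rr_lt[OF q] that(2) tt_lt[OF q]] by simp_all
    have "emb la lb d1 d2 \<Phi> (outer (la*(d1*lb)) x) $$ (p,q) = (\<Sum>i<d1. \<Sum>j<d1. x (?A p i) * cnj (x (?A q j)) * ?J i j)"
      unfolding emb_lin_idx[OF lin p q] using b by simp
    also have "\<dots> = (\<Sum>i<d1. \<Sum>j<d1. \<Sum>m<d1. \<Sum>m'<d1. V (\<rho> p) m * cnj (V (\<rho> q) m') * (W m i * cnj (W m' j) * ?J i j))"
    proof (intro sum.cong refl)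
      fix i j assume i: "i \<in> {..<d1}" and j: "j \<in> {..<d1}"
      have "x (?A p i) * cnj (x (?A q j)) * ?J i j = (\<Sum>m<d1. V (\<rho> p) m * W m i) * (\<Sum>m'<d1. cnj (V (\<rho> q) m' * W m' j)) * ?J i j"
        using xA[OF p rho(1)] xA[OF q rho(2)] i j by (simp add: cnj_sum)
      also have "\<dots> = (\<Sum>m<d1. \<Sum>m'<d1. V (\<rho> p) m * W m i * cnj (V (\<rho> q) m' * W m' j)) * ?J i j"
        by (simp add: sum_product)
      also have "\<dots> = (\<Sum>m<d1. \<Sum>m'<d1. V (\<rho> p) m * cnj (V (\<rho> q) m') * (W m i * cnj (W m' j) * ?J i j))"
        unfolding sum_distrib_right by (intro sum.cong refl) (simp add: algebra_simps)
      finally show "x (?A p i) * cnj (x (?A q j)) * ?J i j = \<dots>" .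
    qed
    also have "\<dots> = (\<Sum>m<d1. \<Sum>m'<d1. \<Sum>i<d1. \<Sum>j<d1. V (\<rho> p) m * cnj (V (\<rho> q) m') * (W m i * cnj (W m' j) * ?J i j))"
      by (rule quad_swap)
    also have "\<dots> = (\<Sum>m<d1. \<Sum>m'<d1. V (\<rho> p) m * cnj (V (\<rho> q) m') * Zw d1 d2 \<Phi> w $$ (m*d2 + ss d2 lb p, m'*d2 + ss d2 lb q))"
    proof (intro sum.cong refl)
      fix m m' assume m: "m \<in> {..<d1}" and m': "m' \<in> {..<d1}"
      have "Zw d1 d2 \<Phi> w $$ (m*d2 + ss d2 lb p, m'*d2 + ss d2 lb q) = (\<Sum>i<d1. \<Sum>j<d1. W m i * cnj (W m' j) * ?J i j)"
      proof -
        have m1: "m < d1" "m' < d1" using m m' by simp_all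
        have "Zw d1 d2 \<Phi> w $$ (m*d2 + ss d2 lb p, m'*d2 + ss d2 lb q) =
          (\<Sum>k<d1. \<Sum>l<d1. w (m*d1+k) * cnj (w (m'*d1+l)) * ?J k l)"
          by (rule Zw_idx[OF lin m1 ss_lt[OF p] ss_lt[OF q]])
        also have "\<dots> = (\<Sum>i<d1. \<Sum>j<d1. W m i * cnj (W m' j) * ?J i j)"
          unfolding w_def by (intro sum.cong refl) simp
        finally show ?thesis .
      qed
      then show "(\<Sum>i<d1. \<Sum>j<d1. V (\<rho> p) m * cnj (V (\<rho> q) m') * (W m i * cnj (W m' j) * ?J i j)) =
         V (\<rho> p) m * cnj (V (\<rho> q) m') * Zw d1 d2 \<Phi> w $$ (m*d2 + ss d2 lb p, m'*d2 + ss d2 lb q)"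
        by (simp add: sum_distrib_left)
    qed
    also have "\<dots> = (\<Sum>m<d1. \<Sum>m'<d1. \<Sum>e\<leftarrow>L. V (\<rho> p) m * cnj (V (\<rho> q) m') *
        (complex_of_real (fst e) * snd e (m*d2 + ss d2 lb p) * cnj (snd e (m'*d2 + ss d2 lb q))))"
    proof (intro sum.cong refl)
      fix m m' assume m: "m \<in> {..<d1}" and m': "m' \<in> {..<d1}"
      have "m*d2 + ss d2 lb p < d1*d2" "m'*d2 + ss d2 lb q < d1*d2"
        using lt_mult_add[OF _ ss_lt[OF p], of m d1] lt_mult_add[OF _ ss_lt[OF q], of m' d1] m m' by simp_all
      then show "V (\<rho> p) m * cnj (V (\<rho> q) m') * Zw d1 d2 \<Phi> w $$ (m*d2 + ss d2 lb p, m'*d2 + ss d2 lb q) =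
        (\<Sum>e\<leftarrow>L. V (\<rho> p) m * cnj (V (\<rho> q) m') * (complex_of_real (fst e) * snd e (m*d2 + ss d2 lb p) * cnj (snd e (m'*d2 + ss d2 lb q))))"
        by (simp add: ZL dsum_def sum_list_mult_left)
    qed
    also have "\<dots> = (\<Sum>e\<leftarrow>L. \<Sum>m<d1. \<Sum>m'<d1. V (\<rho> p) m * cnj (V (\<rho> q) m') *
        (complex_of_real (fst e) * snd e (m*d2 + ss d2 lb p) * cnj (snd e (m'*d2 + ss d2 lb q))))"
      by (simp add: sum_sum_list_swap)
    also have "\<dots> = dsum L' p q"
      unfolding dsum_def L'_def
    proof (simp add: o_def, rule arg_cong[where f = sum_list], rule map_cong[OF refl])
      fix e :: "real \<times> (nat \<Rightarrow> complex)"
      show "(\<Sum>m<d1. \<Sum>m'<d1. V (\<rho> p) m * cnj (V (\<rho> q) m') *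
        (complex_of_real (fst e) * snd e (m*d2 + ss d2 lb p) * cnj (snd e (m'*d2 + ss d2 lb q)))) =
        complex_of_real (fst e) * Y (snd e) p * cnj (Y (snd e) q)"
        unfolding Y_def cnj_sum by (simp add: sum_product sum_distrib_left algebra_simps)
    qed
    finally show ?thesis .
  qed
  have nY: "nrm (la*(d2*lb)) (Y z) \<le> nrm (d1*d2) z" for z
  proof -
    have "nrm (la*(d2*lb)) (Y z) = (\<Sum>r<la. \<Sum>s<d2. \<Sum>t<lb. (cmod (\<Sum>m<d1. V (r*lb+t) m * z (m*d2 + s)))\<^sup>2)"
      unfolding nrm_split3
      by (intro sum.cong refl) (simp add: Y_def \<rho>_def decode_out)
    also have "\<dots> = (\<Sum>s<d2. \<Sum>r<la. \<Sum>t<lb. (cmod (\<Sum>m<d1. V (r*lb+t) m * z (m*d2 + s)))\<^sup>2)"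
      by (rule sum.swap)
    also have "\<dots> = (\<Sum>s<d2. \<Sum>\<rho>'<R. (cmod (\<Sum>m<d1. V \<rho>' m * z (m*d2 + s)))\<^sup>2)"
      unfolding R_def sum_split ..
    also have "\<dots> \<le> (\<Sum>s<d2. \<Sum>m<d1. (cmod (z (m*d2 + s)))\<^sup>2)"
    proof (rule sum_mono)
      fix s
      show "(\<Sum>\<rho>'<R. (cmod (\<Sum>m<d1. V \<rho>' m * z (m*d2 + s)))\<^sup>2) \<le> (\<Sum>m<d1. (cmod (z (m*d2 + s)))\<^sup>2)"
        using Sc[of "\<lambda>m. z (m*d2 + s)"] unfolding Re_sum_sq .
    qed
    also have "\<dots> = (\<Sum>m<d1. \<Sum>s<d2. (cmod (z (m*d2 + s)))\<^sup>2)" by (rule sum.swap)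
    also have "\<dots> = nrm (d1*d2) z" unfolding nrm_def sum_split ..
    finally show ?thesis .
  qed
  have "dwt (la*(d2*lb)) L' \<le> dwt (d1*d2) L"
    unfolding dwt_def L'_def
    by (simp add: o_def, rule sum_list_mono2) (simp add: mult_left_mono nY)
  also have "\<dots> \<le> nrm (la*(d1*lb)) x" using wL nw by simp
  finally have "dwt (la*(d2*lb)) L' \<le> nrm (la*(d1*lb)) x" .
  then show ?thesis unfolding decomp_def using entry by auto
qed

lemma coord4:
  fixes r sa sb t la A B lb :: nat
  assumes r: "r < la" and sa: "sa < A" and sb: "sb < B" and t: "t < lb"
  defines "v \<equiv> ((r*A+sa)*B+sb)*lb + t"
  shows "v < (la*A)*(B*lb)" "v < la*((A*B)*lb)" "v div (B*lb) = r*A+sa" "v mod (B*lb) = sb*lb + t"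
    "rr (A*B) lb v = r" "ss (A*B) lb v = sa*B+sb" "tt lb v = t" "v = ix (A*B) lb r (sa*B+sb) t"
proof -
  have s: "sa*B+sb < A*B" by (rule lt_mult_add[OF sa sb])
  have st: "sb*lb + t < B*lb" by (rule lt_mult_add[OF sb t])
  have e1: "v = (r*A+sa)*(B*lb) + (sb*lb + t)" unfolding v_def by (simp add: algebra_simps)
  have e2: "v = r*((A*B)*lb) + ((sa*B+sb)*lb + t)" unfolding v_def by (simp add: algebra_simps)
  have ra: "r*A+sa < la*A" by (rule lt_mult_add[OF r sa])
  show "v < (la*A)*(B*lb)" unfolding e1 by (rule lt_mult_add[OF ra st])
  show "v < la*((A*B)*lb)" unfolding e2 by (rule lt_mult_add[OF r lt_mult_add[OF s t]])
  show "v div (B*lb) = r*A+sa" unfolding e1 using st by simp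
  show "v mod (B*lb) = sb*lb + t" unfolding e1 using st by simp
  show "rr (A*B) lb v = r" unfolding e2 by (rule decode_out(1)[OF r s t])
  show "ss (A*B) lb v = sa*B+sb" unfolding e2 by (rule decode_out(2)[OF r s t])
  show "tt lb v = t" unfolding e2 by (rule decode_out(3)[OF r s t])
  show "v = ix (A*B) lb r (sa*B+sb) t" unfolding e2 ix_def ..
qed

lemma coord4_ex:
  fixes p la A B lb :: nat
  assumes p: "p < la*((A*B)*lb)"
  shows "\<exists>r sa sb t. r < la \<and> sa < A \<and> sb < B \<and> t < lb \<and> p = ((r*A+sa)*B+sb)*lb + t"
proof -
  have pos: "0 < A" "0 < B" "0 < lb" using p by (cases "A = 0"; cases "B = 0"; cases "lb = 0"; auto)+
  define r where "r = p div ((A*B)*lb)"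
  define s where "s = (p mod ((A*B)*lb)) div lb"
  define t where "t = p mod lb"
  have r: "r < la" unfolding r_def using p by (simp add: less_mult_imp_div_less mult.commute)
  have s: "s < A*B" unfolding s_def using pos by (simp add: less_mult_imp_div_less)
  have t: "t < lb" unfolding t_def using pos by simp
  have "p = r*((A*B)*lb) + p mod ((A*B)*lb)" unfolding r_def by (metis div_mult_mod_eq mult.commute)
  also have "p mod ((A*B)*lb) = s*lb + (p mod ((A*B)*lb)) mod lb" unfolding s_def by (rule div_mult_mod_eq[symmetric])
  also have "(p mod ((A*B)*lb)) mod lb = t" unfolding t_def by (simp add: mod_mod_cancel)
  finally have pe: "p = r*((A*B)*lb) + (s*lb + t)" .
  have "s = (s div B)*B + s mod B" by (rule div_mult_mod_eq[symmetric])
  then have "p = ((r*A + s div B)*B + s mod B)*lb + t" unfolding pe by (simp add: algebra_simps)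
  moreover have "s div B < A" using s pos by (simp add: less_mult_imp_div_less)
  moreover have "s mod B < B" using pos by simp
  ultimately show ?thesis using r t by blast
qed

lemma coord2:
  fixes ia ib a b :: nat
  assumes "ia < a" "ib < b"
  shows "(ia*b+ib) div b = ia" "(ia*b+ib) mod b = ib" "ia*b+ib < a*b"
  using assms lt_mult_add by auto

lemma ptB_idx: "p < a*b \<Longrightarrow> q < a*b \<Longrightarrow> ptB a b M $$ (p,q) = M $$ ((p div b)*b + q mod b, (q div b)*b + p mod b)"
  unfolding ptB_def by simp

lemma ptB_dims[simp]: "dim_row (ptB a b M) = a*b" "dim_col (ptB a b M) = a*b"
  unfolding ptB_def by simp_all

lemma ptB_emb:
  fixes M :: "complex mat \<Rightarrow> complex mat"
  shows "ptB (la*a2) (b2*lb) (emb la lb (a1*b1) (a2*b2) M X) =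
         emb la lb (a1*b1) (a2*b2) (pt_conj a1 b1 a2 b2 M) (ptB (la*a1) (b1*lb) X)"
proof (rule eq_matI)
  fix p q assume "p < dim_row (emb la lb (a1*b1) (a2*b2) (pt_conj a1 b1 a2 b2 M) (ptB (la*a1) (b1*lb) X))"
    "q < dim_col (emb la lb (a1*b1) (a2*b2) (pt_conj a1 b1 a2 b2 M) (ptB (la*a1) (b1*lb) X))"
  then have p: "p < la*((a2*b2)*lb)" and q: "q < la*((a2*b2)*lb)" by simp_all
  obtain r sa sb t where c: "r < la" "sa < a2" "sb < b2" "t < lb" and pe: "p = ((r*a2+sa)*b2+sb)*lb + t"
    using coord4_ex[OF p] by blast
  obtain r' sa' sb' t' where c': "r' < la" "sa' < a2" "sb' < b2" "t' < lb" and qe: "q = ((r'*a2+sa')*b2+sb')*lb + t'"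
    using coord4_ex[OF q] by blast
  note P = coord4[OF c]
  note Q = coord4[OF c']
  define P' where "P' = ((r*a2+sa)*b2+sb')*lb + t'"
  define Q' where "Q' = ((r'*a2+sa')*b2+sb)*lb + t"
  note PP = coord4[OF c(1,2) c'(3) c'(4), folded P'_def]
  note QQ = coord4[OF c'(1,2) c(3) c(4), folded Q'_def]
  have pl: "p < (la*a2)*(b2*lb)" "q < (la*a2)*(b2*lb)" using P(1) Q(1) pe qe by simp_all
  have lhs: "ptB (la*a2) (b2*lb) (emb la lb (a1*b1) (a2*b2) M X) $$ (p,q) = emb la lb (a1*b1) (a2*b2) M X $$ (P', Q')"
  proof -
    have "(p div (b2*lb))*(b2*lb) + q mod (b2*lb) = P'"
      unfolding pe qe P(3) Q(4) P'_def by (simp add: algebra_simps)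
    moreover have "(q div (b2*lb))*(b2*lb) + p mod (b2*lb) = Q'"
      unfolding pe qe P(4) Q(3) Q'_def by (simp add: algebra_simps)
    ultimately show ?thesis by (simp add: ptB_idx[OF pl])
  qed
  define d1 where "d1 = a1*b1"
  have blk_eq: "ptB a1 b1 (blk (a1*b1) (a2*b2) lb (ptB (la*a1) (b1*lb) X) p q) = blk (a1*b1) (a2*b2) lb X P' Q'"
  proof (rule eq_matI)
    fix i j assume "i < dim_row (blk (a1*b1) (a2*b2) lb X P' Q')" "j < dim_col (blk (a1*b1) (a2*b2) lb X P' Q')"
    then have i: "i < a1*b1" and j: "j < a1*b1" unfolding blk_def by simp_all
    have b1: "0 < b1" using i by (cases b1) auto
    define ia ib ja jb where "ia = i div b1" "ib = i mod b1" "ja = j div b1" "jb = j mod b1"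
    have ii: "ia < a1" "ib < b1" "ja < a1" "jb < b1" unfolding ia_ib_ja_jb_def using i j b1
      by (simp_all add: less_mult_imp_div_less)
    have ie: "i = ia*b1+ib" "j = ja*b1+jb" unfolding ia_ib_ja_jb_def by simp_all
    note X1 = coord4[OF c(1) ii(1) ii(4) c(4)]
    note X2 = coord4[OF c'(1) ii(3) ii(2) c'(4)]
    note X3 = coord4[OF c(1) ii(1) ii(2) c'(4)]
    note X4 = coord4[OF c'(1) ii(3) ii(4) c(4)]
    have "ptB a1 b1 (blk (a1*b1) (a2*b2) lb (ptB (la*a1) (b1*lb) X) p q) $$ (i,j) =
          blk (a1*b1) (a2*b2) lb (ptB (la*a1) (b1*lb) X) p q $$ (ia*b1+jb, ja*b1+ib)"
      using i j unfolding ie by (simp add: ptB_idx coord2 ii)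
    also have "\<dots> = ptB (la*a1) (b1*lb) X $$ (ix (a1*b1) lb r (ia*b1+jb) t, ix (a1*b1) lb r' (ja*b1+ib) t')"
      unfolding blk_def using coord2(3)[OF ii(1) ii(4)] coord2(3)[OF ii(3) ii(2)]
      by (simp add: P(5,7) Q(5,7) pe qe)
    also have "\<dots> = X $$ (ix (a1*b1) lb r i t', ix (a1*b1) lb r' j t)"
    proof -
      let ?v1 = "((r*a1+ia)*b1+jb)*lb + t" and ?v2 = "((r'*a1+ja)*b1+ib)*lb + t'"
      have e1: "(?v1 div (b1*lb))*(b1*lb) + ?v2 mod (b1*lb) = ix (a1*b1) lb r i t'"
        unfolding X1(3) X2(4) ie(1) X3(8)[symmetric] by (simp add: algebra_simps)
      have e2: "(?v2 div (b1*lb))*(b1*lb) + ?v1 mod (b1*lb) = ix (a1*b1) lb r' j t"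
        unfolding X2(3) X1(4) ie(2) X4(8)[symmetric] by (simp add: algebra_simps)
      show ?thesis unfolding X1(8)[symmetric] X2(8)[symmetric] ptB_idx[OF X1(1) X2(1)] e1 e2 ..
    qed
    also have "\<dots> = blk (a1*b1) (a2*b2) lb X P' Q' $$ (i,j)"
      unfolding blk_def using i j by (simp add: PP(5,7) QQ(5,7))
    finally show "ptB a1 b1 (blk (a1*b1) (a2*b2) lb (ptB (la*a1) (b1*lb) X) p q) $$ (i,j) = blk (a1*b1) (a2*b2) lb X P' Q' $$ (i,j)" .
  qed (simp_all add: blk_def)
  have "emb la lb (a1*b1) (a2*b2) (pt_conj a1 b1 a2 b2 M) (ptB (la*a1) (b1*lb) X) $$ (p,q) =
      pt_conj a1 b1 a2 b2 M (blk (a1*b1) (a2*b2) lb (ptB (la*a1) (b1*lb) X) p q) $$ (sa*b2+sb, sa'*b2+sb')"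
    using emb_idx[OF p q] P(6) Q(6) pe qe by simp
  also have "\<dots> = M (blk (a1*b1) (a2*b2) lb X P' Q') $$ (sa*b2+sb', sa'*b2+sb)"
    unfolding pt_conj_def blk_eq
    by (simp add: ptB_idx coord2 c c')
  also have "\<dots> = emb la lb (a1*b1) (a2*b2) M X $$ (P', Q')"
    using emb_idx[OF PP(2) QQ(2)] PP(6) QQ(6) by simp
  finally show "ptB (la*a2) (b2*lb) (emb la lb (a1*b1) (a2*b2) M X) $$ (p,q) =
      emb la lb (a1*b1) (a2*b2) (pt_conj a1 b1 a2 b2 M) (ptB (la*a1) (b1*lb) X) $$ (p,q)"
    unfolding lhs ..
qed (simp_all add: algebra_simps)

lemma ptB_carrier[simp]: "ptB a b M \<in> carrier_mat (a*b) (a*b)"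
  unfolding ptB_def by simp

lemma ptB_back:
  assumes p: "p < a*b" and q: "q < (a::nat)*b"
  shows "(p div b)*b + q mod b < a*b"
proof -
  have b: "0 < b" using p by (cases b) auto
  show ?thesis using lt_mult_add[of "p div b" a "q mod b" b] p b by (simp add: less_mult_imp_div_less)
qed

lemma ptB_ptB:
  assumes X: "X \<in> carrier_mat (a*b) (a*b)"
  shows "ptB a b (ptB a b X) = X"
proof (rule eq_matI)
  fix p q assume "p < dim_row X" "q < dim_col X"
  then have p: "p < a*b" and q: "q < a*b" using X by auto
  have b: "0 < b" using p by (cases b) auto
  have P: "(p div b)*b + q mod b < a*b" "(q div b)*b + p mod b < a*b" using ptB_back p q by auto
  show "ptB a b (ptB a b X) $$ (p,q) = X $$ (p,q)"
    unfolding ptB_idx[OF p q] ptB_idx[OF P] using b by simp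
qed (use X in simp_all)

lemma ptB_add: "X \<in> carrier_mat (a*b) (a*b) \<Longrightarrow> Y \<in> carrier_mat (a*b) (a*b) \<Longrightarrow> ptB a b (X + Y) = ptB a b X + ptB a b Y"
  by (rule eq_matI) (simp_all add: ptB_idx ptB_back)

lemma ptB_smult: "X \<in> carrier_mat (a*b) (a*b) \<Longrightarrow> ptB a b (c \<cdot>\<^sub>m X) = c \<cdot>\<^sub>m ptB a b X"
  by (rule eq_matI) (simp_all add: ptB_idx ptB_back)

lemma ptB_minus: "X \<in> carrier_mat (a*b) (a*b) \<Longrightarrow> Y \<in> carrier_mat (a*b) (a*b) \<Longrightarrow> ptB a b (X - Y) = ptB a b X - ptB a b Y"
  by (rule eq_matI) (simp_all add: ptB_idx ptB_back)

lemma mtrace_ptB: assumes X: "X \<in> carrier_mat (a*b) (a*b)" shows "mtrace (ptB a b X) = mtrace X"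
proof -
  have "mtrace (ptB a b X) = (\<Sum>p<a*b. X $$ (p,p))"
    unfolding mtrace_def by (intro sum.cong) (simp_all add: ptB_idx)
  also have "\<dots> = mtrace X" unfolding mtrace_def using X by simp
  finally show ?thesis .
qed

lemma pt_conj_linear:
  assumes lin: "linear_map (a1*b1) (a2*b2) P"
  shows "linear_map (a1*b1) (a2*b2) (pt_conj a1 b1 a2 b2 P)"
  unfolding linear_map_def pt_conj_def
proof (intro conjI ballI allI)
  fix X Y :: "complex mat" assume X: "X \<in> carrier_mat (a1*b1) (a1*b1)" and Y: "Y \<in> carrier_mat (a1*b1) (a1*b1)"
  show "ptB a2 b2 (P (ptB a1 b1 (X + Y))) = ptB a2 b2 (P (ptB a1 b1 X)) + ptB a2 b2 (P (ptB a1 b1 Y))"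
    using lin_props[OF lin] X Y by (simp add: ptB_add)
next
  fix X :: "complex mat" and c :: complex assume X: "X \<in> carrier_mat (a1*b1) (a1*b1)"
  show "ptB a2 b2 (P (ptB a1 b1 (c \<cdot>\<^sub>m X))) = c \<cdot>\<^sub>m ptB a2 b2 (P (ptB a1 b1 X))"
    using lin_props[OF lin] X by (simp add: ptB_smult)
qed simp

lemma mult_cnj_nonneg: "0 \<le> (z::complex) * cnj z"
  by (simp add: complex_mult_cnj less_eq_complex_def)

lemma psd_outer: "psd d (outer d v)"
  unfolding psd_iff
proof (intro conjI allI)
  fix f :: "nat \<Rightarrow> complex"
  have "(\<Sum>i<d. cnj (f i) * v i) * cnj (\<Sum>j<d. cnj (f j) * v j) = (\<Sum>i<d. \<Sum>j<d. (cnj (f i) * v i) * cnj (cnj (f j) * v j))"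
    by (simp only: cnj_sum sum_product)
  also have "\<dots> = qf d (outer d v) f"
    unfolding qf_def by (intro sum.cong refl) (simp add: algebra_simps)
  finally have "qf d (outer d v) f = (\<Sum>i<d. cnj (f i) * v i) * cnj (\<Sum>j<d. cnj (f j) * v j)" ..
  then show "0 \<le> qf d (outer d v) f" by (simp only: mult_cnj_nonneg)
qed simp

lemma psd_add: "psd d A \<Longrightarrow> psd d B \<Longrightarrow> psd d (A + B)"
  unfolding psd_iff
proof (intro conjI allI)
  fix f assume A: "A \<in> carrier_mat d d \<and> (\<forall>f. 0 \<le> qf d A f)" and B: "B \<in> carrier_mat d d \<and> (\<forall>f. 0 \<le> qf d B f)"
  show "A + B \<in> carrier_mat d d" using A B by simp
  have Ac: "A \<in> carrier_mat d d" and Bc: "B \<in> carrier_mat d d" using A B by simp_all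
  have "qf d (A + B) f = qf d A f + qf d B f"
    unfolding qf_def sum.distrib[symmetric] by (intro sum.cong refl) (use Ac Bc in \<open>simp add: algebra_simps\<close>)
  then show "0 \<le> qf d (A + B) f" using A B by simp
qed

lemma psd_smult: "psd d A \<Longrightarrow> 0 \<le> c \<Longrightarrow> psd d (complex_of_real c \<cdot>\<^sub>m A)"
  unfolding psd_iff
proof (intro conjI allI)
  fix f assume A: "A \<in> carrier_mat d d \<and> (\<forall>f. 0 \<le> qf d A f)" and c: "0 \<le> c"
  show "complex_of_real c \<cdot>\<^sub>m A \<in> carrier_mat d d" using A by simp
  have Ac: "A \<in> carrier_mat d d" using A by simp
  have "qf d (complex_of_real c \<cdot>\<^sub>m A) f = complex_of_real c * qf d A f"
    unfolding qf_def sum_distrib_left by (intro sum.cong refl) (use Ac in \<open>simp add: algebra_simps\<close>)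
  then show "0 \<le> qf d (complex_of_real c \<cdot>\<^sub>m A) f" using A c by (simp add: less_eq_complex_def)
qed

lemma lift_left_1:
  assumes X: "X \<in> carrier_mat d1 d1" and PX: "\<Phi> X \<in> carrier_mat d2 d2"
  shows "lift_left 1 d1 d2 \<Phi> X = \<Phi> X"
proof -
  have m: "mat d1 d1 (\<lambda>(i,j). X $$ (i,j)) = X" by (rule eq_matI) (use X in auto)
  show ?thesis unfolding lift_left_def by (rule eq_matI) (use PX m in auto)
qed

lemma cp_psd:
  assumes cp: "completely_positive d1 d2 \<Phi>" and X: "psd d1 X" and PX: "\<Phi> X \<in> carrier_mat d2 d2"
  shows "psd d2 (\<Phi> X)"
proof -
  have Xc: "X \<in> carrier_mat d1 d1" using X unfolding psd_iff by simp
  have "psd (1*d1) X \<longrightarrow> psd (1*d2) (lift_left 1 d1 d2 \<Phi> X)" using cp unfolding completely_positive_def by blast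
  then have "psd (1*d2) (lift_left 1 d1 d2 \<Phi> X)" using X by (simp only: mult_1)
  moreover have "lift_left 1 d1 d2 \<Phi> X = \<Phi> X" by (rule lift_left_1[of X d1 \<Phi> d2, OF Xc PX])
  ultimately show ?thesis by (simp only: mult_1)
qed

definition wme :: "nat \<Rightarrow> nat \<Rightarrow> complex" where
  "wme d1 p = (if p div d1 = p mod d1 then 1 else 0)"

lemma double_delta:
  assumes a: "a < (n::nat)" and b: "b < n"
  shows "(\<Sum>k<n. \<Sum>l<n. if k = a then (if l = b then f k l else 0) else 0) = f a b"
proof -
  have "(\<Sum>k<n. \<Sum>l<n. if k = a then (if l = b then f k l else 0) else 0) =
        (\<Sum>k<n. if k = a then (\<Sum>l<n. if l = b then f k l else 0) else 0)"
    by (rule sum.cong[OF refl]) simp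
  also have "\<dots> = f a b" using a b by simp
  finally show ?thesis .
qed

lemma wme_idx: "k < d1 \<Longrightarrow> wme d1 (r*d1 + k) = (if k = r then 1 else 0)"
  unfolding wme_def by simp

lemma Zw_wme:
  assumes lin: "linear_map d1 d2 \<Phi>"
  shows "Zw d1 d2 \<Phi> (\<lambda>p. c * wme d1 p) = (c * cnj c) \<cdot>\<^sub>m choi d1 d2 \<Phi>"
proof (rule eq_matI)
  fix p q assume "p < dim_row ((c * cnj c) \<cdot>\<^sub>m choi d1 d2 \<Phi>)" "q < dim_col ((c * cnj c) \<cdot>\<^sub>m choi d1 d2 \<Phi>)"
  then have p: "p < d1*d2" and q: "q < d1*d2" unfolding choi_def by simp_all
  have d2: "0 < d2" using p by (cases d2) auto
  have pd: "p div d2 < d1" "q div d2 < d1" using p q by (simp_all add: less_mult_imp_div_less)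
  have "Zw d1 d2 \<Phi> (\<lambda>p. c * wme d1 p) $$ (p,q) =
     (\<Sum>k<d1. \<Sum>l<d1. if k = p div d2 then (if l = q div d2 then c * cnj c * \<Phi> (Eu d1 k l) $$ (p mod d2, q mod d2) else 0) else 0)"
    unfolding Zw_idx2[OF lin p q]
    by (intro sum.cong refl) (simp add: wme_idx)
  also have "\<dots> = c * cnj c * \<Phi> (Eu d1 (p div d2) (q div d2)) $$ (p mod d2, q mod d2)"
    by (rule double_delta[OF pd])
  also have "\<dots> = ((c * cnj c) \<cdot>\<^sub>m choi d1 d2 \<Phi>) $$ (p,q)" unfolding choi_def using p q by simp
  finally show "Zw d1 d2 \<Phi> (\<lambda>p. c * wme d1 p) $$ (p,q) = ((c * cnj c) \<cdot>\<^sub>m choi d1 d2 \<Phi>) $$ (p,q)" .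
qed (simp_all add: choi_def)

lemma one_smult_c[simp]: "(1::complex) \<cdot>\<^sub>m A = A"
  by (rule eq_matI) simp_all

lemma choi_psd_CP:
  assumes lin: "linear_map d1 d2 \<Phi>" and cp: "completely_positive d1 d2 \<Phi>"
  shows "psd (d1*d2) (choi d1 d2 \<Phi>)"
proof -
  have "psd (d1*d2) (Zw d1 d2 \<Phi> (\<lambda>p. 1 * wme d1 p))"
    using cp psd_outer unfolding completely_positive_def Zw_def by blast
  then show ?thesis unfolding Zw_wme[OF lin] by simp
qed

lemma outer_dims[simp]: "dim_row (outer d v) = d" "dim_col (outer d v) = d"
  unfolding outer_def by simp_all

lemma choi_herm:
  assumes C: "psd (d1*d2) (choi d1 d2 \<Phi>)" and i: "i < d1" and j: "j < d1" and a: "a < d2" and b: "b < d2"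
  shows "\<Phi> (Eu d1 j i) $$ (b,a) = cnj (\<Phi> (Eu d1 i j) $$ (a,b))"
proof -
  have h: "adj (choi d1 d2 \<Phi>) = choi d1 d2 \<Phi>" by (rule psd_adj[OF C])
  have ab: "i*d2+a < d1*d2" "j*d2+b < d1*d2" using lt_mult_add i j a b by auto
  have "choi d1 d2 \<Phi> $$ (j*d2+b, i*d2+a) = adj (choi d1 d2 \<Phi>) $$ (j*d2+b, i*d2+a)" unfolding h ..
  also have "\<dots> = cnj (choi d1 d2 \<Phi> $$ (i*d2+a, j*d2+b))" using ab by (simp add: choi_def)
  finally show ?thesis unfolding choi_idx[OF i j a b] choi_idx[OF j i b a] .
qed

lemma ptB_Eu:
  assumes i: "i < a1*b1" and j: "j < a1*b1"
  shows "ptB a1 b1 (Eu (a1*b1) i j) = Eu (a1*b1) ((i div b1)*b1 + j mod b1) ((j div b1)*b1 + i mod b1)"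
proof (rule eq_matI)
  fix p q assume "p < dim_row (Eu (a1*b1) ((i div b1)*b1 + j mod b1) ((j div b1)*b1 + i mod b1))"
     "q < dim_col (Eu (a1*b1) ((i div b1)*b1 + j mod b1) ((j div b1)*b1 + i mod b1))"
  then have p: "p < a1*b1" and q: "q < a1*b1" unfolding Eu_def by simp_all
  have b1: "0 < b1" using p by (cases b1) auto
  have P: "(p div b1)*b1 + q mod b1 < a1*b1" "(q div b1)*b1 + p mod b1 < a1*b1" using ptB_back p q by auto
  have iff: "((p div b1)*b1 + q mod b1 = i \<and> (q div b1)*b1 + p mod b1 = j) \<longleftrightarrow>
             (p = (i div b1)*b1 + j mod b1 \<and> q = (j div b1)*b1 + i mod b1)"
  proof
    assume h: "(p div b1)*b1 + q mod b1 = i \<and> (q div b1)*b1 + p mod b1 = j"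
    then have "i div b1 = p div b1" "i mod b1 = q mod b1" "j div b1 = q div b1" "j mod b1 = p mod b1"
      using b1 by auto
    then show "p = (i div b1)*b1 + j mod b1 \<and> q = (j div b1)*b1 + i mod b1" by simp
  next
    assume h: "p = (i div b1)*b1 + j mod b1 \<and> q = (j div b1)*b1 + i mod b1"
    then show "(p div b1)*b1 + q mod b1 = i \<and> (q div b1)*b1 + p mod b1 = j" using b1 by simp
  qed
  show "ptB a1 b1 (Eu (a1*b1) i j) $$ (p,q) = Eu (a1*b1) ((i div b1)*b1 + j mod b1) ((j div b1)*b1 + i mod b1) $$ (p,q)"
    unfolding ptB_idx[OF p q] Eu_def using P p q iff by simp
qed (simp_all add: Eu_def)

lemma ptconj_herm:
  assumes herm: "\<And>i j a b. i < a1*b1 \<Longrightarrow> j < a1*b1 \<Longrightarrow> a < a2*b2 \<Longrightarrow> b < a2*b2 \<Longrightarrow>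
        M (Eu (a1*b1) j i) $$ (b,a) = cnj (M (Eu (a1*b1) i j) $$ (a,b))"
    and i: "i < a1*b1" and j: "j < a1*b1" and a: "a < a2*b2" and b: "b < a2*b2"
  shows "pt_conj a1 b1 a2 b2 M (Eu (a1*b1) j i) $$ (b,a) = cnj (pt_conj a1 b1 a2 b2 M (Eu (a1*b1) i j) $$ (a,b))"
proof -
  let ?i = "(i div b1)*b1 + j mod b1" and ?j = "(j div b1)*b1 + i mod b1"
  have ij: "?i < a1*b1" "?j < a1*b1" using ptB_back i j by auto
  have AB: "(b div b2)*b2 + a mod b2 < a2*b2" "(a div b2)*b2 + b mod b2 < a2*b2" using ptB_back a b by auto
  show ?thesis
    unfolding pt_conj_def ptB_Eu[OF i j] ptB_Eu[OF j i] ptB_idx[OF a b] ptB_idx[OF b a]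
    by (rule herm[OF ij AB(2) AB(1)])
qed

lemma pt_conj_decomp:
  assumes ch: "quantum_channel (a1*b1) (a2*b2) P" and cpp: "completely_PPT_preserving a1 b1 a2 b2 P"
  shows "decomp (a2*b2) (pt_conj a1 b1 a2 b2 P (outer (a1*b1) v)) (nrm (a1*b1) v)"
proof -
  have lin: "linear_map (a1*b1) (a2*b2) P" and tp: "\<And>X. X \<in> carrier_mat (a1*b1) (a1*b1) \<Longrightarrow> mtrace (P X) = mtrace X"
    using ch unfolding quantum_channel_def CP_map_def by auto
  have linc: "linear_map (a1*b1) (a2*b2) (pt_conj a1 b1 a2 b2 P)" by (rule pt_conj_linear[OF lin])
  have cp: "completely_positive (a1*b1) (a2*b2) (pt_conj a1 b1 a2 b2 P)"
    using cpp unfolding completely_PPT_preserving_def .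
  have ps: "psd (a2*b2) (pt_conj a1 b1 a2 b2 P (outer (a1*b1) v))"
    by (rule cp_psd[OF cp psd_outer lin_props(1)[OF linc outer_carrier]])
  have "mtrace (pt_conj a1 b1 a2 b2 P (outer (a1*b1) v)) = mtrace (outer (a1*b1) v)"
    unfolding pt_conj_def
    using lin_props(1)[OF lin ptB_carrier] by (simp add: mtrace_ptB tp)
  also have "\<dots> = complex_of_real (nrm (a1*b1) v)" unfolding mtrace_def nrm_c by (intro sum.cong) simp_all
  finally have "Re (mtrace (pt_conj a1 b1 a2 b2 P (outer (a1*b1) v))) = nrm (a1*b1) v" by simp
  then show ?thesis using psd_decomp_tr[OF ps] by simp
qed

lemma trace_norm_nonneg:
  assumes Z: "Z \<in> carrier_mat n n"
  shows "0 \<le> trace_norm n Z"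
proof -
  have u: "unitary_mat n (1\<^sub>m n)" unfolding unitary_mat_def by simp
  have "cmod (mtrace (1\<^sub>m n * Z)) \<le> trace_norm n Z" unfolding trace_norm_def
    by (rule cSup_upper[OF _ trace_norm_bdd[OF Z]]) (use u in blast)
  then show ?thesis by (meson norm_ge_zero order_trans)
qed

lemma lift_left_carrier[simp]: "lift_left k d1 d2 \<Phi> X \<in> carrier_mat (k*d2) (k*d2)"
  unfolding lift_left_def by simp

lemma tn_from_logneg:
  assumes ln: "log_neg a1 b1 a2 b2 M \<le> 0" and ps: "pure_state ((a1*b1)*(a1*b1)) \<psi>"
  shows "trace_norm ((a1*b1)*(a2*b2)) (lift_left (a1*b1) (a1*b1) (a2*b2) (pt_conj a1 b1 a2 b2 M) \<psi>) \<le> 1"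
proof -
  let ?tn = "trace_norm ((a1*b1)*(a2*b2)) (lift_left (a1*b1) (a1*b1) (a2*b2) (pt_conj a1 b1 a2 b2 M) \<psi>)"
  define t where "t = diamond_norm (a1*b1) (a2*b2) (pt_conj a1 b1 a2 b2 M)"
  have le: "ereal ?tn \<le> t" unfolding t_def diamond_norm_def
    by (rule Sup_upper) (use ps in blast)
  have nn: "0 \<le> ?tn" by (rule trace_norm_nonneg[OF lift_left_carrier])
  have ln': "(if t = 0 then -\<infinity> else if t = \<infinity> then \<infinity> else ereal (log 2 (real_of_ereal t))) \<le> 0"
    using ln unfolding log_neg_def t_def Let_def .
  show ?thesis
  proof (cases t)
    case (real r)
    show ?thesis
    proof (cases "r = 0")
      case True then show ?thesis using le real nn by simp
    next
      case False
      then have "log 2 r \<le> 0" using ln' real by (simp add: zero_ereal_def)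
      moreover have "r > 0" using le nn real False by simp
      ultimately have "r \<le> 1" by simp
      then show ?thesis using le real by simp
    qed
  next
    case PInf then show ?thesis using ln' by simp
  next
    case MInf then show ?thesis using le by simp
  qed
qed

lemma lin_comb:
  assumes lin: "linear_map d1 d2 \<Phi>" and X: "X \<in> carrier_mat d1 d1" and Y: "Y \<in> carrier_mat d1 d1"
  shows "\<Phi> (c \<cdot>\<^sub>m X - Y) = c \<cdot>\<^sub>m \<Phi> X - \<Phi> Y"
proof -
  have e: "c \<cdot>\<^sub>m X - Y = c \<cdot>\<^sub>m X + (-1) \<cdot>\<^sub>m Y" by (rule eq_matI) (use X Y in simp_all)
  have PX: "\<Phi> X \<in> carrier_mat d2 d2" and PY: "\<Phi> Y \<in> carrier_mat d2 d2" using lin_props(1)[OF lin] X Y by auto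
  have "\<Phi> (c \<cdot>\<^sub>m X - Y) = c \<cdot>\<^sub>m \<Phi> X + (-1) \<cdot>\<^sub>m \<Phi> Y"
    unfolding e using lin_props(2,3)[OF lin] X Y by simp
  also have "\<dots> = c \<cdot>\<^sub>m \<Phi> X - \<Phi> Y" by (rule eq_matI) (use PX PY in simp_all)
  finally show ?thesis .
qed

lemma emb_D:
  assumes M: "\<And>X. X \<in> carrier_mat d1 d1 \<Longrightarrow> M X \<in> carrier_mat d2 d2"
    and N: "\<And>X. X \<in> carrier_mat d1 d1 \<Longrightarrow> N X \<in> carrier_mat d2 d2"
  shows "emb la lb d1 d2 (\<lambda>Y. c \<cdot>\<^sub>m M Y - N Y) X = c \<cdot>\<^sub>m emb la lb d1 d2 M X - emb la lb d1 d2 N X"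
proof (rule eq_matI)
  fix p q assume "p < dim_row (c \<cdot>\<^sub>m emb la lb d1 d2 M X - emb la lb d1 d2 N X)"
    "q < dim_col (c \<cdot>\<^sub>m emb la lb d1 d2 M X - emb la lb d1 d2 N X)"
  then have p: "p < la*(d2*lb)" and q: "q < la*(d2*lb)" by simp_all
  have s: "ss d2 lb p < d2" "ss d2 lb q < d2" using ss_lt p q by auto
  show "emb la lb d1 d2 (\<lambda>Y. c \<cdot>\<^sub>m M Y - N Y) X $$ (p,q) = (c \<cdot>\<^sub>m emb la lb d1 d2 M X - emb la lb d1 d2 N X) $$ (p,q)"
  proof -
    have "M (blk d1 d2 lb X p q) \<in> carrier_mat d2 d2" "N (blk d1 d2 lb X p q) \<in> carrier_mat d2 d2"
      using M[OF blk_carrier] N[OF blk_carrier] by auto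
    then have dm: "dim_row (M (blk d1 d2 lb X p q)) = d2" "dim_col (M (blk d1 d2 lb X p q)) = d2"
      "dim_row (N (blk d1 d2 lb X p q)) = d2" "dim_col (N (blk d1 d2 lb X p q)) = d2" by auto
    show ?thesis unfolding emb_idx[OF p q] using p q s dm by (simp add: emb_idx[OF p q])
  qed
qed simp_all

lemma choi_D:
  assumes M: "\<And>X. X \<in> carrier_mat d1 d1 \<Longrightarrow> M X \<in> carrier_mat d2 d2"
    and N: "\<And>X. X \<in> carrier_mat d1 d1 \<Longrightarrow> N X \<in> carrier_mat d2 d2"
  shows "choi d1 d2 (\<lambda>Y. c \<cdot>\<^sub>m M Y - N Y) = c \<cdot>\<^sub>m choi d1 d2 M - choi d1 d2 N"
proof (rule eq_matI)
  fix p q assume "p < dim_row (c \<cdot>\<^sub>m choi d1 d2 M - choi d1 d2 N)" "q < dim_col (c \<cdot>\<^sub>m choi d1 d2 M - choi d1 d2 N)"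
  then have p: "p < d1*d2" and q: "q < d1*d2" by (simp_all add: choi_def)
  have d2: "0 < d2" using p by (cases d2) auto
  show "choi d1 d2 (\<lambda>Y. c \<cdot>\<^sub>m M Y - N Y) $$ (p,q) = (c \<cdot>\<^sub>m choi d1 d2 M - choi d1 d2 N) $$ (p,q)"
  proof -
    let ?E = "Eu d1 (p div d2) (q div d2)"
    have "M ?E \<in> carrier_mat d2 d2" "N ?E \<in> carrier_mat d2 d2" using M[OF Eu_carrier] N[OF Eu_carrier] by auto
    then have dm: "dim_row (M ?E) = d2" "dim_col (M ?E) = d2" "dim_row (N ?E) = d2" "dim_col (N ?E) = d2" by auto
    show ?thesis unfolding choi_def using p q d2 dm by simp
  qed
qed (simp_all add: choi_def)

lemma lin_D:
  assumes M: "linear_map d1 d2 M" and N: "linear_map d1 d2 N"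
  shows "linear_map d1 d2 (\<lambda>Y. c \<cdot>\<^sub>m M Y - N Y)"
  unfolding linear_map_def
proof (intro conjI ballI allI)
  fix X :: "complex mat" assume X: "X \<in> carrier_mat d1 d1"
  show "c \<cdot>\<^sub>m M X - N X \<in> carrier_mat d2 d2" using lin_props(1)[OF N X] lin_props(1)[OF M X] by (intro carrier_matI) auto
next
  fix X Y :: "complex mat" assume X: "X \<in> carrier_mat d1 d1" and Y: "Y \<in> carrier_mat d1 d1"
  show "c \<cdot>\<^sub>m M (X + Y) - N (X + Y) = c \<cdot>\<^sub>m M X - N X + (c \<cdot>\<^sub>m M Y - N Y)"
    unfolding lin_props(2)[OF M X Y] lin_props(2)[OF N X Y]
    by (rule eq_matI) (use lin_props(1)[OF M X] lin_props(1)[OF M Y] lin_props(1)[OF N X] lin_props(1)[OF N Y] in \<open>simp_all add: algebra_simps\<close>)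
next
  fix X :: "complex mat" and e :: complex assume X: "X \<in> carrier_mat d1 d1"
  show "c \<cdot>\<^sub>m M (e \<cdot>\<^sub>m X) - N (e \<cdot>\<^sub>m X) = e \<cdot>\<^sub>m (c \<cdot>\<^sub>m M X - N X)"
    unfolding lin_props(3)[OF M X] lin_props(3)[OF N X]
    by (rule eq_matI) (use lin_props(1)[OF M X] lin_props(1)[OF N X] in \<open>simp_all add: algebra_simps\<close>)
qed

lemma dimeq: "la*((a*b)*lb) = (la*a)*(b*(lb::nat))" by (simp add: algebra_simps)

lemma choi_dims[simp]: "dim_row (choi d1 d2 \<Phi>) = d1*d2" "dim_col (choi d1 d2 \<Phi>) = d1*d2"
  unfolding choi_def by simp_all

lemma wme_pure:
  assumes d1: "0 < d1"
  shows "pure_state (d1*d1) (outer (d1*d1) (\<lambda>p. complex_of_real (1 / sqrt (real d1)) * wme d1 p))"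
  unfolding pure_state_def
proof (intro bexI[of _ "vec (d1*d1) (\<lambda>p. complex_of_real (1 / sqrt (real d1)) * wme d1 p)"] conjI)
  let ?c = "complex_of_real (1 / sqrt (real d1))"
  have "(\<Sum>i<d1*d1. (cmod (vec (d1*d1) (\<lambda>p. ?c * wme d1 p) $ i))\<^sup>2) = (\<Sum>i<d1*d1. (cmod (?c * wme d1 i))\<^sup>2)"
    by (intro sum.cong refl) simp
  also have "\<dots> = (\<Sum>i<d1. \<Sum>j<d1. (cmod (?c * wme d1 (i*d1+j)))\<^sup>2)" by (rule sum_split)
  also have "\<dots> = (\<Sum>i<d1. \<Sum>j<d1. if j = i then 1 / real d1 else 0)"
  proof (intro sum.cong refl)
    fix i j assume "i \<in> {..<d1}" "j \<in> {..<d1}"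
    have c2: "(cmod (1 / complex_of_real (sqrt (real d1))))\<^sup>2 = 1 / real d1"
      using d1 by (simp add: norm_divide power_divide)
    show "(cmod (?c * wme d1 (i*d1+j)))\<^sup>2 = (if j = i then 1 / real d1 else 0)"
      using \<open>j \<in> {..<d1}\<close> by (simp add: wme_idx c2)
  qed
  also have "\<dots> = 1" using d1 by simp
  finally show "(\<Sum>i<d1*d1. (cmod (vec (d1*d1) (\<lambda>p. ?c * wme d1 p) $ i))\<^sup>2) = 1" .
  show "outer (d1*d1) (\<lambda>p. ?c * wme d1 p) = mat (d1*d1) (d1*d1) (\<lambda>(i,j). vec (d1*d1) (\<lambda>p. ?c * wme d1 p) $ i * cnj (vec (d1*d1) (\<lambda>p. ?c * wme d1 p) $ j))"
    unfolding outer_def by (rule eq_matI) auto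
qed simp

lemma choiD_psd:
  assumes linM: "linear_map d1 d2 M" and linN: "linear_map d1 d2 N" and cM: "psd (d1*d2) (choi d1 d2 M)"
    and d1: "0 < d1" and lt: "Dmax_map d1 d2 N M < ereal lam"
  shows "psd (d1*d2) (choi d1 d2 (\<lambda>Y. complex_of_real (2 powr lam) \<cdot>\<^sub>m M Y - N Y))"
proof -
  let ?c = "complex_of_real (1 / sqrt (real d1))"
  let ?w = "\<lambda>p. ?c * wme d1 p"
  let ?\<psi> = "outer (d1*d1) ?w"
  have cc: "?c * cnj ?c = complex_of_real (1 / real d1)"
    using d1 by (simp flip: of_real_mult)
  have LN: "lift_left d1 d1 d2 N ?\<psi> = complex_of_real (1 / real d1) \<cdot>\<^sub>m choi d1 d2 N"
    using Zw_wme[OF linN, of ?c] unfolding Zw_def cc .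
  have LM: "lift_left d1 d1 d2 M ?\<psi> = complex_of_real (1 / real d1) \<cdot>\<^sub>m choi d1 d2 M"
    using Zw_wme[OF linM, of ?c] unfolding Zw_def cc .
  have "Dmax (d1*d2) (lift_left d1 d1 d2 N ?\<psi>) (lift_left d1 d1 d2 M ?\<psi>) \<le> Dmax_map d1 d2 N M"
    unfolding Dmax_map_def by (rule Sup_upper) (use wme_pure[OF d1] in blast)
  then have "Dmax (d1*d2) (lift_left d1 d1 d2 N ?\<psi>) (lift_left d1 d1 d2 M ?\<psi>) < ereal lam" using lt by simp
  then obtain l where l: "l < lam" and le: "loewner_le (d1*d2) (lift_left d1 d1 d2 N ?\<psi>) (complex_of_real (2 powr l) \<cdot>\<^sub>m lift_left d1 d1 d2 M ?\<psi>)"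
    unfolding Dmax_def Inf_less_iff by auto
  have p1: "psd (d1*d2) (complex_of_real (2 powr l) \<cdot>\<^sub>m (complex_of_real (1 / real d1) \<cdot>\<^sub>m choi d1 d2 M) - complex_of_real (1 / real d1) \<cdot>\<^sub>m choi d1 d2 N)"
    using le unfolding loewner_le_def LN LM .
  have p2: "psd (d1*d2) (complex_of_real (2 powr lam - 2 powr l) \<cdot>\<^sub>m choi d1 d2 M)"
    by (rule psd_smult[OF cM]) (use l in simp)
  have p3: "psd (d1*d2) (complex_of_real (real d1) \<cdot>\<^sub>m (complex_of_real (2 powr l) \<cdot>\<^sub>m (complex_of_real (1 / real d1) \<cdot>\<^sub>m choi d1 d2 M) - complex_of_real (1 / real d1) \<cdot>\<^sub>m choi d1 d2 N)
      + complex_of_real (2 powr lam - 2 powr l) \<cdot>\<^sub>m choi d1 d2 M)"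
    by (rule psd_add[OF psd_smult[OF p1] p2]) simp
  have e: "choi d1 d2 (\<lambda>Y. complex_of_real (2 powr lam) \<cdot>\<^sub>m M Y - N Y) =
     complex_of_real (real d1) \<cdot>\<^sub>m (complex_of_real (2 powr l) \<cdot>\<^sub>m (complex_of_real (1 / real d1) \<cdot>\<^sub>m choi d1 d2 M) - complex_of_real (1 / real d1) \<cdot>\<^sub>m choi d1 d2 N)
      + complex_of_real (2 powr lam - 2 powr l) \<cdot>\<^sub>m choi d1 d2 M"
  proof -
    have "choi d1 d2 (\<lambda>Y. complex_of_real (2 powr lam) \<cdot>\<^sub>m M Y - N Y) = complex_of_real (2 powr lam) \<cdot>\<^sub>m choi d1 d2 M - choi d1 d2 N"
      by (rule choi_D[OF lin_props(1)[OF linM] lin_props(1)[OF linN]])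
    also have "\<dots> = complex_of_real (real d1) \<cdot>\<^sub>m (complex_of_real (2 powr l) \<cdot>\<^sub>m (complex_of_real (1 / real d1) \<cdot>\<^sub>m choi d1 d2 M) - complex_of_real (1 / real d1) \<cdot>\<^sub>m choi d1 d2 N)
      + complex_of_real (2 powr lam - 2 powr l) \<cdot>\<^sub>m choi d1 d2 M"
      by (rule eq_matI) (use d1 in \<open>simp_all add: field_simps\<close>)
    finally show ?thesis .
  qed
  show ?thesis unfolding e by (rule p3)
qed

lemma emb_psd_w:
  assumes lin: "linear_map (a1*b1) (a2*b2) \<Phi>" and C: "psd ((a1*b1)*(a2*b2)) (choi (a1*b1) (a2*b2) \<Phi>)"
    and X: "psd ((la*a1)*(b1*lb)) X"
  shows "psd ((la*a2)*(b2*lb)) (emb la lb (a1*b1) (a2*b2) \<Phi> X)"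
  using emb_psd[OF lin C, of la lb X] X unfolding dimeq by simp

lemma emb_lin_w:
  assumes lin: "linear_map (a1*b1) (a2*b2) \<Phi>"
  shows "linear_map ((la*a1)*(b1*lb)) ((la*a2)*(b2*lb)) (emb la lb (a1*b1) (a2*b2) \<Phi>)"
  using emb_linear[OF lin, of la lb] unfolding dimeq .

lemma emb_decomp_w:
  assumes lin: "linear_map (a1*b1) (a2*b2) \<Phi>"
    and herm: "\<And>i j x y. i < a1*b1 \<Longrightarrow> j < a1*b1 \<Longrightarrow> x < a2*b2 \<Longrightarrow> y < a2*b2 \<Longrightarrow>
        \<Phi> (Eu (a1*b1) j i) $$ (y,x) = cnj (\<Phi> (Eu (a1*b1) i j) $$ (x,y))"
    and tn: "\<And>\<psi>. pure_state ((a1*b1)*(a1*b1)) \<psi> \<Longrightarrow> trace_norm ((a1*b1)*(a2*b2)) (lift_left (a1*b1) (a1*b1) (a2*b2) \<Phi> \<psi>) \<le> 1"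
    and X: "decomp ((la*a1)*(b1*lb)) X s"
  shows "decomp ((la*a2)*(b2*lb)) (emb la lb (a1*b1) (a2*b2) \<Phi> X) s"
proof -
  have "decomp (la*((a2*b2)*lb)) (emb la lb (a1*b1) (a2*b2) \<Phi> X) s"
    by (rule decomp_image[OF emb_linear[OF lin] _ emb_decomp_outer[OF lin herm tn]]) (use X in \<open>simp add: dimeq\<close>)
  then show ?thesis unfolding dimeq .
qed

lemma chain_step:
  fixes M N Q :: "complex mat \<Rightarrow> complex mat"
  assumes linM: "linear_map (a'*b') (a*b) M" and linN: "linear_map (a'*b') (a*b) N"
    and cM: "psd ((a'*b')*(a*b)) (choi (a'*b') (a*b) M)" and cN: "psd ((a'*b')*(a*b)) (choi (a'*b') (a*b) N)"
    and cD: "psd ((a'*b')*(a*b)) (choi (a'*b') (a*b) (\<lambda>Y. complex_of_real (2 powr lam) \<cdot>\<^sub>m M Y - N Y))"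
    and hM: "\<And>i j x y. i < a'*b' \<Longrightarrow> j < a'*b' \<Longrightarrow> x < a*b \<Longrightarrow> y < a*b \<Longrightarrow>
        pt_conj a' b' a b M (Eu (a'*b') j i) $$ (y,x) = cnj (pt_conj a' b' a b M (Eu (a'*b') i j) $$ (x,y))"
    and tnM: "\<And>\<psi>. pure_state ((a'*b')*(a'*b')) \<psi> \<Longrightarrow>
        trace_norm ((a'*b')*(a*b)) (lift_left (a'*b') (a'*b') (a*b) (pt_conj a' b' a b M) \<psi>) \<le> 1"
    and chQ: "quantum_channel ((la0*a)*(b*lb0)) ((la1*a')*(b'*lb1)) Q"
    and cppQ: "completely_PPT_preserving (la0*a) (b*lb0) (la1*a') (b'*lb1) Q"
    and s0: "psd ((la0*a)*(b*lb0)) \<sigma>" and t0: "psd ((la0*a)*(b*lb0)) \<tau>"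
    and d0: "psd ((la0*a)*(b*lb0)) (complex_of_real (2 powr (real k * lam)) \<cdot>\<^sub>m \<sigma> - \<tau>)"
    and p0: "decomp ((la0*a)*(b*lb0)) (ptB (la0*a) (b*lb0) \<sigma>) 1"
  shows "psd ((la1*a)*(b*lb1)) (emb la1 lb1 (a'*b') (a*b) M (Q \<sigma>))"
    "psd ((la1*a)*(b*lb1)) (emb la1 lb1 (a'*b') (a*b) N (Q \<tau>))"
    "psd ((la1*a)*(b*lb1)) (complex_of_real (2 powr (real (Suc k) * lam)) \<cdot>\<^sub>m emb la1 lb1 (a'*b') (a*b) M (Q \<sigma>) - emb la1 lb1 (a'*b') (a*b) N (Q \<tau>))"
    "decomp ((la1*a)*(b*lb1)) (ptB (la1*a) (b*lb1) (emb la1 lb1 (a'*b') (a*b) M (Q \<sigma>))) 1"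
proof -
  let ?d0 = "(la0*a)*(b*lb0)" and ?d1 = "(la1*a')*(b'*lb1)"
  have linQ: "linear_map ?d0 ?d1 Q" and cpQ: "completely_positive ?d0 ?d1 Q"
    using chQ unfolding quantum_channel_def CP_map_def by auto
  have sc: "\<sigma> \<in> carrier_mat ?d0 ?d0" and tc: "\<tau> \<in> carrier_mat ?d0 ?d0" using s0 t0 unfolding psd_iff by auto
  have Qs: "psd ?d1 (Q \<sigma>)" by (rule cp_psd[OF cpQ s0 lin_props(1)[OF linQ sc]])
  have Qt: "psd ?d1 (Q \<tau>)" by (rule cp_psd[OF cpQ t0 lin_props(1)[OF linQ tc]])
  have Qsc: "Q \<sigma> \<in> carrier_mat ?d1 ?d1" and Qtc: "Q \<tau> \<in> carrier_mat ?d1 ?d1" using lin_props(1)[OF linQ] sc tc by auto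
  show "psd ((la1*a)*(b*lb1)) (emb la1 lb1 (a'*b') (a*b) M (Q \<sigma>))" by (rule emb_psd_w[OF linM cM Qs])
  show "psd ((la1*a)*(b*lb1)) (emb la1 lb1 (a'*b') (a*b) N (Q \<tau>))" by (rule emb_psd_w[OF linN cN Qt])
  let ?c = "complex_of_real (2 powr (real k * lam))" and ?e = "complex_of_real (2 powr lam)"
  let ?EM = "emb la1 lb1 (a'*b') (a*b) M" and ?EN = "emb la1 lb1 (a'*b') (a*b) N"
  have QD: "Q (?c \<cdot>\<^sub>m \<sigma> - \<tau>) = ?c \<cdot>\<^sub>m Q \<sigma> - Q \<tau>" by (rule lin_comb[OF linQ sc tc])
  have pQD: "psd ?d1 (?c \<cdot>\<^sub>m Q \<sigma> - Q \<tau>)"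
    unfolding QD[symmetric] by (rule cp_psd[OF cpQ d0 lin_props(1)[OF linQ]]) (use d0 in \<open>simp add: psd_iff\<close>)
  have EMD: "?EM (?c \<cdot>\<^sub>m Q \<sigma> - Q \<tau>) = ?c \<cdot>\<^sub>m ?EM (Q \<sigma>) - ?EM (Q \<tau>)"
    by (rule lin_comb[OF emb_lin_w[OF linM] Qsc Qtc])
  have p1: "psd ((la1*a)*(b*lb1)) (?c \<cdot>\<^sub>m ?EM (Q \<sigma>) - ?EM (Q \<tau>))"
    unfolding EMD[symmetric] by (rule emb_psd_w[OF linM cM pQD])
  have p2: "psd ((la1*a)*(b*lb1)) (?e \<cdot>\<^sub>m ?EM (Q \<tau>) - ?EN (Q \<tau>))"
  proof -
    have eD: "emb la1 lb1 (a'*b') (a*b) (\<lambda>Y. ?e \<cdot>\<^sub>m M Y - N Y) (Q \<tau>) = ?e \<cdot>\<^sub>m ?EM (Q \<tau>) - ?EN (Q \<tau>)"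
      by (rule emb_D[OF lin_props(1)[OF linM] lin_props(1)[OF linN]])
    show ?thesis using emb_psd_w[OF lin_D[OF linM linN] cD Qt] unfolding eD .
  qed
  have p3: "psd ((la1*a)*(b*lb1)) (complex_of_real (2 powr lam) \<cdot>\<^sub>m (?c \<cdot>\<^sub>m ?EM (Q \<sigma>) - ?EM (Q \<tau>)) + (?e \<cdot>\<^sub>m ?EM (Q \<tau>) - ?EN (Q \<tau>)))"
    by (rule psd_add[OF psd_smult[OF p1] p2]) simp
  have pw: "complex_of_real (2 powr lam) * complex_of_real (2 powr (real k * lam)) = complex_of_real (2 powr (real (Suc k) * lam))"
    by (simp add: powr_add[symmetric] algebra_simps flip: of_real_mult)
  have "complex_of_real (2 powr lam) \<cdot>\<^sub>m (?c \<cdot>\<^sub>m ?EM (Q \<sigma>) - ?EM (Q \<tau>)) + (?e \<cdot>\<^sub>m ?EM (Q \<tau>) - ?EN (Q \<tau>))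
      = complex_of_real (2 powr (real (Suc k) * lam)) \<cdot>\<^sub>m ?EM (Q \<sigma>) - ?EN (Q \<tau>)"
  proof -
    have pw2: "complex_of_real (2 powr lam) * complex_of_real (2 powr (lam * real k)) = complex_of_real (2 powr (lam + lam * real k))"
      by (simp add: powr_add flip: of_real_mult)
    show ?thesis by (rule eq_matI) (simp_all add: pw2 algebra_simps)
  qed
  with p3 show "psd ((la1*a)*(b*lb1)) (complex_of_real (2 powr (real (Suc k) * lam)) \<cdot>\<^sub>m ?EM (Q \<sigma>) - ?EN (Q \<tau>))" by simp
  have linQc: "linear_map ?d0 ?d1 (pt_conj (la0*a) (b*lb0) (la1*a') (b'*lb1) Q)" by (rule pt_conj_linear[OF linQ])
  have dQ: "decomp ?d1 (pt_conj (la0*a) (b*lb0) (la1*a') (b'*lb1) Q (ptB (la0*a) (b*lb0) \<sigma>)) 1"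
    by (rule decomp_image[OF linQc p0 pt_conj_decomp[OF chQ cppQ]])
  have "pt_conj (la0*a) (b*lb0) (la1*a') (b'*lb1) Q (ptB (la0*a) (b*lb0) \<sigma>) = ptB (la1*a') (b'*lb1) (Q \<sigma>)"
    unfolding pt_conj_def ptB_ptB[OF sc] ..
  then have dQ': "decomp ?d1 (ptB (la1*a') (b'*lb1) (Q \<sigma>)) 1" using dQ by simp
  show "decomp ((la1*a)*(b*lb1)) (ptB (la1*a) (b*lb1) (?EM (Q \<sigma>))) 1"
    unfolding ptB_emb by (rule emb_decomp_w[OF pt_conj_linear[OF linM] hM tnM dQ'])
qed

lemma chain_base:
  fixes M N :: "complex mat \<Rightarrow> complex mat"
  assumes linM: "linear_map (a'*b') (a*b) M" and linN: "linear_map (a'*b') (a*b) N"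
    and cM: "psd ((a'*b')*(a*b)) (choi (a'*b') (a*b) M)" and cN: "psd ((a'*b')*(a*b)) (choi (a'*b') (a*b) N)"
    and cD: "psd ((a'*b')*(a*b)) (choi (a'*b') (a*b) (\<lambda>Y. complex_of_real (2 powr lam) \<cdot>\<^sub>m M Y - N Y))"
    and hM: "\<And>i j x y. i < a'*b' \<Longrightarrow> j < a'*b' \<Longrightarrow> x < a*b \<Longrightarrow> y < a*b \<Longrightarrow>
        pt_conj a' b' a b M (Eu (a'*b') j i) $$ (y,x) = cnj (pt_conj a' b' a b M (Eu (a'*b') i j) $$ (x,y))"
    and tnM: "\<And>\<psi>. pure_state ((a'*b')*(a'*b')) \<psi> \<Longrightarrow>
        trace_norm ((a'*b')*(a*b)) (lift_left (a'*b') (a'*b') (a*b) (pt_conj a' b' a b M) \<psi>) \<le> 1"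
    and r: "PPT_state (la*a') (b'*lb) \<rho>"
  shows "psd ((la*a)*(b*lb)) (emb la lb (a'*b') (a*b) M \<rho>)"
    "psd ((la*a)*(b*lb)) (emb la lb (a'*b') (a*b) N \<rho>)"
    "psd ((la*a)*(b*lb)) (complex_of_real (2 powr (real (Suc 0) * lam)) \<cdot>\<^sub>m emb la lb (a'*b') (a*b) M \<rho> - emb la lb (a'*b') (a*b) N \<rho>)"
    "decomp ((la*a)*(b*lb)) (ptB (la*a) (b*lb) (emb la lb (a'*b') (a*b) M \<rho>)) 1"
proof -
  have rp: "psd ((la*a')*(b'*lb)) \<rho>" and rt: "mtrace \<rho> = 1" and rpt: "psd ((la*a')*(b'*lb)) (ptB (la*a') (b'*lb) \<rho>)"
    using r unfolding PPT_state_def density_def by auto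
  have rc: "\<rho> \<in> carrier_mat ((la*a')*(b'*lb)) ((la*a')*(b'*lb))" using rp unfolding psd_iff by simp
  show "psd ((la*a)*(b*lb)) (emb la lb (a'*b') (a*b) M \<rho>)" by (rule emb_psd_w[OF linM cM rp])
  show "psd ((la*a)*(b*lb)) (emb la lb (a'*b') (a*b) N \<rho>)" by (rule emb_psd_w[OF linN cN rp])
  have eD: "emb la lb (a'*b') (a*b) (\<lambda>Y. complex_of_real (2 powr lam) \<cdot>\<^sub>m M Y - N Y) \<rho> =
     complex_of_real (2 powr lam) \<cdot>\<^sub>m emb la lb (a'*b') (a*b) M \<rho> - emb la lb (a'*b') (a*b) N \<rho>"
    by (rule emb_D[OF lin_props(1)[OF linM] lin_props(1)[OF linN]])
  show "psd ((la*a)*(b*lb)) (complex_of_real (2 powr (real (Suc 0) * lam)) \<cdot>\<^sub>m emb la lb (a'*b') (a*b) M \<rho> - emb la lb (a'*b') (a*b) N \<rho>)"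
    using emb_psd_w[OF lin_D[OF linM linN] cD rp] unfolding eD by simp
  have "Re (mtrace (ptB (la*a') (b'*lb) \<rho>)) = 1" using mtrace_ptB[OF rc] rt by simp
  then have dr: "decomp ((la*a')*(b'*lb)) (ptB (la*a') (b'*lb) \<rho>) 1" using psd_decomp_tr[OF rpt] by simp
  show "decomp ((la*a)*(b*lb)) (ptB (la*a) (b*lb) (emb la lb (a'*b') (a*b) M \<rho>)) 1"
    unfolding ptB_emb by (rule emb_decomp_w[OF pt_conj_linear[OF linM] hM tnM dr])
qed

lemma chain_final:
  fixes F :: "complex mat \<Rightarrow> complex mat"
  assumes chF: "quantum_channel ((la*a)*(b*lb)) (mA*mB) F"
    and cppF: "completely_PPT_preserving (la*a) (b*lb) mA mB F"
    and s0: "psd ((la*a)*(b*lb)) \<sigma>" and t0: "psd ((la*a)*(b*lb)) \<tau>"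
    and d0: "psd ((la*a)*(b*lb)) (complex_of_real c \<cdot>\<^sub>m \<sigma> - \<tau>)"
    and p0: "decomp ((la*a)*(b*lb)) (ptB (la*a) (b*lb) \<sigma>) 1"
  shows "psd (mA*mB) (F \<sigma>)" "psd (mA*mB) (complex_of_real c \<cdot>\<^sub>m F \<sigma> - F \<tau>)"
    "decomp (mA*mB) (ptB mA mB (F \<sigma>)) 1"
proof -
  let ?d0 = "(la*a)*(b*lb)"
  have linF: "linear_map ?d0 (mA*mB) F" and cpF: "completely_positive ?d0 (mA*mB) F"
    using chF unfolding quantum_channel_def CP_map_def by auto
  have sc: "\<sigma> \<in> carrier_mat ?d0 ?d0" and tc: "\<tau> \<in> carrier_mat ?d0 ?d0" using s0 t0 unfolding psd_iff by auto
  show "psd (mA*mB) (F \<sigma>)" by (rule cp_psd[OF cpF s0 lin_props(1)[OF linF sc]])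
  have FD: "F (complex_of_real c \<cdot>\<^sub>m \<sigma> - \<tau>) = complex_of_real c \<cdot>\<^sub>m F \<sigma> - F \<tau>" by (rule lin_comb[OF linF sc tc])
  show "psd (mA*mB) (complex_of_real c \<cdot>\<^sub>m F \<sigma> - F \<tau>)"
    unfolding FD[symmetric] by (rule cp_psd[OF cpF d0 lin_props(1)[OF linF]]) (use d0 in \<open>simp add: psd_iff\<close>)
  have dQ: "decomp (mA*mB) (pt_conj (la*a) (b*lb) mA mB F (ptB (la*a) (b*lb) \<sigma>)) 1"
    by (rule decomp_image[OF pt_conj_linear[OF linF] p0 pt_conj_decomp[OF chF cppF]])
  moreover have "pt_conj (la*a) (b*lb) mA mB F (ptB (la*a) (b*lb) \<sigma>) = ptB mA mB (F \<sigma>)"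
    unfolding pt_conj_def ptB_ptB[OF sc] ..
  ultimately show "decomp (mA*mB) (ptB mA mB (F \<sigma>)) 1" by simp
qed

primrec chn :: "(nat \<Rightarrow> complex mat \<Rightarrow> complex mat) \<Rightarrow> (nat \<Rightarrow> complex mat \<Rightarrow> complex mat) \<Rightarrow> complex mat \<Rightarrow> nat \<Rightarrow> complex mat" where
  "chn E P \<rho> 0 = \<rho>"
| "chn E P \<rho> (Suc k) = E (Suc k) (if k = 0 then \<rho> else P (Suc k) (chn E P \<rho> k))"

lemma ereal_final:
  fixes X R :: ereal and n :: nat
  assumes n: "1 \<le> n" and key: "\<And>lam. R < ereal lam \<Longrightarrow> X \<le> ereal (real n * lam)"
  shows "X \<le> ereal (real n) * R"
proof -
  have np: "0 < real n" using n by simp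
  show ?thesis
  proof (cases R)
    case PInf then show ?thesis using np by simp
  next
    case (real r)
    show ?thesis
    proof (cases X)
      case PInf
      then show ?thesis using key[of "r + 1"] real by simp
    next
      case MInf then show ?thesis by simp
    next
      case (real x)
      show ?thesis
      proof (rule ccontr)
        assume "\<not> X \<le> ereal (real n) * R"
        then have xr: "x > real n * r" using real \<open>R = ereal r\<close> by simp
        define lam where "lam = (x / real n + r) / 2"
        have "r < lam" unfolding lam_def using xr np by (simp add: field_simps)
        then have "x \<le> real n * lam" using key[of lam] real \<open>R = ereal r\<close> by simp
        moreover have "real n * lam < x" unfolding lam_def using xr np by (simp add: field_simps)
        ultimately show False by simp
      qed
    qed
  next
    case MInf
    have "X = -\<infinity>"
    proof (cases X)
      case PInf then show ?thesis using key[of 0] MInf by simp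
    next
      case MInf then show ?thesis by simp
    next
      case (real x)
      have "x \<le> real n * ((x - 1) / real n)" using key[of "(x - 1) / real n"] \<open>R = -\<infinity>\<close> real by simp
      then show ?thesis using np by (simp add: field_simps)
    qed
    then show ?thesis by simp
  qed
qed

theorem mainTheorem9:
  fixes n :: nat
    and a' b' a b :: nat
    and \<N> :: "complex mat \<Rightarrow> complex mat"
    and la lb :: "nat \<Rightarrow> nat"
    and mA mB :: nat
    and \<rho>1 :: "complex mat"
    and P :: "nat \<Rightarrow> complex mat \<Rightarrow> complex mat"
    and Pfin :: "complex mat \<Rightarrow> complex mat"
    and \<tau> :: "nat \<Rightarrow> complex mat"
    and \<omega> :: "complex mat"
  assumes n_pos: "1 \<le> n"
    and chan: "quantum_channel (a' * b') (a * b) \<N>"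
    and P1: "PPT_state (la 1 * a') (b' * lb 1) \<rho>1"
    and Pi: "\<And>i. 2 \<le> i \<Longrightarrow> i \<le> n \<Longrightarrow>
              PPT_channel (la (i - 1) * a) (b * lb (i - 1)) (la i * a') (b' * lb i) (P i)"
    and Pn: "PPT_channel (la n * a) (b * lb n) mA mB Pfin"
    and tau1: "\<tau> 1 = embed_channel (la 1) (lb 1) a' b' a b \<N> \<rho>1"
    and tauS: "\<And>i. 2 \<le> i \<Longrightarrow> i \<le> n \<Longrightarrow>
              \<tau> i = embed_channel (la i) (lb i) a' b' a b \<N> (P i (\<tau> (i - 1)))"
    and omega: "\<omega> = Pfin (\<tau> n)"
  shows "Rmax_state mA mB \<omega> \<le> ereal (real n) * Rmax_channel a' b' a b \<N>"
proof -
  have linN: "linear_map (a'*b') (a*b) \<N>" and cpN: "completely_positive (a'*b') (a*b) \<N>"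
    using chan unfolding quantum_channel_def CP_map_def by auto
  have cN: "psd ((a'*b')*(a*b)) (choi (a'*b') (a*b) \<N>)" by (rule choi_psd_CP[OF linN cpN])
  have d1pos: "0 < a'*b'"
  proof (rule ccontr)
    assume "\<not> 0 < a'*b'"
    then have z: "(la 1 * a') * (b' * lb 1) = 0" by auto
    have "\<rho>1 \<in> carrier_mat ((la 1 * a') * (b' * lb 1)) ((la 1 * a') * (b' * lb 1))" and t: "mtrace \<rho>1 = 1"
      using P1 unfolding PPT_state_def density_def psd_iff by auto
    then have "dim_row \<rho>1 = 0" using z by simp
    then have "mtrace \<rho>1 = 0" unfolding mtrace_def by simp
    then show False using t by simp
  qed
  have chF: "quantum_channel ((la n * a) * (b * lb n)) (mA*mB) Pfin"
    and cppF: "completely_PPT_preserving (la n * a) (b * lb n) mA mB Pfin"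
    using Pn unfolding PPT_channel_def by auto
  have key: "Rmax_state mA mB \<omega> \<le> ereal (real n * lam)" if lt: "Rmax_channel a' b' a b \<N> < ereal lam" for lam
  proof -
    obtain M where MCP: "CP_map (a'*b') (a*b) M" and Mln: "log_neg a' b' a b M \<le> 0"
      and MD: "Dmax_map (a'*b') (a*b) \<N> M < ereal lam"
      using lt unfolding Rmax_channel_def Inf_less_iff by blast
    have linM: "linear_map (a'*b') (a*b) M" and cpM: "completely_positive (a'*b') (a*b) M"
      using MCP unfolding CP_map_def by auto
    have cM: "psd ((a'*b')*(a*b)) (choi (a'*b') (a*b) M)" by (rule choi_psd_CP[OF linM cpM])
    have cD: "psd ((a'*b')*(a*b)) (choi (a'*b') (a*b) (\<lambda>Y. complex_of_real (2 powr lam) \<cdot>\<^sub>m M Y - \<N> Y))"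
      by (rule choiD_psd[OF linM linN cM d1pos MD])
    have hM: "pt_conj a' b' a b M (Eu (a'*b') j i) $$ (y,x) = cnj (pt_conj a' b' a b M (Eu (a'*b') i j) $$ (x,y))"
      if "i < a'*b'" "j < a'*b'" "x < a*b" "y < a*b" for i j x y
      by (rule ptconj_herm[of a' b' a b M, OF choi_herm[OF cM] that])
    have tnM: "trace_norm ((a'*b')*(a*b)) (lift_left (a'*b') (a'*b') (a*b) (pt_conj a' b' a b M) \<psi>) \<le> 1"
      if "pure_state ((a'*b')*(a'*b')) \<psi>" for \<psi>
      by (rule tn_from_logneg[OF Mln that])
    define \<sigma> where "\<sigma> = chn (\<lambda>i. emb (la i) (lb i) (a'*b') (a*b) M) P \<rho>1"
    have inv: "psd ((la k * a) * (b * lb k)) (\<sigma> k) \<and> psd ((la k * a) * (b * lb k)) (\<tau> k) \<and>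
        psd ((la k * a) * (b * lb k)) (complex_of_real (2 powr (real k * lam)) \<cdot>\<^sub>m \<sigma> k - \<tau> k) \<and>
        decomp ((la k * a) * (b * lb k)) (ptB (la k * a) (b * lb k) (\<sigma> k)) 1"
      if "1 \<le> k" "k \<le> n" for k
      using that
    proof (induction k)
      case 0 then show ?case by simp
    next
      case (Suc k)
      show ?case
      proof (cases "k = 0")
        case True
        have s1: "\<sigma> (Suc k) = emb (la 1) (lb 1) (a'*b') (a*b) M \<rho>1" unfolding \<sigma>_def True by simp
        have t1: "\<tau> (Suc k) = emb (la 1) (lb 1) (a'*b') (a*b) \<N> \<rho>1" unfolding True using tau1 embed_emb by simp
        show ?thesis unfolding s1 t1 using chain_base[OF linM linN cM cN cD hM tnM P1] True by simp
      next
        case False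
        then have k1: "1 \<le> k" and kn: "k \<le> n" using Suc.prems by auto
        have IH: "psd ((la k * a) * (b * lb k)) (\<sigma> k)" "psd ((la k * a) * (b * lb k)) (\<tau> k)"
          "psd ((la k * a) * (b * lb k)) (complex_of_real (2 powr (real k * lam)) \<cdot>\<^sub>m \<sigma> k - \<tau> k)"
          "decomp ((la k * a) * (b * lb k)) (ptB (la k * a) (b * lb k) (\<sigma> k)) 1"
          using Suc.IH[OF k1 kn] by auto
        have i2: "2 \<le> Suc k" "Suc k \<le> n" using False Suc.prems by auto
        have PP: "PPT_channel (la k * a) (b * lb k) (la (Suc k) * a') (b' * lb (Suc k)) (P (Suc k))"
          using Pi[OF i2] by simp
        have chQ: "quantum_channel ((la k * a) * (b * lb k)) ((la (Suc k) * a') * (b' * lb (Suc k))) (P (Suc k))"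
          and cppQ: "completely_PPT_preserving (la k * a) (b * lb k) (la (Suc k) * a') (b' * lb (Suc k)) (P (Suc k))"
          using PP unfolding PPT_channel_def by auto
        have s2: "\<sigma> (Suc k) = emb (la (Suc k)) (lb (Suc k)) (a'*b') (a*b) M (P (Suc k) (\<sigma> k))"
          unfolding \<sigma>_def using False by simp
        have t2: "\<tau> (Suc k) = emb (la (Suc k)) (lb (Suc k)) (a'*b') (a*b) \<N> (P (Suc k) (\<tau> k))"
          using tauS[OF i2] embed_emb by simp
        note st = chain_step[OF linM linN cM cN cD hM tnM chQ cppQ IH]
        show ?thesis unfolding s2 t2 using st by simp
      qed
    qed
    have invn: "psd ((la n * a) * (b * lb n)) (\<sigma> n)" "psd ((la n * a) * (b * lb n)) (\<tau> n)"
      "psd ((la n * a) * (b * lb n)) (complex_of_real (2 powr (real n * lam)) \<cdot>\<^sub>m \<sigma> n - \<tau> n)"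
      "decomp ((la n * a) * (b * lb n)) (ptB (la n * a) (b * lb n) (\<sigma> n)) 1"
      using inv[OF n_pos order_refl] by auto
    note fin = chain_final[OF chF cppF invn]
    have tn: "trace_norm (mA*mB) (ptB mA mB (Pfin (\<sigma> n))) \<le> 1" by (rule trace_norm_decomp[OF fin(3)])
    have "Rmax_state mA mB \<omega> \<le> Dmax (mA*mB) \<omega> (Pfin (\<sigma> n))"
      unfolding Rmax_state_def by (rule Inf_lower) (use fin(1) tn in blast)
    also have "Dmax (mA*mB) \<omega> (Pfin (\<sigma> n)) \<le> ereal (real n * lam)"
      unfolding Dmax_def by (rule Inf_lower) (use fin(2) omega in \<open>auto simp: loewner_le_def\<close>)
    finally show ?thesis .
  qed
  show ?thesis by (rule ereal_final[OF n_pos key])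
qed

end
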